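(* Let $\mathcal C$ be a category, $n\ge0$, and $T\in Z^n(\mathcal C)$. For any two degeneracy maps $f:X\to T$ and $g:Y\to T$ in $Z^n(\mathcal C)$ that are sent to the same map of $Z^n(1)$ by the functor $Z^n(\mathcal C)\to Z^n(1)$ (induced by the unique functor $\mathcal C\to 1$ to the terminal category), there exists an isomorphism $\varphi:X\to Y$ such that $f=g\circ\varphi$. In particular, $\mathrm{Deg}(T)$ is finite.
   Context: Notation: for $n\ge 0$, $[n]$ denotes $\{0,\dots,n-1\}$; $\Delta_+$ is the category of these finite total orders and order-preserving maps. For monotone $\psi:[n]\to[m]$ define $\hat\psi:[m+1]\to[n+1]$ by $\hat\psi(i)=\min(\{j\in[n]:\psi(j)\ge i\}\cup\{n\})$. Zigzags: in a category $\mathcal C$, a zigzag $X$ of length $n$ is a diagram $X(r_0)\xrightarrow{x_0} X(s_0)\xleftarrow{x'_0} X(r_1)\to\cdots\xrightarrow{x_{n-1}} X(s_{n-1})\xleftarrow{x'_{n-1}} X(r_n)$. A zigzag map $f:X\to Y$ (lengths $n$, $m$) consists of a monotone $f_s:[n]\to[m]$, regular slices $f(r_i):X(r_{\hat{f_s}(i)})\to Y(r_i)$ for $0\le i\le m$ and singular slices $f(s_j):X(s_j)\to Y(s_{f_s(j)})$ for $0\le j<n$, such that for each $0\le i<m$: if $f_s^{-1}(i)\neq\emptyset$ with least element $p$, greatest $q$, then $f(s_p)\circ x_p=y_i\circ f(r_i)$, $f(s_q)\circ x'_q=y'_i\circ f(r_{i+1})$, $f(s_j)\circ x'_j=f(s_{j+1})\circ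 x_{j+1}$ for $p\le j<q$; if $f_s^{-1}(i)=\emptyset$ then $y_i\circ f(r_i)=y'_i\circ f(r_{i+1})$. Composition: $(g\circ f)_s=g_s\circ f_s$, $(g\circ f)(s_j)=g(s_{f_s(j)})\circ f(s_j)$, $(g\circ f)(r_i)=g(r_i)\circ f(r_{\hat{g_s}(i)})$. This gives a category $Z(\mathcal C)$, functorial in $\mathcal C$ (a functor acts on all objects and slices); $Z^0(\mathcal C)=\mathcal C$, $Z^n(\mathcal C)=Z(Z^{n-1}(\mathcal C))$. $\pi:Z(\mathcal C)\to\Delta_+$ sends a zigzag of length $n$ to $[n]$ and $f$ to $f_s$; $f$ is $\pi$-vertical if $\pi(f)$ is an identity; $f:x\to y$ is $\pi$-cocartesian if for every $h:x\to y'$ and $u:\pi(y)\to\pi(y')$ with $u\circ\pi(f)=\pi(h)$ there is a unique $v:y\to y'$ with $v\circ f=h$, $\pi(v)=u$. Degeneracy maps in $Z^n(\mathcal C)$ (by induction on $n$): in $Z^0(\mathcal C)$ the isomorphisms; for $n\ge1$ the maps generated under composition by simple degeneracy maps (the $\pi$-cocartesian maps $f$ with $\pi(f)$ a monomorphism of $\Delta_+$) and parallel degeneracy maps (the $\pi$-vertical maps whose regular and singular slices are all degeneracy maps in $Z^{n-1}(\mathcal C)$). Degeneracy maps are monomorphisms; $\mathrm{Deg}(T)$ is the subposet of the subobject poset $\mathrm{Sub}(T)$ consisting of subobjects represented by a degeneracy map into $T$. *)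

theory Defs
  imports Main
begin

record 'u cat =
  Ob  :: "'u set"
  Ar  :: "'u set"
  Dom :: "'u \<Rightarrow> 'u"
  Cod :: "'u \<Rightarrow> 'u"
  Idn :: "'u \<Rightarrow> 'u"
  Cmp :: "'u \<Rightarrow> 'u \<Rightarrow> 'u"   (* Cmp C g f = g o f *)

definition is_cat :: "'u cat \<Rightarrow> bool" where
  "is_cat C \<longleftrightarrow>
     (\<forall>f\<in>Ar C. Dom C f \<in> Ob C \<and> Cod C f \<in> Ob C) \<and>
     (\<forall>x\<in>Ob C. Idn C x \<in> Ar C \<and> Dom C (Idn C x) = x \<and> Cod C (Idn C x) = x) \<and>
     (\<forall>f\<in>Ar C. \<forall>g\<in>Ar C. Cod C f = Dom C g \<longrightarrow>
        Cmp C g f \<in> Ar C \<and> Dom C (Cmp C g f) = Dom C f \<and> Cod C (Cmp C g f) = Cod C g) \<and>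
     (\<forall>f\<in>Ar C. \<forall>g\<in>Ar C. \<forall>h\<in>Ar C. Cod C f = Dom C g \<longrightarrow> Cod C g = Dom C h \<longrightarrow>
        Cmp C h (Cmp C g f) = Cmp C (Cmp C h g) f) \<and>
     (\<forall>f\<in>Ar C. Cmp C (Idn C (Cod C f)) f = f \<and> Cmp C f (Idn C (Dom C f)) = f)"

definition isoC :: "'u cat \<Rightarrow> 'u \<Rightarrow> bool" where
  "isoC C f \<longleftrightarrow> f \<in> Ar C \<and> (\<exists>g\<in>Ar C. Dom C g = Cod C f \<and> Cod C g = Dom C f \<and>
      Cmp C g f = Idn C (Dom C f) \<and> Cmp C f g = Idn C (Cod C f))"

definition monic :: "'u cat \<Rightarrow> 'u \<Rightarrow> bool" where
  "monic C f \<longleftrightarrow> f \<in> Ar C \<and> (\<forall>g\<in>Ar C. \<forall>h\<in>Ar C.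
      Cod C g = Dom C f \<longrightarrow> Cod C h = Dom C f \<longrightarrow> Dom C g = Dom C h \<longrightarrow>
      Cmp C f g = Cmp C f h \<longrightarrow> g = h)"

text \<open>At a: object or arrow of the base category.
  Zig rs ss xs ys: the zigzag r_0 -x_0-> s_0 <-x'_0- r_1 ... with rs = [r_0..r_n],
  ss = [s_0..s_{n-1}], xs = [x_0..x_{n-1}], ys = [x'_0..x'_{n-1}].
  Zmap X Y fs rsl ssl: zigzag map X -> Y with f_s = fs (as list of values),
  regular slices rsl = [f(r_0)..f(r_m)], singular slices ssl = [f(s_0)..f(s_{n-1})].\<close>

datatype 'a U = At 'a
  | Zig "'a U list" "'a U list" "'a U list" "'a U list"
  | Zmap "'a U" "'a U" "nat list" "'a U list" "'a U list"

fun zR :: "'a U \<Rightarrow> 'a U list" where "zR (Zig rs ss xs ys) = rs" | "zR _ = []"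
fun zS :: "'a U \<Rightarrow> 'a U list" where "zS (Zig rs ss xs ys) = ss" | "zS _ = []"
fun zX :: "'a U \<Rightarrow> 'a U list" where "zX (Zig rs ss xs ys) = xs" | "zX _ = []"
fun zY :: "'a U \<Rightarrow> 'a U list" where "zY (Zig rs ss xs ys) = ys" | "zY _ = []"
definition zlen :: "'a U \<Rightarrow> nat" where "zlen X = length (zS X)"

fun mdom :: "'a U \<Rightarrow> 'a U" where "mdom (Zmap X Y fs rsl ssl) = X" | "mdom _ = undefined"
fun mcod :: "'a U \<Rightarrow> 'a U" where "mcod (Zmap X Y fs rsl ssl) = Y" | "mcod _ = undefined"
fun mS :: "'a U \<Rightarrow> nat list" where "mS (Zmap X Y fs rsl ssl) = fs" | "mS _ = []"
fun mR :: "'a U \<Rightarrow> 'a U list" where "mR (Zmap X Y fs rsl ssl) = rsl" | "mR _ = []"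
fun mSl :: "'a U \<Rightarrow> 'a U list" where "mSl (Zmap X Y fs rsl ssl) = ssl" | "mSl _ = []"

definition hat :: "nat list \<Rightarrow> nat \<Rightarrow> nat" where
  "hat ps i = (LEAST j. j = length ps \<or> (j < length ps \<and> i \<le> ps ! j))"

definition zig_ok :: "'a U cat \<Rightarrow> 'a U \<Rightarrow> bool" where
  "zig_ok D X \<longleftrightarrow> (\<exists>rs ss xs ys. X = Zig rs ss xs ys \<and>
     length rs = Suc (length ss) \<and> length xs = length ss \<and> length ys = length ss \<and>
     set rs \<subseteq> Ob D \<and> set ss \<subseteq> Ob D \<and>
     (\<forall>i<length ss. xs!i \<in> Ar D \<and> Dom D (xs!i) = rs!i \<and> Cod D (xs!i) = ss!i \<and>
                     ys!i \<in> Ar D \<and> Dom D (ys!i) = rs!Suc i \<and> Cod D (ys!i) = ss!i))"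

definition zmap_ok :: "'a U cat \<Rightarrow> 'a U \<Rightarrow> bool" where
  "zmap_ok D f \<longleftrightarrow> (\<exists>X Y fs rsl ssl. f = Zmap X Y fs rsl ssl \<and>
     zig_ok D X \<and> zig_ok D Y \<and>
     length fs = zlen X \<and> (\<forall>j<zlen X. fs!j < zlen Y) \<and> sorted fs \<and>
     length rsl = Suc (zlen Y) \<and> length ssl = zlen X \<and>
     (\<forall>i\<le>zlen Y. rsl!i \<in> Ar D \<and> Dom D (rsl!i) = zR X ! hat fs i \<and> Cod D (rsl!i) = zR Y ! i) \<and>
     (\<forall>j<zlen X. ssl!j \<in> Ar D \<and> Dom D (ssl!j) = zS X ! j \<and> Cod D (ssl!j) = zS Y ! (fs!j)) \<and>
     (\<forall>i<zlen Y.
        (if {j. j < zlen X \<and> fs!j = i} \<noteq> {} then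
           (let p = Min {j. j < zlen X \<and> fs!j = i}; q = Max {j. j < zlen X \<and> fs!j = i} in
              Cmp D (ssl!p) (zX X ! p) = Cmp D (zX Y ! i) (rsl!i) \<and>
              Cmp D (ssl!q) (zY X ! q) = Cmp D (zY Y ! i) (rsl!Suc i) \<and>
              (\<forall>j. p \<le> j \<and> j < q \<longrightarrow> Cmp D (ssl!j) (zY X ! j) = Cmp D (ssl!Suc j) (zX X ! Suc j)))
         else Cmp D (zX Y ! i) (rsl!i) = Cmp D (zY Y ! i) (rsl!Suc i))))"

definition Zcat :: "'a U cat \<Rightarrow> 'a U cat" where
  "Zcat D = \<lparr> Ob = {X. zig_ok D X}, Ar = {f. zmap_ok D f},
     Dom = mdom, Cod = mcod,
     Idn = (\<lambda>X. Zmap X X [0..<zlen X] (map (Idn D) (zR X)) (map (Idn D) (zS X))),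
     Cmp = (\<lambda>g f. Zmap (mdom f) (mcod g) (map (\<lambda>j. mS g ! j) (mS f))
              (map (\<lambda>i. Cmp D (mR g ! i) (mR f ! hat (mS g) i)) [0..<length (mR g)])
              (map (\<lambda>j. Cmp D (mSl g ! (mS f ! j)) (mSl f ! j)) [0..<length (mS f)])) \<rparr>"

definition liftC :: "'a cat \<Rightarrow> 'a U cat" where
  "liftC C = \<lparr> Ob = At ` Ob C, Ar = At ` Ar C,
     Dom = (\<lambda>u. case u of At f \<Rightarrow> At (Dom C f) | _ \<Rightarrow> undefined),
     Cod = (\<lambda>u. case u of At f \<Rightarrow> At (Cod C f) | _ \<Rightarrow> undefined),
     Idn = (\<lambda>u. case u of At x \<Rightarrow> At (Idn C x) | _ \<Rightarrow> undefined),
     Cmp = (\<lambda>v u. case (v, u) of (At g, At f) \<Rightarrow> At (Cmp C g f) | _ \<Rightarrow> undefined) \<rparr>"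

definition Zn :: "'a cat \<Rightarrow> nat \<Rightarrow> 'a U cat" where
  "Zn C n = (Zcat ^^ n) (liftC C)"

text \<open>The functor Z^n(C) -> Z^n(1) induced by C -> 1 (1 = the terminal category with
  single object/arrow At ()): it replaces every base object/arrow by the unique one.\<close>
definition to_terminal :: "'a U \<Rightarrow> unit U" where
  "to_terminal = map_U (\<lambda>_. ())"

text \<open>pi-cocartesian arrows of Z(D) -> Delta_+.\<close>
definition cocartesian :: "'a U cat \<Rightarrow> 'a U \<Rightarrow> bool" where
  "cocartesian D f \<longleftrightarrow> f \<in> Ar (Zcat D) \<and>
    (\<forall>h\<in>Ar (Zcat D). \<forall>u. mdom h = mdom f \<longrightarrow>
       length u = zlen (mcod f) \<longrightarrow> (\<forall>j<length u. u!j < zlen (mcod h)) \<longrightarrow> sorted u \<longrightarrow>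
       map (\<lambda>j. u!j) (mS f) = mS h \<longrightarrow>
       (\<exists>!v. v \<in> Ar (Zcat D) \<and> mdom v = mcod f \<and> mcod v = mcod h \<and>
              Cmp (Zcat D) v f = h \<and> mS v = u))"

definition simple_deg :: "'a U cat \<Rightarrow> 'a U set" where
  "simple_deg D = {f. cocartesian D f \<and> distinct (mS f)}"

definition parallel_deg :: "'a U cat \<Rightarrow> 'a U set \<Rightarrow> 'a U set" where
  "parallel_deg D S = {f. f \<in> Ar (Zcat D) \<and> zlen (mcod f) = zlen (mdom f) \<and>
      mS f = [0..<zlen (mdom f)] \<and> set (mR f) \<subseteq> S \<and> set (mSl f) \<subseteq> S}"

inductive_set compgen :: "'u cat \<Rightarrow> 'u set \<Rightarrow> 'u set" for C S where
  base: "f \<in> S \<Longrightarrow> f \<in> compgen C S"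
| comp: "f \<in> compgen C S \<Longrightarrow> g \<in> compgen C S \<Longrightarrow> Cod C f = Dom C g \<Longrightarrow> Cmp C g f \<in> compgen C S"

fun deg :: "'a cat \<Rightarrow> nat \<Rightarrow> 'a U set" where
  "deg C 0 = {f. isoC (Zn C 0) f}"
| "deg C (Suc n) = compgen (Zn C (Suc n)) (simple_deg (Zn C n) \<union> parallel_deg (Zn C n) (deg C n))"

text \<open>Deg(T): subobjects of T (classes of monos into T up to isomorphism over T)
  represented by a degeneracy map.\<close>
definition subobj_class :: "'u cat \<Rightarrow> 'u \<Rightarrow> 'u set" where
  "subobj_class D f = {g. monic D g \<and> Cod D g = Cod D f \<and>
      (\<exists>\<phi>. isoC D \<phi> \<and> Dom D \<phi> = Dom D g \<and> Cod D \<phi> = Dom D f \<and> g = Cmp D f \<phi>)}"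

definition DegSub :: "'a cat \<Rightarrow> nat \<Rightarrow> 'a U \<Rightarrow> 'a U set set" where
  "DegSub C n T = subobj_class (Zn C n) ` {f \<in> deg C n. Cod (Zn C n) f = T}"

end

theory Submission
  imports Defs
begin

section \<open>Category basics\<close>

lemma catD:
  assumes "is_cat D"
  shows cat_dom_ob: "f \<in> Ar D \<Longrightarrow> Dom D f \<in> Ob D"
    and cat_cod_ob: "f \<in> Ar D \<Longrightarrow> Cod D f \<in> Ob D"
    and cat_idn_ar: "x \<in> Ob D \<Longrightarrow> Idn D x \<in> Ar D"
    and cat_idn_dom: "x \<in> Ob D \<Longrightarrow> Dom D (Idn D x) = x"
    and cat_idn_cod: "x \<in> Ob D \<Longrightarrow> Cod D (Idn D x) = x"
    and cat_cmp_ar: "f \<in> Ar D \<Longrightarrow> g \<in> Ar D \<Longrightarrow> Cod D f = Dom D g \<Longrightarrow> Cmp D g f \<in> Ar D"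
    and cat_cmp_dom: "f \<in> Ar D \<Longrightarrow> g \<in> Ar D \<Longrightarrow> Cod D f = Dom D g \<Longrightarrow> Dom D (Cmp D g f) = Dom D f"
    and cat_cmp_cod: "f \<in> Ar D \<Longrightarrow> g \<in> Ar D \<Longrightarrow> Cod D f = Dom D g \<Longrightarrow> Cod D (Cmp D g f) = Cod D g"
    and cat_assoc: "f \<in> Ar D \<Longrightarrow> g \<in> Ar D \<Longrightarrow> h \<in> Ar D \<Longrightarrow> Cod D f = Dom D g \<Longrightarrow> Cod D g = Dom D h \<Longrightarrow>
        Cmp D h (Cmp D g f) = Cmp D (Cmp D h g) f"
    and cat_idl: "f \<in> Ar D \<Longrightarrow> Cmp D (Idn D (Cod D f)) f = f"
    and cat_idr: "f \<in> Ar D \<Longrightarrow> Cmp D f (Idn D (Dom D f)) = f"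
  using assms unfolding is_cat_def by blast+

lemma cat_idl': "is_cat D \<Longrightarrow> f \<in> Ar D \<Longrightarrow> Cod D f = y \<Longrightarrow> Cmp D (Idn D y) f = f"
  using cat_idl[of D f] by simp
lemma cat_idr': "is_cat D \<Longrightarrow> f \<in> Ar D \<Longrightarrow> Dom D f = y \<Longrightarrow> Cmp D f (Idn D y) = f"
  using cat_idr[of D f] by simp

lemma iso_monic:
  assumes D: "is_cat D" and "isoC D f" shows "monic D f"
proof -
  obtain g where g: "g \<in> Ar D" "Dom D g = Cod D f" "Cod D g = Dom D f"
     "Cmp D g f = Idn D (Dom D f)" and f: "f \<in> Ar D" using assms unfolding isoC_def by blast
  have "\<forall>a\<in>Ar D. \<forall>b\<in>Ar D. Cod D a = Dom D f \<longrightarrow> Cod D b = Dom D f \<longrightarrow> Dom D a = Dom D b \<longrightarrow>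
      Cmp D f a = Cmp D f b \<longrightarrow> a = b"
  proof (intro ballI impI)
    fix a b assume a: "a \<in> Ar D" and b: "b \<in> Ar D" and ca: "Cod D a = Dom D f" and cb: "Cod D b = Dom D f" and "Dom D a = Dom D b"
      and e: "Cmp D f a = Cmp D f b"
    have "a = Cmp D (Cmp D g f) a" using g(4) cat_idl'[OF D a ca] by simp
    also have "\<dots> = Cmp D g (Cmp D f a)" using cat_assoc[OF D a f g(1) ca g(2)[symmetric]] by simp
    also have "\<dots> = Cmp D g (Cmp D f b)" using e by simp
    also have "\<dots> = Cmp D (Cmp D g f) b" using cat_assoc[OF D b f g(1) cb g(2)[symmetric]] by simp
    also have "\<dots> = b" using g(4) cat_idl'[OF D b cb] by simp
    finally show "a = b" .
  qed
  then show ?thesis using f unfolding monic_def by blast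
qed

lemma monicD: "monic D f \<Longrightarrow> a \<in> Ar D \<Longrightarrow> b \<in> Ar D \<Longrightarrow> Cod D a = Dom D f \<Longrightarrow> Cod D b = Dom D f
   \<Longrightarrow> Dom D a = Dom D b \<Longrightarrow> Cmp D f a = Cmp D f b \<Longrightarrow> a = b"
  unfolding monic_def by (elim conjE ballE impE) auto

lemma isoI: "f \<in> Ar D \<Longrightarrow> g \<in> Ar D \<Longrightarrow> Dom D g = Cod D f \<Longrightarrow> Cod D g = Dom D f \<Longrightarrow>
  Cmp D g f = Idn D (Dom D f) \<Longrightarrow> Cmp D f g = Idn D (Cod D f) \<Longrightarrow> isoC D f"
  unfolding isoC_def by blast

lemma iso_idn: "is_cat D \<Longrightarrow> x \<in> Ob D \<Longrightarrow> isoC D (Idn D x)"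
  by (rule isoI[where g="Idn D x"]) (auto simp: cat_idn_ar cat_idn_dom cat_idn_cod intro: cat_idl')

lemma iso_cmp:
  assumes D: "is_cat D" and f: "isoC D f" and g: "isoC D g" and c: "Cod D f = Dom D g"
  shows "isoC D (Cmp D g f)"
proof -
  obtain f' where f': "f' \<in> Ar D" "Dom D f' = Cod D f" "Cod D f' = Dom D f"
     "Cmp D f' f = Idn D (Dom D f)" "Cmp D f f' = Idn D (Cod D f)" and fa: "f \<in> Ar D"
    using f unfolding isoC_def by blast
  obtain g' where g': "g' \<in> Ar D" "Dom D g' = Cod D g" "Cod D g' = Dom D g"
     "Cmp D g' g = Idn D (Dom D g)" "Cmp D g g' = Idn D (Cod D g)" and ga: "g \<in> Ar D"
    using g unfolding isoC_def by blast
  have gf: "Cmp D g f \<in> Ar D" "Dom D (Cmp D g f) = Dom D f" "Cod D (Cmp D g f) = Cod D g"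
    using fa ga c D by (auto intro: cat_cmp_ar cat_cmp_dom cat_cmp_cod)
  have fg: "Cmp D f' g' \<in> Ar D" "Dom D (Cmp D f' g') = Cod D g" "Cod D (Cmp D f' g') = Dom D f"
    using cat_cmp_ar[OF D g'(1) f'(1)] cat_cmp_dom[OF D g'(1) f'(1)] cat_cmp_cod[OF D g'(1) f'(1)]
      f' g' c by auto
  have e1: "Cmp D (Cmp D f' g') (Cmp D g f) = Idn D (Dom D f)"
  proof -
    have "Cmp D (Cmp D f' g') (Cmp D g f) = Cmp D f' (Cmp D g' (Cmp D g f))"
      using f' g' fa ga c D gf by (metis cat_assoc)
    also have "Cmp D g' (Cmp D g f) = Cmp D (Cmp D g' g) f"
      using f' g' fa ga c D by (metis cat_assoc)
    also have "\<dots> = f" using g' fa c D by (metis cat_idl')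
    finally show ?thesis using f' by simp
  qed
  have e2: "Cmp D (Cmp D g f) (Cmp D f' g') = Idn D (Cod D g)"
  proof -
    have "Cmp D (Cmp D g f) (Cmp D f' g') = Cmp D g (Cmp D f (Cmp D f' g'))"
      using f' g' fa ga c D fg by (metis cat_assoc)
    also have "Cmp D f (Cmp D f' g') = Cmp D (Cmp D f f') g'"
      using f' g' fa ga c D by (metis cat_assoc)
    also have "\<dots> = g'" using f' g' c D by (metis cat_idl')
    finally show ?thesis using g' by simp
  qed
  show ?thesis by (rule isoI[where g="Cmp D f' g'"]) (use gf fg e1 e2 in auto)
qed

lemma iso_inv:
  assumes D: "is_cat D" and f: "isoC D f"
  obtains g where "isoC D g" "g \<in> Ar D" "Dom D g = Cod D f" "Cod D g = Dom D f"
     "Cmp D g f = Idn D (Dom D f)" "Cmp D f g = Idn D (Cod D f)"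
proof -
  obtain g where g: "g \<in> Ar D" "Dom D g = Cod D f" "Cod D g = Dom D f"
     "Cmp D g f = Idn D (Dom D f)" "Cmp D f g = Idn D (Cod D f)" and fa: "f \<in> Ar D"
    using f unfolding isoC_def by blast
  have "isoC D g" by (rule isoI[where g=f]) (use g fa in auto)
  with g that show ?thesis by blast
qed

lemma hat_le_len: "hat fs i \<le> length fs"
  unfolding hat_def by (rule Least_le) simp

lemma hat_lt_iff:
  assumes "sorted fs"
  shows "j < hat fs i \<longleftrightarrow> j < length fs \<and> fs ! j < i"
proof
  assume j: "j < hat fs i"
  then have "\<not> (j = length fs \<or> (j < length fs \<and> i \<le> fs ! j))"
    unfolding hat_def by (rule not_less_Least)
  moreover have "j < length fs" using j hat_le_len[of fs i] by simp
  ultimately show "j < length fs \<and> fs ! j < i" by auto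
next
  assume j: "j < length fs \<and> fs ! j < i"
  show "j < hat fs i"
  proof (rule ccontr)
    assume "\<not> j < hat fs i"
    moreover have "hat fs i = length fs \<or> (hat fs i < length fs \<and> i \<le> fs ! hat fs i)"
      unfolding hat_def by (rule LeastI[of _ "length fs"]) simp
    ultimately show False using j assms sorted_nth_mono[of fs "hat fs i" j] by auto
  qed
qed

lemma hat_ge_iff:
  assumes "sorted fs" "j < length fs"
  shows "hat fs i \<le> j \<longleftrightarrow> i \<le> fs ! j"
  using hat_lt_iff[OF assms(1), of j i] assms(2) by auto

lemma hat_mono: "sorted fs \<Longrightarrow> i \<le> i' \<Longrightarrow> hat fs i \<le> hat fs i'"
  by (metis hat_lt_iff leI order_less_le_trans order_less_irrefl)

lemma hat_0[simp]: "hat fs 0 = 0"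
  unfolding hat_def by (rule Least_eq_0) simp

lemma hat_all: "sorted fs \<Longrightarrow> (\<forall>j<length fs. fs ! j < i) \<Longrightarrow> hat fs i = length fs"
  by (meson hat_le_len hat_lt_iff le_neq_implies_less less_irrefl)

lemma hat_eqI: "sorted fs \<Longrightarrow> (\<And>j. j < k \<longleftrightarrow> j < length fs \<and> fs ! j < i) \<Longrightarrow> hat fs i = k"
  by (metis hat_lt_iff nat_neq_iff)

lemma hat_upt: "i \<le> n \<Longrightarrow> hat [0..<n] i = i"
  by (rule hat_eqI) auto

lemma hat_comp:
  assumes gs: "sorted gs" and hs: "sorted hs" and b: "\<forall>j<length gs. gs ! j < length hs"
  shows "hat (map (\<lambda>j. hs ! j) gs) i = hat gs (hat hs i)"
proof -
  have s: "sorted (map (\<lambda>j. hs ! j) gs)"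
    using gs hs b by (auto simp: sorted_iff_nth_mono intro: sorted_nth_mono)
  show ?thesis
    by (rule hat_eqI[OF s]) (use b in \<open>auto simp: hat_lt_iff[OF gs] hat_lt_iff[OF hs]\<close>)
qed

lemma strict_nth_less: "sorted fs \<Longrightarrow> distinct fs \<Longrightarrow> j < k \<Longrightarrow> k < length fs \<Longrightarrow> fs ! j < fs ! k"
  using sorted_wrt_nth_less strict_sorted_iff by blast

lemma strict_nth_less_iff: "sorted fs \<Longrightarrow> distinct fs \<Longrightarrow> j < length fs \<Longrightarrow> k < length fs \<Longrightarrow> fs ! j < fs ! k \<longleftrightarrow> j < k"
  by (metis linorder_neqE_nat order_less_asym strict_nth_less)

lemma hat_at:
  assumes "sorted fs" "distinct fs" "j < length fs"
  shows "hat fs (fs ! j) = j"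
  by (rule hat_eqI[OF assms(1)]) (use assms in \<open>auto simp: strict_nth_less_iff\<close>)

lemma hat_at_Suc:
  assumes "sorted fs" "distinct fs" "j < length fs"
  shows "hat fs (Suc (fs ! j)) = Suc j"
proof (rule hat_eqI[OF assms(1)])
  fix k show "k < Suc j \<longleftrightarrow> k < length fs \<and> fs ! k < Suc (fs ! j)"
    using assms strict_nth_less_iff[OF assms(1,2), of j k] strict_nth_less_iff[OF assms(1,2), of k j]
    by (cases "k < length fs") auto
qed

lemma zig_okD:
  assumes "zig_ok D X"
  shows "X = Zig (zR X) (zS X) (zX X) (zY X)" "length (zR X) = Suc (zlen X)"
    "length (zX X) = zlen X" "length (zY X) = zlen X" "set (zR X) \<subseteq> Ob D" "set (zS X) \<subseteq> Ob D"
    "\<And>i. i < zlen X \<Longrightarrow> zX X ! i \<in> Ar D \<and> Dom D (zX X ! i) = zR X ! i \<and> Cod D (zX X ! i) = zS X ! i"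
    "\<And>i. i < zlen X \<Longrightarrow> zY X ! i \<in> Ar D \<and> Dom D (zY X ! i) = zR X ! Suc i \<and> Cod D (zY X ! i) = zS X ! i"
  using assms unfolding zig_ok_def zlen_def by auto

lemma zig_ob_r: "zig_ok D X \<Longrightarrow> i \<le> zlen X \<Longrightarrow> zR X ! i \<in> Ob D"
  using zig_okD(2,5)[of D X] by (metis in_mono le_imp_less_Suc nth_mem)
lemma zig_ob_s: "zig_ok D X \<Longrightarrow> i < zlen X \<Longrightarrow> zS X ! i \<in> Ob D"
  using zig_okD(6)[of D X] unfolding zlen_def by (metis in_mono nth_mem)

lemma zig_okI:
  assumes "length rs = Suc (length ss)" "length xs = length ss" "length ys = length ss"
    "set rs \<subseteq> Ob D" "set ss \<subseteq> Ob D"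
    "\<And>i. i < length ss \<Longrightarrow> xs ! i \<in> Ar D \<and> Dom D (xs ! i) = rs ! i \<and> Cod D (xs ! i) = ss ! i"
    "\<And>i. i < length ss \<Longrightarrow> ys ! i \<in> Ar D \<and> Dom D (ys ! i) = rs ! Suc i \<and> Cod D (ys ! i) = ss ! i"
  shows "zig_ok D (Zig rs ss xs ys)"
  using assms unfolding zig_ok_def by auto

definition zmt :: "'a U cat \<Rightarrow> 'a U \<Rightarrow> 'a U \<Rightarrow> nat list \<Rightarrow> 'a U list \<Rightarrow> 'a U list \<Rightarrow> bool" where
  "zmt D X Y fs R S \<longleftrightarrow> zig_ok D X \<and> zig_ok D Y \<and>
     length fs = zlen X \<and> (\<forall>j<zlen X. fs!j < zlen Y) \<and> sorted fs \<and>
     length R = Suc (zlen Y) \<and> length S = zlen X \<and>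
     (\<forall>i\<le>zlen Y. R!i \<in> Ar D \<and> Dom D (R!i) = zR X ! hat fs i \<and> Cod D (R!i) = zR Y ! i) \<and>
     (\<forall>j<zlen X. S!j \<in> Ar D \<and> Dom D (S!j) = zS X ! j \<and> Cod D (S!j) = zS Y ! (fs!j))"

definition zc :: "'a U cat \<Rightarrow> 'a U \<Rightarrow> 'a U \<Rightarrow> nat list \<Rightarrow> 'a U list \<Rightarrow> 'a U list \<Rightarrow> nat \<Rightarrow> (nat \<Rightarrow> 'a U) \<Rightarrow> bool" where
  "zc D X Y fs R S i c \<longleftrightarrow> c (hat fs i) = Cmp D (zX Y ! i) (R ! i) \<and>
     c (hat fs (Suc i)) = Cmp D (zY Y ! i) (R ! Suc i) \<and>
     (\<forall>j. hat fs i \<le> j \<and> j < hat fs (Suc i) \<longrightarrow>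
        Cmp D (S ! j) (zX X ! j) = c j \<and> Cmp D (S ! j) (zY X ! j) = c (Suc j))"

lemma fiber_eq: "sorted fs \<Longrightarrow> {j. j < length fs \<and> fs ! j = i} = {hat fs i..<hat fs (Suc i)}"
proof (intro set_eqI iffI)
  fix x assume s: "sorted fs"
  { assume "x \<in> {j. j < length fs \<and> fs ! j = i}"
    then have "x < length fs" "fs ! x = i" by auto
    then show "x \<in> {hat fs i..<hat fs (Suc i)}"
      using hat_lt_iff[OF s, of x i] hat_lt_iff[OF s, of x "Suc i"] by auto }
  { assume "x \<in> {hat fs i..<hat fs (Suc i)}"
    then have "\<not> x < hat fs i" "x < hat fs (Suc i)" by auto
    then show "x \<in> {j. j < length fs \<and> fs ! j = i}"
      using hat_lt_iff[OF s, of x i] hat_lt_iff[OF s, of x "Suc i"] by auto }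
qed

definition zcond :: "'a U cat \<Rightarrow> 'a U \<Rightarrow> 'a U \<Rightarrow> nat list \<Rightarrow> 'a U list \<Rightarrow> 'a U list \<Rightarrow> nat \<Rightarrow> bool" where
  "zcond D X Y fs rsl ssl i \<longleftrightarrow> (if {j. j < zlen X \<and> fs!j = i} \<noteq> {} then
           (let p = Min {j. j < zlen X \<and> fs!j = i}; q = Max {j. j < zlen X \<and> fs!j = i} in
              Cmp D (ssl!p) (zX X ! p) = Cmp D (zX Y ! i) (rsl!i) \<and>
              Cmp D (ssl!q) (zY X ! q) = Cmp D (zY Y ! i) (rsl!Suc i) \<and>
              (\<forall>j. p \<le> j \<and> j < q \<longrightarrow> Cmp D (ssl!j) (zY X ! j) = Cmp D (ssl!Suc j) (zX X ! Suc j)))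
         else Cmp D (zX Y ! i) (rsl!i) = Cmp D (zY Y ! i) (rsl!Suc i))"

lemma zmap_ok_alt: "zmap_ok D f \<longleftrightarrow> (\<exists>X Y fs R S. f = Zmap X Y fs R S \<and> zmt D X Y fs R S \<and>
      (\<forall>i<zlen Y. zcond D X Y fs R S i))"
  unfolding zmap_ok_def zmt_def zcond_def by (simp only: conj_assoc)

lemma zcond_iff:
  assumes s: "sorted fs" and n: "length fs = n"
  shows "(if {j. j < n \<and> fs!j = i} \<noteq> {} then
           (let p = Min {j. j < n \<and> fs!j = i}; q = Max {j. j < n \<and> fs!j = i} in
              Cmp D (S!p) (zX X ! p) = Cmp D (zX Y ! i) (R!i) \<and>
              Cmp D (S!q) (zY X ! q) = Cmp D (zY Y ! i) (R!Suc i) \<and>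
              (\<forall>j. p \<le> j \<and> j < q \<longrightarrow> Cmp D (S!j) (zY X ! j) = Cmp D (S!Suc j) (zX X ! Suc j)))
         else Cmp D (zX Y ! i) (R!i) = Cmp D (zY Y ! i) (R!Suc i))
    \<longleftrightarrow> (\<exists>c. zc D X Y fs R S i c)"
proof -
  define a where "a = hat fs i"
  define b where "b = hat fs (Suc i)"
  have fib: "{j. j < n \<and> fs!j = i} = {a..<b}" using fiber_eq[OF s, of i] n a_def b_def by simp
  show ?thesis
  proof (cases "a < b")
    case True
    have mn: "Min {a..<b} = a" using True by (intro Min_eqI) auto
    have mx: "Max {a..<b} = b - 1" using True by (intro Max_eqI) auto
    have L: "(if {j. j < n \<and> fs!j = i} \<noteq> {} then
           (let p = Min {j. j < n \<and> fs!j = i}; q = Max {j. j < n \<and> fs!j = i} in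
              Cmp D (S!p) (zX X ! p) = Cmp D (zX Y ! i) (R!i) \<and>
              Cmp D (S!q) (zY X ! q) = Cmp D (zY Y ! i) (R!Suc i) \<and>
              (\<forall>j. p \<le> j \<and> j < q \<longrightarrow> Cmp D (S!j) (zY X ! j) = Cmp D (S!Suc j) (zX X ! Suc j)))
         else Cmp D (zX Y ! i) (R!i) = Cmp D (zY Y ! i) (R!Suc i))
      \<longleftrightarrow> Cmp D (S!a) (zX X ! a) = Cmp D (zX Y ! i) (R!i) \<and>
              Cmp D (S!(b-1)) (zY X ! (b-1)) = Cmp D (zY Y ! i) (R!Suc i) \<and>
              (\<forall>j. a \<le> j \<and> j < b - 1 \<longrightarrow> Cmp D (S!j) (zY X ! j) = Cmp D (S!Suc j) (zX X ! Suc j))"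
      using True unfolding fib mn mx by (simp add: Let_def)
    show ?thesis unfolding L
    proof
      assume h: "Cmp D (S!a) (zX X ! a) = Cmp D (zX Y ! i) (R!i) \<and>
              Cmp D (S!(b-1)) (zY X ! (b-1)) = Cmp D (zY Y ! i) (R!Suc i) \<and>
              (\<forall>j. a \<le> j \<and> j < b - 1 \<longrightarrow> Cmp D (S!j) (zY X ! j) = Cmp D (S!Suc j) (zX X ! Suc j))"
      define c where "c = (\<lambda>k. if k < b then Cmp D (S!k) (zX X ! k) else Cmp D (zY Y ! i) (R!Suc i))"
      have "zc D X Y fs R S i c"
        unfolding zc_def a_def[symmetric] b_def[symmetric]
      proof (intro conjI allI impI)
        show "c a = Cmp D (zX Y ! i) (R ! i)" using h True by (simp add: c_def)
        show "c b = Cmp D (zY Y ! i) (R ! Suc i)" by (simp add: c_def)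
        fix j assume j: "a \<le> j \<and> j < b"
        show "Cmp D (S ! j) (zX X ! j) = c j" using j by (simp add: c_def)
        show "Cmp D (S ! j) (zY X ! j) = c (Suc j)"
        proof (cases "Suc j < b")
          case True then show ?thesis using h j by (simp add: c_def)
        next
          case False then have "j = b - 1" using j by arith
          then show ?thesis using h False by (simp add: c_def)
        qed
      qed
      then show "\<exists>c. zc D X Y fs R S i c" by blast
    next
      assume "\<exists>c. zc D X Y fs R S i c"
      then obtain c where c: "zc D X Y fs R S i c" by blast
      note cc = c[unfolded zc_def a_def[symmetric] b_def[symmetric]]
      have 1: "Cmp D (S!a) (zX X ! a) = Cmp D (zX Y ! i) (R!i)" using cc True by simp
      have 2: "Cmp D (S!(b-1)) (zY X ! (b-1)) = Cmp D (zY Y ! i) (R!Suc i)"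
        using cc True spec[OF conjunct2[OF conjunct2[OF cc]], of "b-1"] by simp
      have 3: "\<forall>j. a \<le> j \<and> j < b - 1 \<longrightarrow> Cmp D (S!j) (zY X ! j) = Cmp D (S!Suc j) (zX X ! Suc j)"
      proof (intro allI impI)
        fix j assume j: "a \<le> j \<and> j < b - 1"
        have jb: "j < b" using j by arith
        have jb2: "a \<le> Suc j \<and> Suc j < b" using j by arith
        have "Cmp D (S!j) (zY X ! j) = c (Suc j)" using spec[OF conjunct2[OF conjunct2[OF cc]], of j] j jb by simp
        also have "\<dots> = Cmp D (S!Suc j) (zX X ! Suc j)" using jb2 spec[OF conjunct2[OF conjunct2[OF cc]], of "Suc j"] by simp
        finally show "Cmp D (S!j) (zY X ! j) = Cmp D (S!Suc j) (zX X ! Suc j)" .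
      qed
      show "Cmp D (S!a) (zX X ! a) = Cmp D (zX Y ! i) (R!i) \<and>
              Cmp D (S!(b-1)) (zY X ! (b-1)) = Cmp D (zY Y ! i) (R!Suc i) \<and>
              (\<forall>j. a \<le> j \<and> j < b - 1 \<longrightarrow> Cmp D (S!j) (zY X ! j) = Cmp D (S!Suc j) (zX X ! Suc j))"
        using 1 2 3 by blast
    qed
  next
    case False
    have ab: "a = b" using False hat_mono[OF s, of i "Suc i"] a_def b_def by simp
    have L: "(if {j. j < n \<and> fs!j = i} \<noteq> {} then
           (let p = Min {j. j < n \<and> fs!j = i}; q = Max {j. j < n \<and> fs!j = i} in
              Cmp D (S!p) (zX X ! p) = Cmp D (zX Y ! i) (R!i) \<and>
              Cmp D (S!q) (zY X ! q) = Cmp D (zY Y ! i) (R!Suc i) \<and>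
              (\<forall>j. p \<le> j \<and> j < q \<longrightarrow> Cmp D (S!j) (zY X ! j) = Cmp D (S!Suc j) (zX X ! Suc j)))
         else Cmp D (zX Y ! i) (R!i) = Cmp D (zY Y ! i) (R!Suc i))
      \<longleftrightarrow> Cmp D (zX Y ! i) (R!i) = Cmp D (zY Y ! i) (R!Suc i)"
      using False unfolding fib by simp
    show ?thesis unfolding L
    proof
      assume h: "Cmp D (zX Y ! i) (R!i) = Cmp D (zY Y ! i) (R!Suc i)"
      have "zc D X Y fs R S i (\<lambda>_. Cmp D (zX Y ! i) (R!i))"
        unfolding zc_def a_def[symmetric] b_def[symmetric] using h ab by auto
      then show "\<exists>c. zc D X Y fs R S i c" by blast
    next
      assume "\<exists>c. zc D X Y fs R S i c"
      then obtain c where c: "zc D X Y fs R S i c" by blast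
      then show "Cmp D (zX Y ! i) (R!i) = Cmp D (zY Y ! i) (R!Suc i)"
        unfolding zc_def a_def[symmetric] b_def[symmetric] using ab by metis
    qed
  qed
qed

lemma zmap_ok_iff:
  "zmap_ok D f \<longleftrightarrow> (\<exists>X Y fs R S. f = Zmap X Y fs R S \<and> zmt D X Y fs R S \<and>
      (\<forall>i<zlen Y. \<exists>c. zc D X Y fs R S i c))"
proof -
  have H: "zmt D X Y fs R S \<Longrightarrow> zcond D X Y fs R S i \<longleftrightarrow> (\<exists>c. zc D X Y fs R S i c)" for X Y fs R S i
    unfolding zcond_def by (rule zcond_iff) (auto simp: zmt_def)
  show ?thesis unfolding zmap_ok_alt
  proof (intro iffI)
    assume "\<exists>X Y fs R S. f = Zmap X Y fs R S \<and> zmt D X Y fs R S \<and> (\<forall>i<zlen Y. zcond D X Y fs R S i)"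
    then obtain X Y fs R S where f: "f = Zmap X Y fs R S" and t: "zmt D X Y fs R S"
      and c: "\<forall>i<zlen Y. zcond D X Y fs R S i" by (elim exE conjE)
    have "\<forall>i<zlen Y. \<exists>c. zc D X Y fs R S i c" using c H[OF t] by simp
    then show "\<exists>X Y fs R S. f = Zmap X Y fs R S \<and> zmt D X Y fs R S \<and> (\<forall>i<zlen Y. \<exists>c. zc D X Y fs R S i c)"
      using f t by (intro exI[of _ X] exI[of _ Y] exI[of _ fs] exI[of _ R] exI[of _ S]) simp
  next
    assume "\<exists>X Y fs R S. f = Zmap X Y fs R S \<and> zmt D X Y fs R S \<and> (\<forall>i<zlen Y. \<exists>c. zc D X Y fs R S i c)"
    then obtain X Y fs R S where f: "f = Zmap X Y fs R S" and t: "zmt D X Y fs R S"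
      and c: "\<forall>i<zlen Y. \<exists>c. zc D X Y fs R S i c" by (elim exE conjE)
    have "\<forall>i<zlen Y. zcond D X Y fs R S i" using c H[OF t] by simp
    then show "\<exists>X Y fs R S. f = Zmap X Y fs R S \<and> zmt D X Y fs R S \<and> (\<forall>i<zlen Y. zcond D X Y fs R S i)"
      using f t by (intro exI[of _ X] exI[of _ Y] exI[of _ fs] exI[of _ R] exI[of _ S]) simp
  qed
qed

lemma zmtD:
  assumes "zmt D X Y fs R S"
  shows "zig_ok D X" "zig_ok D Y" "length fs = zlen X" "\<And>j. j < zlen X \<Longrightarrow> fs!j < zlen Y" "sorted fs"
    "length R = Suc (zlen Y)" "length S = zlen X"
    "\<And>i. i \<le> zlen Y \<Longrightarrow> R!i \<in> Ar D \<and> Dom D (R!i) = zR X ! hat fs i \<and> Cod D (R!i) = zR Y ! i"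
    "\<And>j. j < zlen X \<Longrightarrow> S!j \<in> Ar D \<and> Dom D (S!j) = zS X ! j \<and> Cod D (S!j) = zS Y ! (fs!j)"
  using assms unfolding zmt_def by auto

definition hom :: "'u cat \<Rightarrow> 'u \<Rightarrow> 'u \<Rightarrow> 'u \<Rightarrow> bool" where
  "hom D f a b \<longleftrightarrow> f \<in> Ar D \<and> Dom D f = a \<and> Cod D f = b"

lemma hom_cmp: "is_cat D \<Longrightarrow> hom D f a b \<Longrightarrow> hom D g b c \<Longrightarrow> hom D (Cmp D g f) a c"
  unfolding hom_def by (auto simp: cat_cmp_ar cat_cmp_dom cat_cmp_cod)

lemma hom_assoc: "is_cat D \<Longrightarrow> hom D f a b \<Longrightarrow> hom D g b c \<Longrightarrow> hom D h c d \<Longrightarrow>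
   Cmp D h (Cmp D g f) = Cmp D (Cmp D h g) f"
  unfolding hom_def by (auto simp: cat_assoc)

lemma hom_idl: "is_cat D \<Longrightarrow> hom D f a b \<Longrightarrow> Cmp D (Idn D b) f = f"
  unfolding hom_def by (auto simp: cat_idl')

lemma hom_idr: "is_cat D \<Longrightarrow> hom D f a b \<Longrightarrow> Cmp D f (Idn D a) = f"
  unfolding hom_def by (auto simp: cat_idr')

lemma hom_idn: "is_cat D \<Longrightarrow> a \<in> Ob D \<Longrightarrow> hom D (Idn D a) a a"
  unfolding hom_def by (auto simp: cat_idn_ar cat_idn_dom cat_idn_cod)

lemma zmt_hom:
  assumes "zmt D X Y fs R S"
  shows "\<And>i. i \<le> zlen Y \<Longrightarrow> hom D (R!i) (zR X ! hat fs i) (zR Y ! i)"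
    "\<And>j. j < zlen X \<Longrightarrow> hom D (S!j) (zS X ! j) (zS Y ! (fs!j))"
  using assms unfolding zmt_def hom_def by auto

lemma zig_hom:
  assumes "zig_ok D X"
  shows "\<And>i. i < zlen X \<Longrightarrow> hom D (zX X ! i) (zR X ! i) (zS X ! i)"
    "\<And>i. i < zlen X \<Longrightarrow> hom D (zY X ! i) (zR X ! Suc i) (zS X ! i)"
  using zig_okD[OF assms] unfolding hom_def by auto

lemma zmtI:
  assumes "zig_ok D X" "zig_ok D Y" "length fs = zlen X" "\<And>j. j < zlen X \<Longrightarrow> fs!j < zlen Y" "sorted fs"
    "length R = Suc (zlen Y)" "length S = zlen X"
    "\<And>i. i \<le> zlen Y \<Longrightarrow> R!i \<in> Ar D \<and> Dom D (R!i) = zR X ! hat fs i \<and> Cod D (R!i) = zR Y ! i"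
    "\<And>j. j < zlen X \<Longrightarrow> S!j \<in> Ar D \<and> Dom D (S!j) = zS X ! j \<and> Cod D (S!j) = zS Y ! (fs!j)"
  shows "zmt D X Y fs R S"
  using assms unfolding zmt_def by auto

lemma zc_typed:
  assumes t: "zmt D X Y fs R S" and c: "zc D X Y fs R S i c" and i: "i < zlen Y"
    and k: "hat fs i \<le> k" "k \<le> hat fs (Suc i)" and D: "is_cat D"
  shows "hom D (c k) (zR X ! k) (zS Y ! i)"
proof (cases "k < hat fs (Suc i)")
  case True
  have kn: "k < zlen X" using True hat_le_len[of fs "Suc i"] zmtD(3)[OF t] by simp
  have "k \<in> {hat fs i..<hat fs (Suc i)}" using True k by simp
  then have "k \<in> {j. j < length fs \<and> fs!j = i}" using fiber_eq[OF zmtD(5)[OF t], of i] by simp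
  then have fk: "fs ! k = i" by simp
  have "c k = Cmp D (S ! k) (zX X ! k)" using c True k unfolding zc_def by simp
  then show ?thesis using hom_cmp[OF D zig_hom(1)[OF zmtD(1)[OF t] kn] zmt_hom(2)[OF t kn]] fk by simp
next
  case False
  then have kk: "k = hat fs (Suc i)" using k by simp
  have "c k = Cmp D (zY Y ! i) (R ! Suc i)" using c kk unfolding zc_def by simp
  then show ?thesis using hom_cmp[OF D zmt_hom(1)[OF t, of "Suc i"] zig_hom(2)[OF zmtD(2)[OF t] i]] kk i by simp
qed

lemma zmt_comp:
  assumes D: "is_cat D" and f: "zmt D X Y fs R S" and g: "zmt D Y Z gs R' S'"
  shows "zmt D X Z (map (\<lambda>j. gs!j) fs) (map (\<lambda>i. Cmp D (R'!i) (R ! hat gs i)) [0..<Suc (zlen Z)])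
            (map (\<lambda>j. Cmp D (S' ! (fs!j)) (S!j)) [0..<zlen X])"
proof -
  note fD = zmtD[OF f] and gD = zmtD[OF g]
  have hc: "hat (map (\<lambda>j. gs!j) fs) i = hat fs (hat gs i)" for i
    by (rule hat_comp) (use fD gD in auto)
  have s: "sorted (map (\<lambda>j. gs!j) fs)"
    using fD gD by (auto simp: sorted_iff_nth_mono intro: sorted_nth_mono)
  show ?thesis
  proof (rule zmtI)
    show "zig_ok D X" "zig_ok D Z" by (fact fD gD)+
    show "length (map ((!) gs) fs) = zlen X" using fD by simp
    show "sorted (map ((!) gs) fs)" by (fact s)
    show "length (map (\<lambda>i. Cmp D (R' ! i) (R ! hat gs i)) [0..<Suc (zlen Z)]) = Suc (zlen Z)" by simp
    show "length (map (\<lambda>j. Cmp D (S' ! (fs ! j)) (S ! j)) [0..<zlen X]) = zlen X" by simp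
    fix j assume j: "j < zlen X"
    show "map ((!) gs) fs ! j < zlen Z" using j fD gD by simp
  next
    fix i assume i: "i \<le> zlen Z"
    have hg: "hat gs i \<le> zlen Y" using hat_le_len[of gs i] gD by simp
    have "hom D (Cmp D (R' ! i) (R ! hat gs i)) (zR X ! hat fs (hat gs i)) (zR Z ! i)"
      by (rule hom_cmp[OF D zmt_hom(1)[OF f hg] zmt_hom(1)[OF g i]])
    moreover have "map (\<lambda>i. Cmp D (R' ! i) (R ! hat gs i)) [0..<Suc (zlen Z)] ! i = Cmp D (R' ! i) (R ! hat gs i)"
      using i by (subst nth_map_upt) auto
    ultimately show "map (\<lambda>i. Cmp D (R' ! i) (R ! hat gs i)) [0..<Suc (zlen Z)] ! i \<in> Ar D \<and>
         Dom D (map (\<lambda>i. Cmp D (R' ! i) (R ! hat gs i)) [0..<Suc (zlen Z)] ! i) = zR X ! hat (map ((!) gs) fs) i \<and>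
         Cod D (map (\<lambda>i. Cmp D (R' ! i) (R ! hat gs i)) [0..<Suc (zlen Z)] ! i) = zR Z ! i"
      unfolding hom_def hc by simp
  next
    fix j assume j: "j < zlen X"
    have fj: "fs ! j < zlen Y" using fD j by simp
    have "hom D (Cmp D (S' ! (fs ! j)) (S ! j)) (zS X ! j) (zS Z ! (gs ! (fs ! j)))"
      by (rule hom_cmp[OF D zmt_hom(2)[OF f j] zmt_hom(2)[OF g fj]])
    then show "map (\<lambda>j. Cmp D (S' ! (fs ! j)) (S ! j)) [0..<zlen X] ! j \<in> Ar D \<and>
         Dom D (map (\<lambda>j. Cmp D (S' ! (fs ! j)) (S ! j)) [0..<zlen X] ! j) = zS X ! j \<and>
         Cod D (map (\<lambda>j. Cmp D (S' ! (fs ! j)) (S ! j)) [0..<zlen X] ! j) = zS Z ! (map ((!) gs) fs ! j)"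
      unfolding hom_def using j fD(3) by simp
  qed
qed

lemma in_fiber: "sorted fs \<Longrightarrow> hat fs i \<le> k \<Longrightarrow> k < hat fs (Suc i) \<Longrightarrow> k < length fs \<and> fs!k = i"
  using hat_lt_iff[of fs k i] hat_lt_iff[of fs k "Suc i"] by auto

lemma fiber_pos: "sorted fs \<Longrightarrow> k < length fs \<Longrightarrow> hat fs (fs!k) \<le> k \<and> k < hat fs (Suc (fs!k))"
  using hat_lt_iff[of fs k "fs!k"] hat_lt_iff[of fs k "Suc (fs!k)"] by auto

lemma zc_comp:
  assumes D: "is_cat D" and f: "zmt D X Y fs R S" and g: "zmt D Y Z gs R' S'"
    and cf: "\<And>k. k < zlen Y \<Longrightarrow> zc D X Y fs R S k (cf k)"
    and cg: "zc D Y Z gs R' S' i c" and i: "i < zlen Z"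
  shows "\<exists>C. zc D X Z (map (\<lambda>j. gs!j) fs) (map (\<lambda>i. Cmp D (R'!i) (R ! hat gs i)) [0..<Suc (zlen Z)])
            (map (\<lambda>j. Cmp D (S' ! (fs!j)) (S!j)) [0..<zlen X]) i C"
proof -
  note fD = zmtD[OF f] and gD = zmtD[OF g]
  have hc: "hat (map (\<lambda>j. gs!j) fs) i' = hat fs (hat gs i')" for i'
    by (rule hat_comp) (use fD gD in auto)
  define a where "a = hat gs i"
  define b where "b = hat gs (Suc i)"
  define A where "A = hat fs a"
  define B where "B = hat fs b"
  have ab: "a \<le> b" unfolding a_def b_def by (rule hat_mono) (use gD in auto)
  have bY: "b \<le> zlen Y" unfolding b_def using hat_le_len[of gs] gD by simp
  have BX: "B \<le> zlen X" unfolding B_def using hat_le_len[of fs] fD by simp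
  have AB: "A \<le> B" unfolding A_def B_def by (rule hat_mono) (use fD ab in auto)
  define E where "E = (\<lambda>k. Cmp D (c k) (R ! k))"
  have ct: "hom D (c k) (zR Y ! k) (zS Z ! i)" if "a \<le> k" "k \<le> b" for k
    using zc_typed[OF g cg i _ _ D] that a_def b_def by simp
  have cft: "hom D (cf k t) (zR X ! t) (zS Y ! k)" if "k < zlen Y" "hat fs k \<le> t" "t \<le> hat fs (Suc k)" for k t
    using zc_typed[OF f cf[OF that(1)] that(1) that(2,3) D] .
  have S't: "hom D (S' ! k) (zS Y ! k) (zS Z ! i)" if "a \<le> k" "k < b" for k
  proof -
    have "k < length gs \<and> gs ! k = i" using in_fiber[OF gD(5), of i k] that a_def b_def by simp
    then show ?thesis using zmt_hom(2)[OF g, of k] gD(3) by simp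
  qed
  have F1: "Cmp D (S'!k) (cf k (hat fs k)) = E k" if k: "a \<le> k" "k < b" for k
  proof -
    have kY: "k < zlen Y" using k bY by simp
    have "cf k (hat fs k) = Cmp D (zX Y ! k) (R!k)" using cf[OF kY] unfolding zc_def by simp
    then have "Cmp D (S'!k) (cf k (hat fs k)) = Cmp D (Cmp D (S'!k) (zX Y ! k)) (R!k)"
      using hom_assoc[OF D zmt_hom(1)[OF f, of k] zig_hom(1)[OF gD(1) kY] S't[OF k]] kY by simp
    also have "Cmp D (S'!k) (zX Y ! k) = c k" using cg k unfolding zc_def a_def b_def by simp
    finally show ?thesis unfolding E_def .
  qed
  have F2: "Cmp D (S'!k) (cf k (hat fs (Suc k))) = E (Suc k)" if k: "a \<le> k" "k < b" for k
  proof -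
    have kY: "k < zlen Y" using k bY by simp
    have "cf k (hat fs (Suc k)) = Cmp D (zY Y ! k) (R!Suc k)" using cf[OF kY] unfolding zc_def by simp
    then have "Cmp D (S'!k) (cf k (hat fs (Suc k))) = Cmp D (Cmp D (S'!k) (zY Y ! k)) (R!Suc k)"
      using hom_assoc[OF D zmt_hom(1)[OF f, of "Suc k"] zig_hom(2)[OF gD(1) kY] S't[OF k]] kY by simp
    also have "Cmp D (S'!k) (zY Y ! k) = c (Suc k)" using cg k unfolding zc_def a_def b_def by simp
    finally show ?thesis unfolding E_def .
  qed
  have F3: "\<forall>k1. a \<le> k1 \<longrightarrow> k1 + d \<le> b \<longrightarrow> hat fs k1 = hat fs (k1 + d) \<longrightarrow> E k1 = E (k1 + d)" for d
  proof (induction d)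
    case 0 then show ?case by simp
  next
    case (Suc d)
    show ?case
    proof (intro allI impI)
      fix k1 assume k1: "a \<le> k1" "k1 + Suc d \<le> b" "hat fs k1 = hat fs (k1 + Suc d)"
      have m1: "hat fs k1 \<le> hat fs (k1 + d)" by (rule hat_mono) (use fD in auto)
      have m2: "hat fs (k1 + d) \<le> hat fs (k1 + Suc d)" by (rule hat_mono) (use fD in auto)
      have h1: "hat fs k1 = hat fs (k1 + d)" using m1 m2 k1(3) by simp
      have h2: "hat fs (k1 + d) = hat fs (Suc (k1 + d))" using m1 m2 k1(3) by simp
      have "E k1 = E (k1 + d)" using Suc.IH k1 h1 by simp
      also have "\<dots> = Cmp D (S'!(k1+d)) (cf (k1+d) (hat fs (k1+d)))" using F1[of "k1+d"] k1 by simp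
      also have "\<dots> = Cmp D (S'!(k1+d)) (cf (k1+d) (hat fs (Suc (k1+d))))" using h2 by simp
      also have "\<dots> = E (Suc (k1 + d))" using F2[of "k1+d"] k1 by simp
      finally show "E k1 = E (k1 + Suc d)" by simp
    qed
  qed
  have F3': "E k1 = E k2" if "a \<le> k1" "k1 \<le> k2" "k2 \<le> b" "hat fs k1 = hat fs k2" for k1 k2
    using F3[of "k2 - k1"] that by simp
  define C where "C = (\<lambda>t. if t < B then Cmp D (S'!(fs!t)) (cf (fs!t) t) else E b)"
  have Ea: "E a = Cmp D (zX Z ! i) (Cmp D (R'!i) (R!a))"
  proof -
    have "c a = Cmp D (zX Z ! i) (R'!i)" using cg unfolding zc_def a_def by simp
    then show ?thesis unfolding E_def
      using hom_assoc[OF D zmt_hom(1)[OF f, of a] _ zig_hom(1)[OF gD(2) i], of "R'!i"]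
        zmt_hom(1)[OF g, of i] i a_def ab bY by simp
  qed
  have Eb: "E b = Cmp D (zY Z ! i) (Cmp D (R'!Suc i) (R!b))"
  proof -
    have "c b = Cmp D (zY Z ! i) (R'!Suc i)" using cg unfolding zc_def b_def by simp
    then show ?thesis unfolding E_def
      using hom_assoc[OF D zmt_hom(1)[OF f, of b] _ zig_hom(2)[OF gD(2) i], of "R'!Suc i"]
        zmt_hom(1)[OF g, of "Suc i"] i b_def bY by simp
  qed
  have rng: "a \<le> fs!t \<and> fs!t < b \<and> t < zlen X" if "A \<le> t" "t < B" for t
    using hat_lt_iff[OF fD(5), of t a] hat_lt_iff[OF fD(5), of t b] that A_def B_def fD(3) by auto
  have G1: "C A = E a"
  proof (cases "A < B")
    case True
    define k where "k = fs ! A"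
    have k: "a \<le> k" "k < b" "A < zlen X" using rng[of A] True k_def by auto
    have "hat fs k \<le> A" using fiber_pos[OF fD(5), of A] k fD(3) k_def by simp
    moreover have "A \<le> hat fs k" unfolding A_def by (rule hat_mono) (use fD k in auto)
    ultimately have hk: "hat fs k = A" by simp
    have "C A = Cmp D (S'!k) (cf k (hat fs k))" unfolding C_def using True hk k_def by simp
    also have "\<dots> = E k" using F1 k by simp
    also have "\<dots> = E a" using F3'[of a k] k hk A_def by simp
    finally show ?thesis .
  next
    case False
    then have "A = B" using AB by simp
    then show ?thesis unfolding C_def using F3'[of a b] ab False A_def B_def by simp
  qed
  have G3: "Cmp D (Cmp D (S'!(fs!j)) (S!j)) (zX X ! j) = C j \<and>
            Cmp D (Cmp D (S'!(fs!j)) (S!j)) (zY X ! j) = C (Suc j)" if j: "A \<le> j" "j < B" for j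
  proof -
    define k where "k = fs ! j"
    have k: "a \<le> k" "k < b" "j < zlen X" using rng[OF j] k_def by auto
    have kY: "k < zlen Y" using k bY by simp
    have pos: "hat fs k \<le> j" "j < hat fs (Suc k)" using fiber_pos[OF fD(5), of j] k fD(3) k_def by auto
    have Sj: "hom D (S!j) (zS X ! j) (zS Y ! k)" using zmt_hom(2)[OF f k(3)] k_def by simp
    have e1: "Cmp D (Cmp D (S'!k) (S!j)) (zX X ! j) = Cmp D (S'!k) (Cmp D (S!j) (zX X ! j))"
      using hom_assoc[OF D zig_hom(1)[OF fD(1) k(3)] Sj S't[OF k(1,2)]] by simp
    have e2: "Cmp D (Cmp D (S'!k) (S!j)) (zY X ! j) = Cmp D (S'!k) (Cmp D (S!j) (zY X ! j))"
      using hom_assoc[OF D zig_hom(2)[OF fD(1) k(3)] Sj S't[OF k(1,2)]] by simp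
    have c1: "Cmp D (S!j) (zX X ! j) = cf k j" "Cmp D (S!j) (zY X ! j) = cf k (Suc j)"
      using cf[OF kY] pos unfolding zc_def by auto
    have first: "Cmp D (Cmp D (S'!k) (S!j)) (zX X ! j) = C j"
      using e1 c1 j k_def unfolding C_def by simp
    have second: "Cmp D (S'!k) (cf k (Suc j)) = C (Suc j)"
    proof (cases "Suc j < B")
      case True
      define k' where "k' = fs ! Suc j"
      have k': "a \<le> k'" "k' < b" "Suc j < zlen X" using rng[of "Suc j"] True j k'_def by auto
      have kk': "k \<le> k'" unfolding k_def k'_def by (rule sorted_nth_mono) (use fD k' in auto)
      show ?thesis
      proof (cases "k' = k")
        case True
        then show ?thesis unfolding C_def using \<open>Suc j < B\<close> k'_def by simp
      next
        case False
        then have kk'2: "Suc k \<le> k'" using kk' by simp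
        have "\<not> Suc j < hat fs (Suc k)"
          using hat_lt_iff[OF fD(5), of "Suc j" "Suc k"] kk'2 k'_def by auto
        then have h1: "hat fs (Suc k) = Suc j" using pos by simp
        have "hat fs k' \<le> Suc j" using fiber_pos[OF fD(5), of "Suc j"] k' fD(3) k'_def by simp
        moreover have "hat fs (Suc k) \<le> hat fs k'" by (rule hat_mono) (use fD kk'2 in auto)
        ultimately have h2: "hat fs k' = Suc j" using h1 by simp
        have "Cmp D (S'!k) (cf k (Suc j)) = E (Suc k)" using F2[OF k(1,2)] h1 by simp
        also have "\<dots> = E k'" using F3'[of "Suc k" k'] k k' kk'2 h1 h2 by simp
        also have "\<dots> = Cmp D (S'!k') (cf k' (hat fs k'))" using F1[OF k'(1,2)] by simp
        also have "\<dots> = C (Suc j)" unfolding C_def using \<open>Suc j < B\<close> h2 k'_def by simp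
        finally show ?thesis .
      qed
    next
      case False
      then have sj: "Suc j = B" using j by simp
      have "hat fs (Suc k) \<le> B" unfolding B_def by (rule hat_mono) (use fD k in auto)
      then have h1: "hat fs (Suc k) = Suc j" using pos sj by simp
      have "Cmp D (S'!k) (cf k (Suc j)) = E (Suc k)" using F2[OF k(1,2)] h1 by simp
      also have "\<dots> = E b" using F3'[of "Suc k" b] k h1 sj B_def by simp
      also have "\<dots> = C (Suc j)" unfolding C_def using sj by simp
      finally show ?thesis .
    qed
    show ?thesis using first second e2 c1 k_def by simp
  qed
  have "zc D X Z (map (\<lambda>j. gs!j) fs) (map (\<lambda>i. Cmp D (R'!i) (R ! hat gs i)) [0..<Suc (zlen Z)])
            (map (\<lambda>j. Cmp D (S' ! (fs!j)) (S!j)) [0..<zlen X]) i C"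
    unfolding zc_def hc a_def[symmetric] b_def[symmetric] A_def[symmetric] B_def[symmetric]
  proof (intro conjI allI impI)
    have "map (\<lambda>i. Cmp D (R'!i) (R ! hat gs i)) [0..<Suc (zlen Z)] ! i = Cmp D (R'!i) (R!a)"
      using i a_def by (subst nth_map_upt) auto
    then show "C A = Cmp D (zX Z ! i) (map (\<lambda>i. Cmp D (R' ! i) (R ! hat gs i)) [0..<Suc (zlen Z)] ! i)"
      using G1 Ea by simp
    have "map (\<lambda>i. Cmp D (R'!i) (R ! hat gs i)) [0..<Suc (zlen Z)] ! Suc i = Cmp D (R'!Suc i) (R!b)"
      using i b_def by (subst nth_map_upt) auto
    then show "C B = Cmp D (zY Z ! i) (map (\<lambda>i. Cmp D (R' ! i) (R ! hat gs i)) [0..<Suc (zlen Z)] ! Suc i)"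
      unfolding C_def using Eb by simp
  next
    fix j assume j: "A \<le> j \<and> j < B"
    have jX: "j < zlen X" using j BX by simp
    have "map (\<lambda>j. Cmp D (S' ! (fs!j)) (S!j)) [0..<zlen X] ! j = Cmp D (S' ! (fs!j)) (S!j)"
      using jX by simp
    then show "Cmp D (map (\<lambda>j. Cmp D (S' ! (fs ! j)) (S ! j)) [0..<zlen X] ! j) (zX X ! j) = C j"
      "Cmp D (map (\<lambda>j. Cmp D (S' ! (fs ! j)) (S ! j)) [0..<zlen X] ! j) (zY X ! j) = C (Suc j)"
      using G3[of j] j by simp_all
  qed
  then show ?thesis by blast
qed

lemma is_catI:
  assumes "\<And>f. f \<in> Ar C \<Longrightarrow> Dom C f \<in> Ob C" "\<And>f. f \<in> Ar C \<Longrightarrow> Cod C f \<in> Ob C"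
    "\<And>x. x \<in> Ob C \<Longrightarrow> Idn C x \<in> Ar C" "\<And>x. x \<in> Ob C \<Longrightarrow> Dom C (Idn C x) = x"
    "\<And>x. x \<in> Ob C \<Longrightarrow> Cod C (Idn C x) = x"
    "\<And>f g. f \<in> Ar C \<Longrightarrow> g \<in> Ar C \<Longrightarrow> Cod C f = Dom C g \<Longrightarrow> Cmp C g f \<in> Ar C"
    "\<And>f g. f \<in> Ar C \<Longrightarrow> g \<in> Ar C \<Longrightarrow> Cod C f = Dom C g \<Longrightarrow> Dom C (Cmp C g f) = Dom C f"
    "\<And>f g. f \<in> Ar C \<Longrightarrow> g \<in> Ar C \<Longrightarrow> Cod C f = Dom C g \<Longrightarrow> Cod C (Cmp C g f) = Cod C g"
    "\<And>f g h. f \<in> Ar C \<Longrightarrow> g \<in> Ar C \<Longrightarrow> h \<in> Ar C \<Longrightarrow> Cod C f = Dom C g \<Longrightarrow> Cod C g = Dom C h \<Longrightarrow>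
        Cmp C h (Cmp C g f) = Cmp C (Cmp C h g) f"
    "\<And>f. f \<in> Ar C \<Longrightarrow> Cmp C (Idn C (Cod C f)) f = f"
    "\<And>f. f \<in> Ar C \<Longrightarrow> Cmp C f (Idn C (Dom C f)) = f"
  shows "is_cat C"
  unfolding is_cat_def by (intro conjI ballI impI; simp add: assms)

lemma Zcat_simps[simp]:
  "Ob (Zcat D) = {X. zig_ok D X}" "Ar (Zcat D) = {f. zmap_ok D f}" "Dom (Zcat D) = mdom" "Cod (Zcat D) = mcod"
  "Idn (Zcat D) X = Zmap X X [0..<zlen X] (map (Idn D) (zR X)) (map (Idn D) (zS X))"
  "Cmp (Zcat D) g f = Zmap (mdom f) (mcod g) (map (\<lambda>j. mS g ! j) (mS f))
              (map (\<lambda>i. Cmp D (mR g ! i) (mR f ! hat (mS g) i)) [0..<length (mR g)])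
              (map (\<lambda>j. Cmp D (mSl g ! (mS f ! j)) (mSl f ! j)) [0..<length (mS f)])"
  by (simp_all add: Zcat_def)

lemma zmap_okE:
  assumes "zmap_ok D f"
  obtains X Y fs R S where "f = Zmap X Y fs R S" "zmt D X Y fs R S" "\<And>i. i < zlen Y \<Longrightarrow> \<exists>c. zc D X Y fs R S i c"
  using assms unfolding zmap_ok_iff by blast

lemma zmap_ok_ZmapD:
  assumes "zmap_ok D (Zmap X Y fs R S)"
  shows "zmt D X Y fs R S" "\<And>i. i < zlen Y \<Longrightarrow> \<exists>c. zc D X Y fs R S i c"
  using assms unfolding zmap_ok_iff by auto

lemma zmap_okI:
  assumes "zmt D X Y fs R S" "\<And>i. i < zlen Y \<Longrightarrow> \<exists>c. zc D X Y fs R S i c"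
  shows "zmap_ok D (Zmap X Y fs R S)"
  using assms unfolding zmap_ok_iff by blast

lemma Zcat_cmp_ok:
  assumes D: "is_cat D" and f: "zmap_ok D (Zmap X Y fs R S)" and g: "zmap_ok D (Zmap Y Z gs R' S')"
  shows "zmap_ok D (Zmap X Z (map (\<lambda>j. gs!j) fs) (map (\<lambda>i. Cmp D (R'!i) (R ! hat gs i)) [0..<Suc (zlen Z)])
            (map (\<lambda>j. Cmp D (S' ! (fs!j)) (S!j)) [0..<zlen X]))"
proof -
  note tf = zmap_ok_ZmapD(1)[OF f] and cf0 = zmap_ok_ZmapD(2)[OF f]
  note tg = zmap_ok_ZmapD(1)[OF g] and cg0 = zmap_ok_ZmapD(2)[OF g]
  have "\<forall>k. \<exists>c. k < zlen Y \<longrightarrow> zc D X Y fs R S k c" using cf0 by blast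
  then obtain cf where cf: "\<And>k. k < zlen Y \<Longrightarrow> zc D X Y fs R S k (cf k)" by metis
  show ?thesis
  proof (rule zmap_okI[OF zmt_comp[OF D tf tg]])
    fix i assume i: "i < zlen Z"
    obtain c where "zc D Y Z gs R' S' i c" using cg0[OF i] by blast
    from zc_comp[OF D tf tg cf this i] show "\<exists>c. zc D X Z (map ((!) gs) fs)
       (map (\<lambda>i. Cmp D (R' ! i) (R ! hat gs i)) [0..<Suc (zlen Z)])
       (map (\<lambda>j. Cmp D (S' ! (fs ! j)) (S ! j)) [0..<zlen X]) i c" .
  qed
qed

lemma Zcat_idn_ok:
  assumes D: "is_cat D" and X: "zig_ok D X"
  shows "zmap_ok D (Zmap X X [0..<zlen X] (map (Idn D) (zR X)) (map (Idn D) (zS X)))"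
proof (rule zmap_okI)
  note xD = zig_okD[OF X]
  show "zmt D X X [0..<zlen X] (map (Idn D) (zR X)) (map (Idn D) (zS X))"
  proof (rule zmtI)
    fix i assume i: "i \<le> zlen X"
    show "map (Idn D) (zR X) ! i \<in> Ar D \<and> Dom D (map (Idn D) (zR X) ! i) = zR X ! hat [0..<zlen X] i \<and>
        Cod D (map (Idn D) (zR X) ! i) = zR X ! i"
      using hom_idn[OF D zig_ob_r[OF X i]] i xD(2) hat_upt[OF i] unfolding hom_def by simp
  next
    fix j assume j: "j < zlen X"
    show "map (Idn D) (zS X) ! j \<in> Ar D \<and> Dom D (map (Idn D) (zS X) ! j) = zS X ! j \<and>
        Cod D (map (Idn D) (zS X) ! j) = zS X ! ([0..<zlen X] ! j)"
      using hom_idn[OF D zig_ob_s[OF X j]] j unfolding hom_def zlen_def by simp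
  qed (use X xD in \<open>auto simp: zlen_def\<close>)
next
  fix i assume i: "i < zlen X"
  note xD = zig_okD[OF X]
  define c where "c = (\<lambda>k. if k = i then zX X ! i else zY X ! i)"
  have "zc D X X [0..<zlen X] (map (Idn D) (zR X)) (map (Idn D) (zS X)) i c"
    unfolding zc_def hat_upt[of i "zlen X", OF less_imp_le[OF i]] hat_upt[of "Suc i" "zlen X", OF Suc_leI[OF i]]
  proof (intro conjI allI impI)
    show "c i = Cmp D (zX X ! i) (map (Idn D) (zR X) ! i)"
      using hom_idr[OF D zig_hom(1)[OF X i]] i xD(2) c_def by simp
    show "c (Suc i) = Cmp D (zY X ! i) (map (Idn D) (zR X) ! Suc i)"
      using hom_idr[OF D zig_hom(2)[OF X i]] i xD(2) c_def by simp
    fix j assume j: "i \<le> j \<and> j < Suc i"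
    then have ji: "j = i" by simp
    show "Cmp D (map (Idn D) (zS X) ! j) (zX X ! j) = c j"
      using hom_idl[OF D zig_hom(1)[OF X i]] i ji c_def by (simp add: zlen_def)
    show "Cmp D (map (Idn D) (zS X) ! j) (zY X ! j) = c (Suc j)"
      using hom_idl[OF D zig_hom(2)[OF X i]] i ji c_def by (simp add: zlen_def)
  qed
  then show "\<exists>c. zc D X X [0..<zlen X] (map (Idn D) (zR X)) (map (Idn D) (zS X)) i c" by blast
qed

lemma zmap_ok_split:
  assumes "zmap_ok D f"
  obtains X Y fs R S where "f = Zmap X Y fs R S" "zmap_ok D (Zmap X Y fs R S)"
proof -
  from assms[unfolded zmap_ok_iff] obtain X Y fs R S where "f = Zmap X Y fs R S"
    by (elim exE conjE)
  with assms that show ?thesis by simp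
qed

lemma Zcat_cmp_eq:
  assumes "zmap_ok D (Zmap X Y fs R S)" "zmap_ok D (Zmap Y Z gs R' S')"
  shows "Cmp (Zcat D) (Zmap Y Z gs R' S') (Zmap X Y fs R S) =
    Zmap X Z (map (\<lambda>j. gs!j) fs) (map (\<lambda>i. Cmp D (R'!i) (R ! hat gs i)) [0..<Suc (zlen Z)])
            (map (\<lambda>j. Cmp D (S' ! (fs!j)) (S!j)) [0..<zlen X])"
  using zmtD(3,6)[OF zmap_ok_ZmapD(1)[OF assms(1)]] zmtD(3,6)[OF zmap_ok_ZmapD(1)[OF assms(2)]] by simp

lemma Zcat_assoc:
  assumes D: "is_cat D" and f: "zmap_ok D (Zmap W X fs R S)" and g: "zmap_ok D (Zmap X Y gs R' S')"
    and h: "zmap_ok D (Zmap Y Z hs R'' S'')"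
  shows "Cmp (Zcat D) (Zmap Y Z hs R'' S'') (Cmp (Zcat D) (Zmap X Y gs R' S') (Zmap W X fs R S)) =
         Cmp (Zcat D) (Cmp (Zcat D) (Zmap Y Z hs R'' S'') (Zmap X Y gs R' S')) (Zmap W X fs R S)"
proof -
  note tf = zmap_ok_ZmapD(1)[OF f] and tg = zmap_ok_ZmapD(1)[OF g] and th = zmap_ok_ZmapD(1)[OF h]
  note fD = zmtD[OF tf] and gD = zmtD[OF tg] and hD = zmtD[OF th]
  note gf = Zcat_cmp_ok[OF D f g] and hg = Zcat_cmp_ok[OF D g h]
  have L: "Cmp (Zcat D) (Zmap Y Z hs R'' S'') (Cmp (Zcat D) (Zmap X Y gs R' S') (Zmap W X fs R S)) =
    Zmap W Z (map (\<lambda>j. hs!j) (map (\<lambda>j. gs!j) fs))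
      (map (\<lambda>i. Cmp D (R''!i) ((map (\<lambda>i. Cmp D (R'!i) (R ! hat gs i)) [0..<Suc (zlen Y)]) ! hat hs i)) [0..<Suc (zlen Z)])
      (map (\<lambda>j. Cmp D (S'' ! ((map (\<lambda>j. gs!j) fs)!j)) ((map (\<lambda>j. Cmp D (S' ! (fs!j)) (S!j)) [0..<zlen W])!j)) [0..<zlen W])"
    unfolding Zcat_cmp_eq[OF f g] Zcat_cmp_eq[OF gf h] by simp
  have R: "Cmp (Zcat D) (Cmp (Zcat D) (Zmap Y Z hs R'' S'') (Zmap X Y gs R' S')) (Zmap W X fs R S) =
    Zmap W Z (map (\<lambda>j. (map (\<lambda>j. hs!j) gs)!j) fs)
      (map (\<lambda>i. Cmp D ((map (\<lambda>i. Cmp D (R''!i) (R' ! hat hs i)) [0..<Suc (zlen Z)])!i) (R ! hat (map (\<lambda>j. hs!j) gs) i)) [0..<Suc (zlen Z)])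
      (map (\<lambda>j. Cmp D ((map (\<lambda>j. Cmp D (S'' ! (gs!j)) (S'!j)) [0..<zlen X]) ! (fs!j)) (S!j)) [0..<zlen W])"
    unfolding Zcat_cmp_eq[OF g h] Zcat_cmp_eq[OF f hg] by simp
  have hc: "hat (map (\<lambda>j. hs!j) gs) i = hat gs (hat hs i)" for i
    by (rule hat_comp) (use gD hD in auto)
  have sf: "\<forall>x\<in>set fs. x < length gs" using fD gD by (auto simp: in_set_conv_nth)
  have e1: "map (\<lambda>j. hs!j) (map (\<lambda>j. gs!j) fs) = map (\<lambda>j. (map (\<lambda>j. hs!j) gs)!j) fs"
    using sf by simp
  have e2: "map (\<lambda>i. Cmp D (R''!i) ((map (\<lambda>i. Cmp D (R'!i) (R ! hat gs i)) [0..<Suc (zlen Y)]) ! hat hs i)) [0..<Suc (zlen Z)]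
     = map (\<lambda>i. Cmp D ((map (\<lambda>i. Cmp D (R''!i) (R' ! hat hs i)) [0..<Suc (zlen Z)])!i) (R ! hat (map (\<lambda>j. hs!j) gs) i)) [0..<Suc (zlen Z)]"
  proof (rule map_cong[OF refl])
    fix i assume "i \<in> set [0..<Suc (zlen Z)]"
    then have i: "i \<le> zlen Z" by (simp del: upt_Suc)
    have hi: "hat hs i \<le> zlen Y" using hat_le_len[of hs i] hD by simp
    have hgi: "hat gs (hat hs i) \<le> zlen X" using hat_le_len[of gs] gD by simp
    have a: "(map (\<lambda>i. Cmp D (R'!i) (R ! hat gs i)) [0..<Suc (zlen Y)]) ! hat hs i = Cmp D (R' ! hat hs i) (R ! hat gs (hat hs i))"
      using hi by (subst nth_map_upt) auto
    have b: "(map (\<lambda>i. Cmp D (R''!i) (R' ! hat hs i)) [0..<Suc (zlen Z)])!i = Cmp D (R''!i) (R' ! hat hs i)"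
      using i by (subst nth_map_upt) auto
    show "Cmp D (R''!i) ((map (\<lambda>i. Cmp D (R'!i) (R ! hat gs i)) [0..<Suc (zlen Y)]) ! hat hs i) =
          Cmp D ((map (\<lambda>i. Cmp D (R''!i) (R' ! hat hs i)) [0..<Suc (zlen Z)])!i) (R ! hat (map (\<lambda>j. hs!j) gs) i)"
      unfolding a b hc using hom_assoc[OF D zmt_hom(1)[OF tf hgi] zmt_hom(1)[OF tg hi] zmt_hom(1)[OF th i]] .
  qed
  have e3: "map (\<lambda>j. Cmp D (S'' ! ((map (\<lambda>j. gs!j) fs)!j)) ((map (\<lambda>j. Cmp D (S' ! (fs!j)) (S!j)) [0..<zlen W])!j)) [0..<zlen W]
     = map (\<lambda>j. Cmp D ((map (\<lambda>j. Cmp D (S'' ! (gs!j)) (S'!j)) [0..<zlen X]) ! (fs!j)) (S!j)) [0..<zlen W]"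
  proof (rule map_cong[OF refl])
    fix j assume "j \<in> set [0..<zlen W]"
    then have j: "j < zlen W" by simp
    have fj: "fs ! j < zlen X" using fD j by simp
    have gfj: "gs ! (fs ! j) < zlen Y" using gD fj by simp
    show "Cmp D (S'' ! ((map (\<lambda>j. gs!j) fs)!j)) ((map (\<lambda>j. Cmp D (S' ! (fs!j)) (S!j)) [0..<zlen W])!j) =
        Cmp D ((map (\<lambda>j. Cmp D (S'' ! (gs!j)) (S'!j)) [0..<zlen X]) ! (fs!j)) (S!j)"
      using hom_assoc[OF D zmt_hom(2)[OF tf j] zmt_hom(2)[OF tg fj] zmt_hom(2)[OF th gfj]] j fj fD(3) by simp
  qed
  show ?thesis unfolding L R e1 e2 e3 ..
qed

lemma Zcat_idl:
  assumes D: "is_cat D" and f: "zmap_ok D (Zmap X Y fs R S)"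
  shows "Cmp (Zcat D) (Idn (Zcat D) Y) (Zmap X Y fs R S) = Zmap X Y fs R S"
proof -
  note tf = zmap_ok_ZmapD(1)[OF f]
  note fD = zmtD[OF tf]
  have "map (\<lambda>i. Cmp D (map (Idn D) (zR Y) ! i) (R ! hat [0..<zlen Y] i)) [0..<length (map (Idn D) (zR Y))] = R"
  proof (rule nth_equalityI)
    show "length (map (\<lambda>i. Cmp D (map (Idn D) (zR Y) ! i) (R ! hat [0..<zlen Y] i)) [0..<length (map (Idn D) (zR Y))]) = length R"
      using fD zig_okD(2)[OF fD(2)] by simp
    fix i assume "i < length (map (\<lambda>i. Cmp D (map (Idn D) (zR Y) ! i) (R ! hat [0..<zlen Y] i)) [0..<length (map (Idn D) (zR Y))])"
    then have i: "i \<le> zlen Y" using zig_okD(2)[OF fD(2)] by simp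
    show "map (\<lambda>i. Cmp D (map (Idn D) (zR Y) ! i) (R ! hat [0..<zlen Y] i)) [0..<length (map (Idn D) (zR Y))] ! i = R ! i"
      using hom_idl[OF D zmt_hom(1)[OF tf i]] i hat_upt[OF i] zig_okD(2)[OF fD(2)] by (simp add: less_Suc_eq_le del: upt_Suc)
  qed
  moreover have "map (\<lambda>j. Cmp D (map (Idn D) (zS Y) ! (fs ! j)) (S ! j)) [0..<length fs] = S"
  proof (rule nth_equalityI)
    show "length (map (\<lambda>j. Cmp D (map (Idn D) (zS Y) ! (fs ! j)) (S ! j)) [0..<length fs]) = length S"
      using fD by simp
    fix j assume "j < length (map (\<lambda>j. Cmp D (map (Idn D) (zS Y) ! (fs ! j)) (S ! j)) [0..<length fs])"
    then have j: "j < zlen X" using fD by simp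
    show "map (\<lambda>j. Cmp D (map (Idn D) (zS Y) ! (fs ! j)) (S ! j)) [0..<length fs] ! j = S ! j"
      using hom_idl[OF D zmt_hom(2)[OF tf j]] j fD(3) fD(4)[of j] by (simp add: zlen_def)
  qed
  moreover have "map (\<lambda>j. [0..<zlen Y] ! j) fs = fs"
    using fD by (auto intro!: nth_equalityI)
  ultimately show ?thesis by simp
qed

lemma Zcat_idr:
  assumes D: "is_cat D" and f: "zmap_ok D (Zmap X Y fs R S)"
  shows "Cmp (Zcat D) (Zmap X Y fs R S) (Idn (Zcat D) X) = Zmap X Y fs R S"
proof -
  note tf = zmap_ok_ZmapD(1)[OF f]
  note fD = zmtD[OF tf]
  have "map (\<lambda>i. Cmp D (R ! i) (map (Idn D) (zR X) ! hat fs i)) [0..<length R] = R"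
  proof (rule nth_equalityI)
    fix i assume "i < length (map (\<lambda>i. Cmp D (R ! i) (map (Idn D) (zR X) ! hat fs i)) [0..<length R])"
    then have i: "i \<le> zlen Y" using fD by simp
    have "hat fs i \<le> zlen X" using hat_le_len[of fs i] fD by simp
    then show "map (\<lambda>i. Cmp D (R ! i) (map (Idn D) (zR X) ! hat fs i)) [0..<length R] ! i = R ! i"
      using hom_idr[OF D zmt_hom(1)[OF tf i]] i fD zig_okD(2)[OF fD(1)] by (simp add: less_Suc_eq_le del: upt_Suc)
  qed simp
  moreover have "map (\<lambda>j. Cmp D (S ! ([0..<zlen X] ! j)) (map (Idn D) (zS X) ! j)) [0..<length [0..<zlen X]] = S"
  proof (rule nth_equalityI)
    fix j assume "j < length (map (\<lambda>j. Cmp D (S ! ([0..<zlen X] ! j)) (map (Idn D) (zS X) ! j)) [0..<length [0..<zlen X]])"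
    then have j: "j < zlen X" by simp
    show "map (\<lambda>j. Cmp D (S ! ([0..<zlen X] ! j)) (map (Idn D) (zS X) ! j)) [0..<length [0..<zlen X]] ! j = S ! j"
      using hom_idr[OF D zmt_hom(2)[OF tf j]] j by (simp add: zlen_def)
  qed (use fD in simp)
  moreover have "map (\<lambda>j. fs ! j) [0..<zlen X] = fs"
    using fD by (auto intro!: nth_equalityI)
  ultimately show ?thesis by simp
qed

lemma Zcat_is_cat:
  assumes D: "is_cat D"
  shows "is_cat (Zcat D)"
proof (rule is_catI)
  fix f assume "f \<in> Ar (Zcat D)"
  then have "zmap_ok D f" by simp
  then obtain X Y fs R S where e: "f = Zmap X Y fs R S" and ok: "zmap_ok D (Zmap X Y fs R S)"
    by (rule zmap_ok_split)
  note fD = zmtD[OF zmap_ok_ZmapD(1)[OF ok]]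
  show "Dom (Zcat D) f \<in> Ob (Zcat D)" "Cod (Zcat D) f \<in> Ob (Zcat D)" using e fD by simp_all
  show "Cmp (Zcat D) (Idn (Zcat D) (Cod (Zcat D) f)) f = f" using Zcat_idl[OF D ok] e by simp
  show "Cmp (Zcat D) f (Idn (Zcat D) (Dom (Zcat D) f)) = f" using Zcat_idr[OF D ok] e by simp
next
  fix x assume "x \<in> Ob (Zcat D)"
  then have x: "zig_ok D x" by simp
  show "Idn (Zcat D) x \<in> Ar (Zcat D)" using Zcat_idn_ok[OF D x] by simp
  show "Dom (Zcat D) (Idn (Zcat D) x) = x" "Cod (Zcat D) (Idn (Zcat D) x) = x" by simp_all
next
  fix f g assume "f \<in> Ar (Zcat D)" "g \<in> Ar (Zcat D)" and c: "Cod (Zcat D) f = Dom (Zcat D) g"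
  then have "zmap_ok D f" "zmap_ok D g" by simp_all
  obtain X Y fs R S where e: "f = Zmap X Y fs R S" and okf: "zmap_ok D (Zmap X Y fs R S)"
    by (rule zmap_ok_split[OF \<open>zmap_ok D f\<close>])
  obtain Y' Z gs R' S' where e2: "g = Zmap Y' Z gs R' S'" and okg: "zmap_ok D (Zmap Y' Z gs R' S')"
    by (rule zmap_ok_split[OF \<open>zmap_ok D g\<close>])
  have YY: "Y' = Y" using c e e2 by simp
  note okg' = okg[unfolded YY]
  show "Cmp (Zcat D) g f \<in> Ar (Zcat D)" using Zcat_cmp_ok[OF D okf okg'] Zcat_cmp_eq[OF okf okg'] e e2 YY by simp
  show "Dom (Zcat D) (Cmp (Zcat D) g f) = Dom (Zcat D) f" "Cod (Zcat D) (Cmp (Zcat D) g f) = Cod (Zcat D) g"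
    using e e2 by simp_all
next
  fix f g h assume "f \<in> Ar (Zcat D)" "g \<in> Ar (Zcat D)" "h \<in> Ar (Zcat D)"
    and c: "Cod (Zcat D) f = Dom (Zcat D) g" "Cod (Zcat D) g = Dom (Zcat D) h"
  then have "zmap_ok D f" "zmap_ok D g" "zmap_ok D h" by simp_all
  obtain X Y fs R S where e: "f = Zmap X Y fs R S" and okf: "zmap_ok D (Zmap X Y fs R S)"
    by (rule zmap_ok_split[OF \<open>zmap_ok D f\<close>])
  obtain Y' Z gs R' S' where e2: "g = Zmap Y' Z gs R' S'" and okg: "zmap_ok D (Zmap Y' Z gs R' S')"
    by (rule zmap_ok_split[OF \<open>zmap_ok D g\<close>])
  obtain Z' W hs R'' S'' where e3: "h = Zmap Z' W hs R'' S''" and okh: "zmap_ok D (Zmap Z' W hs R'' S'')"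
    by (rule zmap_ok_split[OF \<open>zmap_ok D h\<close>])
  have YY: "Y' = Y" "Z' = Z" using c e e2 e3 by simp_all
  show "Cmp (Zcat D) h (Cmp (Zcat D) g f) = Cmp (Zcat D) (Cmp (Zcat D) h g) f"
    using Zcat_assoc[OF D okf okg[unfolded YY] okh[unfolded YY]] e e2 e3 YY by simp
qed

definition degdata :: "'a U cat \<Rightarrow> 'a U set \<Rightarrow> bool" where
  "degdata D P \<longleftrightarrow> is_cat D \<and> P \<subseteq> Ar D \<and> (\<forall>f\<in>P. monic D f) \<and> (\<forall>f. isoC D f \<longrightarrow> f \<in> P) \<and>
     (\<forall>f\<in>P. \<forall>g\<in>P. Cod D f = Dom D g \<longrightarrow> Cmp D g f \<in> P) \<and>
     (\<forall>f\<in>P. \<forall>g\<in>P. Cod D f = Cod D g \<longrightarrow> to_terminal f = to_terminal g \<longrightarrow>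
        (\<exists>\<phi>. isoC D \<phi> \<and> Dom D \<phi> = Dom D f \<and> Cod D \<phi> = Dom D g \<and> f = Cmp D g \<phi>))"

lemma degdataD:
  assumes "degdata D P"
  shows "is_cat D" "\<And>f. f \<in> P \<Longrightarrow> f \<in> Ar D" "\<And>f. f \<in> P \<Longrightarrow> monic D f" "\<And>f. isoC D f \<Longrightarrow> f \<in> P"
    "\<And>f g. f \<in> P \<Longrightarrow> g \<in> P \<Longrightarrow> Cod D f = Dom D g \<Longrightarrow> Cmp D g f \<in> P"
    "\<And>f g. f \<in> P \<Longrightarrow> g \<in> P \<Longrightarrow> Cod D f = Cod D g \<Longrightarrow> to_terminal f = to_terminal g \<Longrightarrow>
        (\<exists>\<phi>. isoC D \<phi> \<and> Dom D \<phi> = Dom D f \<and> Cod D \<phi> = Dom D g \<and> f = Cmp D g \<phi>)"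
  using assms unfolding degdata_def by blast+

lemma degdata_cmp_hom: "degdata D P \<Longrightarrow> f \<in> P \<Longrightarrow> g \<in> P \<Longrightarrow> hom D f a b \<Longrightarrow> hom D g b c \<Longrightarrow> Cmp D g f \<in> P"
  using degdataD(5) unfolding hom_def by metis

definition Dg :: "'a U cat \<Rightarrow> 'a U set \<Rightarrow> 'a U \<Rightarrow> bool" where
  "Dg D P f \<longleftrightarrow> zmap_ok D f \<and> distinct (mS f) \<and> set (mR f) \<subseteq> P \<and> set (mSl f) \<subseteq> P \<and>
     (\<forall>i<zlen (mcod f). i \<notin> set (mS f) \<longrightarrow> Cmp D (zX (mcod f) ! i) (mR f ! i) \<in> P)"

lemma Dg_Zmap: "Dg D P (Zmap X Y fs R S) \<longleftrightarrow> zmap_ok D (Zmap X Y fs R S) \<and> distinct fs \<and> set R \<subseteq> P \<and> set S \<subseteq> P \<and>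
     (\<forall>i<zlen Y. i \<notin> set fs \<longrightarrow> Cmp D (zX Y ! i) (R ! i) \<in> P)"
  unfolding Dg_def by simp

lemma parallel_Dg: "f \<in> parallel_deg D P \<Longrightarrow> Dg D P f"
  unfolding parallel_deg_def Dg_def by auto

lemma hat_sec:
  assumes "sorted fs" "distinct fs" "\<forall>j<length fs. fs ! j < m" "k \<le> length fs"
  shows "\<exists>i\<le>m. hat fs i = k"
proof (cases k)
  case 0 then show ?thesis by (intro exI[of _ 0]) simp
next
  case (Suc k')
  then have "k' < length fs" using assms by simp
  then show ?thesis using hat_at_Suc[OF assms(1,2)] assms(3) Suc
    by (intro exI[of _ "Suc (fs ! k')"]) auto
qed

lemma Dg_cmp:
  assumes P: "degdata D P" and f: "Dg D P (Zmap X Y fs R S)" and g: "Dg D P (Zmap Y Z gs R' S')"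
  shows "Dg D P (Cmp (Zcat D) (Zmap Y Z gs R' S') (Zmap X Y fs R S))"
proof -
  note D = degdataD(1)[OF P]
  have okf: "zmap_ok D (Zmap X Y fs R S)" and okg: "zmap_ok D (Zmap Y Z gs R' S')"
    using f g unfolding Dg_Zmap by auto
  note tf = zmap_ok_ZmapD(1)[OF okf] and tg = zmap_ok_ZmapD(1)[OF okg]
  note fD = zmtD[OF tf] and gD = zmtD[OF tg]
  have df: "distinct fs" and Rf: "set R \<subseteq> P" and Sf: "set S \<subseteq> P"
    and nf: "\<And>i. i < zlen Y \<Longrightarrow> i \<notin> set fs \<Longrightarrow> Cmp D (zX Y ! i) (R ! i) \<in> P"
    using f unfolding Dg_Zmap by auto
  have dg: "distinct gs" and Rg: "set R' \<subseteq> P" and Sg: "set S' \<subseteq> P"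
    and ng: "\<And>i. i < zlen Z \<Longrightarrow> i \<notin> set gs \<Longrightarrow> Cmp D (zX Z ! i) (R' ! i) \<in> P"
    using g unfolding Dg_Zmap by auto
  have RP: "R ! i \<in> P" if "i \<le> zlen Y" for i using Rf that fD(6) by (simp add: subset_iff)
  have SP: "S ! j \<in> P" if "j < zlen X" for j using Sf that fD(7) by (simp add: subset_iff)
  have R'P: "R' ! i \<in> P" if "i \<le> zlen Z" for i using Rg that gD(6) by (simp add: subset_iff)
  have S'P: "S' ! j \<in> P" if "j < zlen Y" for j using Sg that gD(7) by (simp add: subset_iff)
  have ok: "zmap_ok D (Zmap X Z (map (\<lambda>j. gs!j) fs) (map (\<lambda>i. Cmp D (R'!i) (R ! hat gs i)) [0..<Suc (zlen Z)])
            (map (\<lambda>j. Cmp D (S' ! (fs!j)) (S!j)) [0..<zlen X]))" by (rule Zcat_cmp_ok[OF D okf okg])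
  have dist: "distinct (map (\<lambda>j. gs!j) fs)"
  proof -
    have "inj_on (\<lambda>j. gs!j) (set fs)"
      using dg fD gD by (auto simp: inj_on_def in_set_conv_nth nth_eq_iff_index_eq)
    then show ?thesis using df by (simp add: distinct_map)
  qed
  have RC0: "\<forall>i\<in>set [0..<Suc (zlen Z)]. Cmp D (R'!i) (R ! hat gs i) \<in> P"
  proof
    fix i assume "i \<in> set [0..<Suc (zlen Z)]"
    then have i: "i \<le> zlen Z" by (simp del: upt_Suc)
    have hi: "hat gs i \<le> zlen Y" using hat_le_len[of gs i] gD by simp
    show "Cmp D (R'!i) (R ! hat gs i) \<in> P"
      by (rule degdata_cmp_hom[OF P RP[OF hi] R'P[OF i] zmt_hom(1)[OF tf hi] zmt_hom(1)[OF tg i]])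
  qed
  have RC: "set (map (\<lambda>i. Cmp D (R'!i) (R ! hat gs i)) [0..<Suc (zlen Z)]) \<subseteq> P"
    using RC0 by (simp only: set_map image_subset_iff)
  have SC: "set (map (\<lambda>j. Cmp D (S' ! (fs!j)) (S!j)) [0..<zlen X]) \<subseteq> P"
  proof clarsimp
    fix j assume j: "j < zlen X"
    have fj: "fs ! j < zlen Y" using fD j by simp
    show "Cmp D (S' ! (fs!j)) (S!j) \<in> P"
      by (rule degdata_cmp_hom[OF P SP[OF j] S'P[OF fj] zmt_hom(2)[OF tf j] zmt_hom(2)[OF tg fj]])
  qed
  have NC: "Cmp D (zX Z ! i) ((map (\<lambda>i. Cmp D (R'!i) (R ! hat gs i)) [0..<Suc (zlen Z)]) ! i) \<in> P"
    if i: "i < zlen Z" "i \<notin> set (map (\<lambda>j. gs!j) fs)" for i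
  proof -
    have hi: "hat gs i \<le> zlen Y" using hat_le_len[of gs i] gD by simp
    have e0: "(map (\<lambda>i. Cmp D (R'!i) (R ! hat gs i)) [0..<Suc (zlen Z)]) ! i = Cmp D (R'!i) (R ! hat gs i)"
      using i by (subst nth_map_upt) auto
    have as: "Cmp D (zX Z ! i) (Cmp D (R'!i) (R ! hat gs i)) = Cmp D (Cmp D (zX Z ! i) (R'!i)) (R ! hat gs i)"
      by (rule hom_assoc[OF D zmt_hom(1)[OF tf hi] zmt_hom(1)[OF tg] zig_hom(1)[OF gD(2) i(1)]]) (use i in simp)
    show ?thesis
    proof (cases "i \<in> set gs")
      case False
      have "Cmp D (Cmp D (zX Z ! i) (R'!i)) (R ! hat gs i) \<in> P"
        by (rule degdata_cmp_hom[OF P RP[OF hi] ng[OF i(1) False] zmt_hom(1)[OF tf hi]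
              hom_cmp[OF D zmt_hom(1)[OF tg] zig_hom(1)[OF gD(2) i(1)]]]) (use i in simp)
      then show ?thesis using e0 as by simp
    next
      case True
      then obtain k where k: "k < zlen Y" "gs ! k = i" using gD(3) by (auto simp: in_set_conv_nth)
      have hk: "hat gs i = k" using hat_at[OF gD(5) dg, of k] k gD(3) by simp
      have hk2: "hat gs (Suc i) = Suc k" using hat_at_Suc[OF gD(5) dg, of k] k gD(3) by simp
      have kf: "k \<notin> set fs" using i(2) k by auto
      obtain c where c: "zc D Y Z gs R' S' i c" using zmap_ok_ZmapD(2)[OF okg i(1)] by blast
      have e1: "Cmp D (zX Z ! i) (R'!i) = Cmp D (S'!k) (zX Y ! k)"
        using c unfolding zc_def hk hk2 by auto
      have Sk: "hom D (S'!k) (zS Y ! k) (zS Z ! i)" using zmt_hom(2)[OF tg k(1)] k by simp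
      have e2: "Cmp D (Cmp D (S'!k) (zX Y ! k)) (R ! k) = Cmp D (S'!k) (Cmp D (zX Y ! k) (R ! k))"
        using hom_assoc[OF D zmt_hom(1)[OF tf, of k] zig_hom(1)[OF gD(1) k(1)] Sk] k by simp
      have "Cmp D (S'!k) (Cmp D (zX Y ! k) (R ! k)) \<in> P"
        by (rule degdata_cmp_hom[OF P nf[OF k(1) kf] S'P[OF k(1)]
              hom_cmp[OF D zmt_hom(1)[OF tf, of k] zig_hom(1)[OF gD(1) k(1)]] Sk]) (use k in simp)
      then show ?thesis using e0 as e1 e2 hk by simp
    qed
  qed
  have "Dg D P (Zmap X Z (map (\<lambda>j. gs!j) fs) (map (\<lambda>i. Cmp D (R'!i) (R ! hat gs i)) [0..<Suc (zlen Z)])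
            (map (\<lambda>j. Cmp D (S' ! (fs!j)) (S!j)) [0..<zlen X]))"
    unfolding Dg_Zmap using ok dist RC SC NC by blast
  then show ?thesis using Zcat_cmp_eq[OF okf okg] by simp
qed

lemma Dg_monic:
  assumes P: "degdata D P" and f: "Dg D P (Zmap X Y fs R S)"
  shows "monic (Zcat D) (Zmap X Y fs R S)"
proof -
  note D = degdataD(1)[OF P]
  have okf: "zmap_ok D (Zmap X Y fs R S)" and df: "distinct fs" and Rf: "set R \<subseteq> P" and Sf: "set S \<subseteq> P"
    using f unfolding Dg_Zmap by auto
  note tf = zmap_ok_ZmapD(1)[OF okf]
  note fD = zmtD[OF tf]
  have RP: "R ! i \<in> P" if "i \<le> zlen Y" for i using Rf that fD(6) by (simp add: subset_iff)
  have SP: "S ! j \<in> P" if "j < zlen X" for j using Sf that fD(7) by (simp add: subset_iff)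
  have main: "a = b" if oka: "zmap_ok D (Zmap W X as Ra Sa)" and okb: "zmap_ok D (Zmap W X bs Rb Sb)"
    and e: "Cmp (Zcat D) (Zmap X Y fs R S) (Zmap W X as Ra Sa) = Cmp (Zcat D) (Zmap X Y fs R S) (Zmap W X bs Rb Sb)"
    and ea: "a = Zmap W X as Ra Sa" and eb: "b = Zmap W X bs Rb Sb" for a b W as Ra Sa bs Rb Sb
  proof -
    note ta = zmap_ok_ZmapD(1)[OF oka] and tb = zmap_ok_ZmapD(1)[OF okb]
    note aD = zmtD[OF ta] and bD = zmtD[OF tb]
    have e1: "map (\<lambda>j. fs!j) as = map (\<lambda>j. fs!j) bs"
      and e2: "map (\<lambda>i. Cmp D (R!i) (Ra ! hat fs i)) [0..<Suc (zlen Y)] = map (\<lambda>i. Cmp D (R!i) (Rb ! hat fs i)) [0..<Suc (zlen Y)]"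
      and e3: "map (\<lambda>j. Cmp D (S ! (as!j)) (Sa!j)) [0..<zlen W] = map (\<lambda>j. Cmp D (S ! (bs!j)) (Sb!j)) [0..<zlen W]"
      using e unfolding Zcat_cmp_eq[OF oka okf] Zcat_cmp_eq[OF okb okf] by simp_all
    have asbs: "as = bs"
    proof (rule nth_equalityI)
      show "length as = length bs" using aD bD by simp
      fix j assume j: "j < length as"
      have "fs ! (as ! j) = fs ! (bs ! j)" using e1 j aD bD
        by (metis length_map nth_map)
      then show "as ! j = bs ! j" using df aD(3,4) bD(3,4) j fD(3)
        by (simp add: nth_eq_iff_index_eq)
    qed
    have SaSb: "Sa = Sb"
    proof (rule nth_equalityI)
      show "length Sa = length Sb" using aD bD by simp
      fix j assume j: "j < length Sa"
      then have jW: "j < zlen W" using aD by simp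
      have aj: "as ! j < zlen X" using aD jW by simp
      have "Cmp D (S ! (as!j)) (Sa!j) = Cmp D (S ! (as!j)) (Sb!j)"
        using fun_cong[OF arg_cong[where f="(!)", OF e3], of j] jW asbs by simp
      moreover note ha = zmt_hom(2)[OF ta jW] and hb = zmt_hom(2)[OF tb jW]
      ultimately show "Sa ! j = Sb ! j"
        using monicD[OF degdataD(3)[OF P SP[OF aj]]] zmt_hom(2)[OF tf aj] asbs unfolding hom_def by metis
    qed
    have RaRb: "Ra = Rb"
    proof (rule nth_equalityI)
      show "length Ra = length Rb" using aD bD by simp
      fix k assume k: "k < length Ra"
      then have kX: "k \<le> zlen X" using aD by simp
      obtain i where i: "i \<le> zlen Y" "hat fs i = k"
        using hat_sec[OF fD(5) df, of "zlen Y" k] fD(3,4) kX by auto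
      have "Cmp D (R!i) (Ra ! k) = Cmp D (R!i) (Rb ! k)"
        using fun_cong[OF arg_cong[where f="(!)", OF e2], of i] i
        by (simp add: nth_map_upt less_Suc_eq_le del: upt_Suc)
      moreover note ha = zmt_hom(1)[OF ta kX] and hb = zmt_hom(1)[OF tb kX]
      ultimately show "Ra ! k = Rb ! k"
        using monicD[OF degdataD(3)[OF P RP[OF i(1)]]] zmt_hom(1)[OF tf i(1)] asbs i(2) unfolding hom_def by metis
    qed
    show "a = b" using ea eb asbs SaSb RaRb by simp
  qed
  show ?thesis unfolding monic_def
  proof (intro conjI ballI impI)
    show "Zmap X Y fs R S \<in> Ar (Zcat D)" using okf by simp
    fix a b assume a: "a \<in> Ar (Zcat D)" and b: "b \<in> Ar (Zcat D)"
      and ca: "Cod (Zcat D) a = Dom (Zcat D) (Zmap X Y fs R S)" and cb: "Cod (Zcat D) b = Dom (Zcat D) (Zmap X Y fs R S)"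
      and dab: "Dom (Zcat D) a = Dom (Zcat D) b"
      and e: "Cmp (Zcat D) (Zmap X Y fs R S) a = Cmp (Zcat D) (Zmap X Y fs R S) b"
    have "zmap_ok D a" "zmap_ok D b" using a b by simp_all
    obtain W1 X1 as Ra Sa where ea: "a = Zmap W1 X1 as Ra Sa" and oka: "zmap_ok D (Zmap W1 X1 as Ra Sa)"
      by (rule zmap_ok_split[OF \<open>zmap_ok D a\<close>])
    obtain W2 X2 bs Rb Sb where eb: "b = Zmap W2 X2 bs Rb Sb" and okb: "zmap_ok D (Zmap W2 X2 bs Rb Sb)"
      by (rule zmap_ok_split[OF \<open>zmap_ok D b\<close>])
    have "X1 = X" "X2 = X" "W2 = W1" using ca cb dab ea eb by simp_all
    then show "a = b" using main[of W1 as Ra Sa bs Rb Sb a b] oka okb e ea eb by simp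
  qed
qed

lemma sorted_distinct_upt:
  assumes "sorted fs" "distinct fs" "length fs = n" "\<forall>j<n. fs ! j < n"
  shows "fs = [0..<n]"
proof -
  have "set fs \<subseteq> {0..<n}" using assms by (auto simp: in_set_conv_nth)
  moreover have "card (set fs) = n" using assms distinct_card by blast
  ultimately have "set fs = {0..<n}" by (simp add: card_subset_eq)
  then show ?thesis using assms sorted_distinct_set_unique[of fs "[0..<n]"] by simp
qed

lemma inj_len_le:
  assumes "map (\<lambda>j. gs!j) fs = [0..<length fs]" "\<forall>j<length fs. fs ! j < m"
  shows "distinct fs" "length fs \<le> m"
proof -
  show d: "distinct fs"
  proof (subst distinct_conv_nth, intro allI impI)
    fix i j assume "i < length fs" "j < length fs" "i \<noteq> j"
    then show "fs ! i \<noteq> fs ! j" using assms(1)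
      by (metis length_map nth_map nth_upt plus_nat.add_0)
  qed
  have "set fs \<subseteq> {0..<m}" using assms(2) by (auto simp: in_set_conv_nth)
  then have "card (set fs) \<le> m" using card_mono[of "{0..<m}" "set fs"] by simp
  then show "length fs \<le> m" using distinct_card[OF d] by simp
qed

lemma iso_parallel:
  assumes P: "degdata D P" and iso: "isoC (Zcat D) f"
  shows "f \<in> parallel_deg D P"
proof -
  note D = degdataD(1)[OF P]
  obtain g where ga: "g \<in> Ar (Zcat D)" and dg: "Dom (Zcat D) g = Cod (Zcat D) f" and cg: "Cod (Zcat D) g = Dom (Zcat D) f"
    and gf: "Cmp (Zcat D) g f = Idn (Zcat D) (Dom (Zcat D) f)" and fg: "Cmp (Zcat D) f g = Idn (Zcat D) (Cod (Zcat D) f)"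
    and fa: "f \<in> Ar (Zcat D)"
    using iso unfolding isoC_def by blast
  have "zmap_ok D f" "zmap_ok D g" using fa ga by simp_all
  obtain X Y fs R S where ef: "f = Zmap X Y fs R S" and okf: "zmap_ok D (Zmap X Y fs R S)"
    by (rule zmap_ok_split[OF \<open>zmap_ok D f\<close>])
  obtain Y1 X1 gs R' S' where eg: "g = Zmap Y1 X1 gs R' S'" and okg0: "zmap_ok D (Zmap Y1 X1 gs R' S')"
    by (rule zmap_ok_split[OF \<open>zmap_ok D g\<close>])
  have YX: "Y1 = Y" "X1 = X" using dg cg ef eg by simp_all
  note okg = okg0[unfolded YX]
  note tf = zmap_ok_ZmapD(1)[OF okf] and tg = zmap_ok_ZmapD(1)[OF okg]
  note fD = zmtD[OF tf] and gD = zmtD[OF tg]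
  have gf': "Zmap X X (map (\<lambda>j. gs!j) fs) (map (\<lambda>i. Cmp D (R'!i) (R ! hat gs i)) [0..<Suc (zlen X)])
            (map (\<lambda>j. Cmp D (S' ! (fs!j)) (S!j)) [0..<zlen X]) = Zmap X X [0..<zlen X] (map (Idn D) (zR X)) (map (Idn D) (zS X))"
    using gf unfolding ef eg YX Zcat_cmp_eq[OF okf okg] by simp
  have fg': "Zmap Y Y (map (\<lambda>j. fs!j) gs) (map (\<lambda>i. Cmp D (R!i) (R' ! hat fs i)) [0..<Suc (zlen Y)])
            (map (\<lambda>j. Cmp D (S ! (gs!j)) (S'!j)) [0..<zlen Y]) = Zmap Y Y [0..<zlen Y] (map (Idn D) (zR Y)) (map (Idn D) (zS Y))"
    using fg unfolding ef eg YX Zcat_cmp_eq[OF okg okf] by simp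
  have m1: "map (\<lambda>j. gs!j) fs = [0..<length fs]" using gf' fD(3) by simp
  have m2: "map (\<lambda>j. fs!j) gs = [0..<length gs]" using fg' gD(3) by simp
  have "length fs \<le> zlen Y" using inj_len_le(2)[OF m1] fD(3,4) by simp
  moreover have "length gs \<le> zlen X" using inj_len_le(2)[OF m2] gD(3,4) by simp
  ultimately have nm: "zlen Y = zlen X" using fD(3) gD(3) by simp
  have fsu: "fs = [0..<zlen X]"
    by (rule sorted_distinct_upt) (use fD inj_len_le(1)[OF m1] nm in auto)
  have gsu: "gs = [0..<zlen X]"
    by (rule sorted_distinct_upt) (use gD inj_len_le(1)[OF m2] nm in auto)
  have Riso: "isoC D (R ! i)" if i: "i \<le> zlen X" for i
  proof -
    have a: "Cmp D (R'!i) (R!i) = Idn D (zR X ! i)"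
      using arg_cong[where f="\<lambda>t. mR t ! i", OF gf'] i hat_upt[OF i] fsu gsu zig_okD(2)[OF fD(1)]
      by (simp add: nth_map_upt less_Suc_eq_le del: upt_Suc)
    have b: "Cmp D (R!i) (R'!i) = Idn D (zR Y ! i)"
      using arg_cong[where f="\<lambda>t. mR t ! i", OF fg'] i hat_upt[OF i] fsu gsu nm zig_okD(2)[OF fD(2)]
      by (simp add: nth_map_upt less_Suc_eq_le del: upt_Suc)
    have h1: "hom D (R!i) (zR X ! i) (zR Y ! i)" using zmt_hom(1)[OF tf, of i] i nm hat_upt[OF i] fsu by simp
    have h2: "hom D (R'!i) (zR Y ! i) (zR X ! i)" using zmt_hom(1)[OF tg, of i] i nm hat_upt[OF i] gsu by simp
    show ?thesis by (rule isoI[where g="R'!i"]) (use h1 h2 a b in \<open>auto simp: hom_def\<close>)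
  qed
  have Siso: "isoC D (S ! j)" if j: "j < zlen X" for j
  proof -
    have a: "Cmp D (S'!j) (S!j) = Idn D (zS X ! j)"
      using arg_cong[where f="\<lambda>t. mSl t ! j", OF gf'] j fsu by (simp add: zlen_def)
    have b: "Cmp D (S!j) (S'!j) = Idn D (zS Y ! j)"
      using arg_cong[where f="\<lambda>t. mSl t ! j", OF fg'] j gsu nm by (simp add: zlen_def)
    have h1: "hom D (S!j) (zS X ! j) (zS Y ! j)" using zmt_hom(2)[OF tf j] j fsu by simp
    have h2: "hom D (S'!j) (zS Y ! j) (zS X ! j)" using zmt_hom(2)[OF tg, of j] j nm gsu by simp
    show ?thesis by (rule isoI[where g="S'!j"]) (use h1 h2 a b in \<open>auto simp: hom_def\<close>)
  qed
  have "set R \<subseteq> P"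
  proof
    fix r assume "r \<in> set R"
    then obtain i where "i < length R" "r = R ! i" by (auto simp: in_set_conv_nth)
    then show "r \<in> P" using Riso[of i] degdataD(4)[OF P] fD(6) nm by simp
  qed
  moreover have "set S \<subseteq> P"
  proof
    fix r assume "r \<in> set S"
    then obtain j where "j < length S" "r = S ! j" by (auto simp: in_set_conv_nth)
    then show "r \<in> P" using Siso[of j] degdataD(4)[OF P] fD(7) by simp
  qed
  ultimately show ?thesis unfolding parallel_deg_def using ef okf fsu nm by simp
qed

definition cinv :: "'u cat \<Rightarrow> 'u \<Rightarrow> 'u" where
  "cinv D f = (SOME g. g \<in> Ar D \<and> Dom D g = Cod D f \<and> Cod D g = Dom D f \<and>
      Cmp D g f = Idn D (Dom D f) \<and> Cmp D f g = Idn D (Cod D f))"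

lemma inv_props:
  assumes "isoC D f" "hom D f a b"
  shows "hom D (cinv D f) b a" "Cmp D (cinv D f) f = Idn D a" "Cmp D f (cinv D f) = Idn D b" "isoC D (cinv D f)"
proof -
  have ex: "\<exists>g. g \<in> Ar D \<and> Dom D g = Cod D f \<and> Cod D g = Dom D f \<and>
      Cmp D g f = Idn D (Dom D f) \<and> Cmp D f g = Idn D (Cod D f)" using assms(1) unfolding isoC_def by blast
  have i: "cinv D f \<in> Ar D \<and> Dom D (cinv D f) = Cod D f \<and> Cod D (cinv D f) = Dom D f \<and>
      Cmp D (cinv D f) f = Idn D (Dom D f) \<and> Cmp D f (cinv D f) = Idn D (Cod D f)"
    unfolding cinv_def by (rule someI_ex[OF ex])
  show "hom D (cinv D f) b a" "Cmp D (cinv D f) f = Idn D a" "Cmp D f (cinv D f) = Idn D b"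
    using i assms(2) unfolding hom_def by auto
  show "isoC D (cinv D f)" by (rule isoI[where g=f]) (use i assms(1) in \<open>auto simp: isoC_def\<close>)
qed

lemma iso_swap:
  assumes D: "is_cat D" and a: "isoC D a" "hom D a x x'" and b: "isoC D b" "hom D b y y'"
    and f: "hom D f x y" and g: "hom D g x' y'" and e: "Cmp D b f = Cmp D g a"
  shows "Cmp D (cinv D b) g = Cmp D f (cinv D a)"
proof -
  note ia = inv_props[OF a] and ib = inv_props[OF b]
  have "Cmp D (cinv D b) g = Cmp D (cinv D b) (Cmp D g (Cmp D a (cinv D a)))"
    using ia(3) hom_idr[OF D g] by simp
  also have "\<dots> = Cmp D (cinv D b) (Cmp D (Cmp D g a) (cinv D a))"
    using hom_assoc[OF D ia(1) a(2) g] by simp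
  also have "\<dots> = Cmp D (cinv D b) (Cmp D (Cmp D b f) (cinv D a))" using e by simp
  also have "\<dots> = Cmp D (cinv D b) (Cmp D b (Cmp D f (cinv D a)))"
    using hom_assoc[OF D ia(1) f b(2)] by simp
  also have "\<dots> = Cmp D (Cmp D (cinv D b) b) (Cmp D f (cinv D a))"
    using hom_assoc[OF D hom_cmp[OF D ia(1) f] b(2) ib(1)] by simp
  also have "\<dots> = Cmp D f (cinv D a)"
    using ib(2) hom_idl[OF D hom_cmp[OF D ia(1) f]] by simp
  finally show ?thesis .
qed

lemma map_upt_nth[simp]: "map (\<lambda>j. [0..<n] ! j) [0..<n] = [0..<n]"
  by (rule nth_equalityI) auto

lemma vert_iso:
  assumes D: "is_cat D" and ok: "zmap_ok D (Zmap X Y [0..<zlen X] R S)" and n: "zlen Y = zlen X"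
    and Ri: "\<And>i. i \<le> zlen X \<Longrightarrow> isoC D (R!i)" and Si: "\<And>j. j < zlen X \<Longrightarrow> isoC D (S!j)"
  shows "isoC (Zcat D) (Zmap X Y [0..<zlen X] R S)"
proof -
  note t = zmap_ok_ZmapD(1)[OF ok]
  note tD = zmtD[OF t]
  have Rh: "hom D (R!i) (zR X ! i) (zR Y ! i)" if "i \<le> zlen X" for i
    using zmt_hom(1)[OF t, of i] that n hat_upt[OF that] by simp
  have Sh: "hom D (S!j) (zS X ! j) (zS Y ! j)" if "j < zlen X" for j
    using zmt_hom(2)[OF t, of j] that by simp
  define R' where "R' = map (\<lambda>i. cinv D (R!i)) [0..<Suc (zlen X)]"
  define S' where "S' = map (\<lambda>j. cinv D (S!j)) [0..<zlen X]"
  have R'n: "R'!i = cinv D (R!i)" if "i \<le> zlen X" for i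
    unfolding R'_def using that by (subst nth_map_upt) auto
  have S'n: "S'!j = cinv D (S!j)" if "j < zlen X" for j
    unfolding S'_def using that by simp
  have R'h: "hom D (R'!i) (zR Y ! i) (zR X ! i)" if "i \<le> zlen X" for i
    using inv_props(1)[OF Ri[OF that] Rh[OF that]] R'n[OF that] by simp
  have S'h: "hom D (S'!j) (zS Y ! j) (zS X ! j)" if "j < zlen X" for j
    using inv_props(1)[OF Si[OF that] Sh[OF that]] S'n[OF that] by simp
  have okg: "zmap_ok D (Zmap Y X [0..<zlen Y] R' S')"
  proof (rule zmap_okI)
    show "zmt D Y X [0..<zlen Y] R' S'"
    proof (rule zmtI)
      fix i assume i: "i \<le> zlen X"
      show "R'!i \<in> Ar D \<and> Dom D (R'!i) = zR Y ! hat [0..<zlen Y] i \<and> Cod D (R'!i) = zR X ! i"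
        using R'h[OF i] hat_upt[of i "zlen Y"] i n unfolding hom_def by simp
    next
      fix j assume j: "j < zlen Y"
      show "S'!j \<in> Ar D \<and> Dom D (S'!j) = zS Y ! j \<and> Cod D (S'!j) = zS X ! ([0..<zlen Y] ! j)"
        using S'h[of j] j n unfolding hom_def by simp
    qed (use tD n in \<open>auto simp: R'_def S'_def\<close>)
  next
    fix i assume i: "i < zlen X"
    have i': "i < zlen Y" using i n by simp
    obtain c where c: "zc D X Y [0..<zlen X] R S i c" using zmap_ok_ZmapD(2)[OF ok i'] by blast
    have h0: "hat [0..<zlen X] i = i" "hat [0..<zlen X] (Suc i) = Suc i" using i by (simp_all add: hat_upt)
    have e1: "Cmp D (S!i) (zX X ! i) = Cmp D (zX Y ! i) (R!i)"
      using c unfolding zc_def h0 by auto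
    have e2: "Cmp D (S!i) (zY X ! i) = Cmp D (zY Y ! i) (R!Suc i)"
      using c unfolding zc_def h0 by auto
    have f1: "Cmp D (S'!i) (zX Y ! i) = Cmp D (zX X ! i) (R'!i)"
      using iso_swap[OF D Ri[of i] Rh[of i] Si[OF i] Sh[OF i] zig_hom(1)[OF tD(1) i] zig_hom(1)[OF tD(2) i'] e1]
        R'n[of i] S'n[OF i] i by simp
    have f2: "Cmp D (S'!i) (zY Y ! i) = Cmp D (zY X ! i) (R'!Suc i)"
      using iso_swap[OF D Ri[of "Suc i"] Rh[of "Suc i"] Si[OF i] Sh[OF i] zig_hom(2)[OF tD(1) i] zig_hom(2)[OF tD(2) i'] e2]
        R'n[of "Suc i"] S'n[OF i] i by simp
    define c' where "c' = (\<lambda>k. if k = i then Cmp D (zX X ! i) (R'!i) else Cmp D (zY X ! i) (R'!Suc i))"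
    have "zc D Y X [0..<zlen Y] R' S' i c'"
      unfolding zc_def n h0
    proof (intro conjI allI impI)
      fix j assume "i \<le> j \<and> j < Suc i"
      then have ji: "j = i" by simp
      show "Cmp D (S'!j) (zX Y ! j) = c' j" "Cmp D (S'!j) (zY Y ! j) = c' (Suc j)"
        using f1 f2 ji c'_def by simp_all
    qed (simp_all add: c'_def)
    then show "\<exists>c. zc D Y X [0..<zlen Y] R' S' i c" by blast
  qed
  have gf: "Cmp (Zcat D) (Zmap Y X [0..<zlen X] R' S') (Zmap X Y [0..<zlen X] R S) = Idn (Zcat D) X"
  proof -
    have "map (\<lambda>i. Cmp D (R'!i) (R ! hat [0..<zlen X] i)) [0..<Suc (zlen X)] = map (Idn D) (zR X)"
    proof (rule nth_equalityI)
      show "length (map (\<lambda>i. Cmp D (R'!i) (R ! hat [0..<zlen X] i)) [0..<Suc (zlen X)]) = length (map (Idn D) (zR X))"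
        using zig_okD(2)[OF tD(1)] by simp
      fix i assume "i < length (map (\<lambda>i. Cmp D (R'!i) (R ! hat [0..<zlen X] i)) [0..<Suc (zlen X)])"
      then have i: "i \<le> zlen X" by simp
      show "map (\<lambda>i. Cmp D (R'!i) (R ! hat [0..<zlen X] i)) [0..<Suc (zlen X)] ! i = map (Idn D) (zR X) ! i"
        using inv_props(2)[OF Ri[OF i] Rh[OF i]] R'n[OF i] hat_upt[OF i] i zig_okD(2)[OF tD(1)]
        by (simp add: nth_map_upt less_Suc_eq_le del: upt_Suc)
    qed
    moreover have "map (\<lambda>j. Cmp D (S'!([0..<zlen X] ! j)) (S!j)) [0..<zlen X] = map (Idn D) (zS X)"
    proof (rule nth_equalityI)
      fix j assume "j < length (map (\<lambda>j. Cmp D (S'!([0..<zlen X] ! j)) (S!j)) [0..<zlen X])"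
      then have j: "j < zlen X" by simp
      show "map (\<lambda>j. Cmp D (S'!([0..<zlen X] ! j)) (S!j)) [0..<zlen X] ! j = map (Idn D) (zS X) ! j"
        using inv_props(2)[OF Si[OF j] Sh[OF j]] S'n[OF j] j by (simp add: zlen_def)
    qed (simp add: zlen_def)
    ultimately show ?thesis
      using Zcat_cmp_eq[OF ok okg[unfolded n]] n by (simp add: map_nth)
  qed
  have fg: "Cmp (Zcat D) (Zmap X Y [0..<zlen X] R S) (Zmap Y X [0..<zlen X] R' S') = Idn (Zcat D) Y"
  proof -
    have "map (\<lambda>i. Cmp D (R!i) (R' ! hat [0..<zlen X] i)) [0..<Suc (zlen Y)] = map (Idn D) (zR Y)"
    proof (rule nth_equalityI)
      show "length (map (\<lambda>i. Cmp D (R!i) (R' ! hat [0..<zlen X] i)) [0..<Suc (zlen Y)]) = length (map (Idn D) (zR Y))"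
        using zig_okD(2)[OF tD(2)] by simp
      fix i assume "i < length (map (\<lambda>i. Cmp D (R!i) (R' ! hat [0..<zlen X] i)) [0..<Suc (zlen Y)])"
      then have i: "i \<le> zlen X" using n by simp
      show "map (\<lambda>i. Cmp D (R!i) (R' ! hat [0..<zlen X] i)) [0..<Suc (zlen Y)] ! i = map (Idn D) (zR Y) ! i"
        using inv_props(3)[OF Ri[OF i] Rh[OF i]] R'n[OF i] hat_upt[OF i] i n zig_okD(2)[OF tD(2)]
        by (simp add: nth_map_upt less_Suc_eq_le del: upt_Suc)
    qed
    moreover have "map (\<lambda>j. Cmp D (S!([0..<zlen X] ! j)) (S'!j)) [0..<zlen X] = map (Idn D) (zS Y)"
    proof (rule nth_equalityI)
      fix j assume "j < length (map (\<lambda>j. Cmp D (S!([0..<zlen X] ! j)) (S'!j)) [0..<zlen X])"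
      then have j: "j < zlen X" by simp
      show "map (\<lambda>j. Cmp D (S!([0..<zlen X] ! j)) (S'!j)) [0..<zlen X] ! j = map (Idn D) (zS Y) ! j"
        using inv_props(3)[OF Si[OF j] Sh[OF j]] S'n[OF j] j n by (simp add: zlen_def)
    qed (use n in \<open>simp add: zlen_def\<close>)
    ultimately show ?thesis
      using Zcat_cmp_eq[OF okg[unfolded n] ok] n by (simp add: map_nth)
  qed
  show ?thesis
    by (rule isoI[where g="Zmap Y X [0..<zlen X] R' S'"]) (use ok okg n gf fg in simp_all)
qed

lemma hat_nonimage:
  assumes "sorted fs" "t \<notin> set fs" shows "hat fs (Suc t) = hat fs t"
proof (rule hat_eqI[OF assms(1)])
  fix j show "j < hat fs t \<longleftrightarrow> j < length fs \<and> fs ! j < Suc t"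
    using hat_lt_iff[OF assms(1), of j t] assms(2) by (auto simp: less_Suc_eq nth_mem)
qed

lemma hat_image_ne:
  assumes "sorted fs" "distinct fs" "hat fs (Suc t) = hat fs t" shows "t \<notin> set fs"
proof
  assume "t \<in> set fs"
  then obtain j where "j < length fs" "fs ! j = t" by (auto simp: in_set_conv_nth)
  then show False using hat_at[OF assms(1,2)] hat_at_Suc[OF assms(1,2)] assms(3) by force
qed

lemma Dg_unique:
  assumes P: "degdata D P" and f: "Dg D P (Zmap X T fs R S)" and g: "Dg D P (Zmap Y T gs R' S')"
    and tt: "to_terminal (Zmap X T fs R S) = to_terminal (Zmap Y T gs R' S')"
  shows "\<exists>\<phi>. isoC (Zcat D) \<phi> \<and> mdom \<phi> = X \<and> mcod \<phi> = Y \<and> Zmap X T fs R S = Cmp (Zcat D) (Zmap Y T gs R' S') \<phi>"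
proof -
  note D = degdataD(1)[OF P]
  have okf: "zmap_ok D (Zmap X T fs R S)" and df: "distinct fs" and Rf: "set R \<subseteq> P" and Sf: "set S \<subseteq> P"
    and nf: "\<And>i. i < zlen T \<Longrightarrow> i \<notin> set fs \<Longrightarrow> Cmp D (zX T ! i) (R ! i) \<in> P"
    using f unfolding Dg_Zmap by auto
  have okg: "zmap_ok D (Zmap Y T gs R' S')" and dg: "distinct gs" and Rg: "set R' \<subseteq> P" and Sg: "set S' \<subseteq> P"
    and ng: "\<And>i. i < zlen T \<Longrightarrow> i \<notin> set gs \<Longrightarrow> Cmp D (zX T ! i) (R' ! i) \<in> P"
    using g unfolding Dg_Zmap by auto
  note tf = zmap_ok_ZmapD(1)[OF okf] and tg = zmap_ok_ZmapD(1)[OF okg]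
  note fD = zmtD[OF tf] and gD = zmtD[OF tg]
  have fsgs: "fs = gs" and ttR: "map to_terminal R = map to_terminal R'" and ttS: "map to_terminal S = map to_terminal S'"
    using tt by (simp_all add: to_terminal_def)
  define n where "n = zlen X"
  define m where "m = zlen T"
  have nY: "zlen Y = n" using fD(3) gD(3) fsgs n_def by simp
  have RP: "R ! i \<in> P" "R' ! i \<in> P" if "i \<le> m" for i using Rf Rg that fD(6) gD(6) m_def by (auto simp: subset_iff)
  have SP: "S ! j \<in> P" "S' ! j \<in> P" if "j < n" for j using Sf Sg that fD(7) gD(7) n_def nY by (auto simp: subset_iff)
  have ttRi: "to_terminal (R!i) = to_terminal (R'!i)" if "i \<le> m" for i
    using arg_cong[where f="\<lambda>l. l ! i", OF ttR] that fD(6) gD(6) m_def by simp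
  have ttSj: "to_terminal (S!j) = to_terminal (S'!j)" if "j < n" for j
    using arg_cong[where f="\<lambda>l. l ! j", OF ttS] that fD(7) gD(7) n_def nY by simp
  have Rh: "hom D (R!i) (zR X ! hat fs i) (zR T ! i)" "hom D (R'!i) (zR Y ! hat fs i) (zR T ! i)" if "i \<le> m" for i
    using zmt_hom(1)[OF tf, of i] zmt_hom(1)[OF tg, of i] that fsgs m_def by auto
  have Sh: "hom D (S!j) (zS X ! j) (zS T ! (fs!j))" "hom D (S'!j) (zS Y ! j) (zS T ! (fs!j))" if "j < n" for j
    using zmt_hom(2)[OF tf, of j] zmt_hom(2)[OF tg, of j] that fsgs n_def nY by auto
  have "\<forall>j. \<exists>s. j < n \<longrightarrow> isoC D s \<and> Dom D s = Dom D (S!j) \<and> Cod D s = Dom D (S'!j) \<and> S!j = Cmp D (S'!j) s"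
  proof (intro allI)
    fix j show "\<exists>s. j < n \<longrightarrow> isoC D s \<and> Dom D s = Dom D (S!j) \<and> Cod D s = Dom D (S'!j) \<and> S!j = Cmp D (S'!j) s"
    proof (cases "j < n")
      case True
      then show ?thesis using degdataD(6)[OF P SP(1)[OF True] SP(2)[OF True] _ ttSj[OF True]] Sh[OF True]
        unfolding hom_def by auto
    qed simp
  qed
  then obtain \<sigma> where \<sigma>: "\<And>j. j < n \<Longrightarrow> isoC D (\<sigma> j) \<and> Dom D (\<sigma> j) = Dom D (S!j) \<and> Cod D (\<sigma> j) = Dom D (S'!j) \<and> S!j = Cmp D (S'!j) (\<sigma> j)"
    by metis
  have "\<forall>i. \<exists>r. i \<le> m \<longrightarrow> isoC D r \<and> Dom D r = Dom D (R!i) \<and> Cod D r = Dom D (R'!i) \<and> R!i = Cmp D (R'!i) r"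
  proof (intro allI)
    fix i show "\<exists>r. i \<le> m \<longrightarrow> isoC D r \<and> Dom D r = Dom D (R!i) \<and> Cod D r = Dom D (R'!i) \<and> R!i = Cmp D (R'!i) r"
    proof (cases "i \<le> m")
      case True
      then show ?thesis using degdataD(6)[OF P RP(1)[OF True] RP(2)[OF True] _ ttRi[OF True]] Rh[OF True]
        unfolding hom_def by auto
    qed simp
  qed
  then obtain \<rho>' where \<rho>': "\<And>i. i \<le> m \<Longrightarrow> isoC D (\<rho>' i) \<and> Dom D (\<rho>' i) = Dom D (R!i) \<and> Cod D (\<rho>' i) = Dom D (R'!i) \<and> R!i = Cmp D (R'!i) (\<rho>' i)"
    by metis
  have \<sigma>h: "hom D (\<sigma> j) (zS X ! j) (zS Y ! j)" if "j < n" for j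
    using \<sigma>[OF that] Sh[OF that] unfolding hom_def isoC_def by auto
  have \<rho>'h: "hom D (\<rho>' i) (zR X ! hat fs i) (zR Y ! hat fs i)" if "i \<le> m" for i
    using \<rho>'[OF that] Rh[OF that] unfolding hom_def isoC_def by auto
  have step: "\<rho>' t = \<rho>' (Suc t)" if t: "t < m" "t \<notin> set fs" for t
  proof -
    have hs: "hat fs (Suc t) = hat fs t" by (rule hat_nonimage[OF fD(5) t(2)])
    define k where "k = hat fs t"
    obtain cf where cf: "zc D X T fs R S t cf" using zmap_ok_ZmapD(2)[OF okf] t m_def by blast
    obtain cg where cg: "zc D Y T gs R' S' t cg" using zmap_ok_ZmapD(2)[OF okg] t m_def by blast
    have e1: "Cmp D (zX T ! t) (R!t) = Cmp D (zY T ! t) (R!Suc t)" using cf unfolding zc_def hs by metis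
    have e2: "Cmp D (zX T ! t) (R'!t) = Cmp D (zY T ! t) (R'!Suc t)" using cg unfolding zc_def hs fsgs[symmetric] by metis
    have tm: "t < zlen T" using t m_def by simp
    have M: "monic D (Cmp D (zX T ! t) (R'!t))" using degdataD(3)[OF P ng[OF tm]] t fsgs by simp
    have hx: "hom D (zX T ! t) (zR T ! t) (zS T ! t)" by (rule zig_hom(1)[OF fD(2) tm])
    have hy: "hom D (zY T ! t) (zR T ! Suc t) (zS T ! t)" by (rule zig_hom(2)[OF fD(2) tm])
    have a1: "Cmp D (Cmp D (zX T ! t) (R'!t)) (\<rho>' t) = Cmp D (zX T ! t) (R!t)"
      using hom_assoc[OF D \<rho>'h[of t] Rh(2)[of t] hx] \<rho>'[of t] t by simp
    have a2: "Cmp D (Cmp D (zX T ! t) (R'!t)) (\<rho>' (Suc t)) = Cmp D (zX T ! t) (R!t)"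
      using hom_assoc[OF D \<rho>'h[of "Suc t"] Rh(2)[of "Suc t"] hy] \<rho>'[of "Suc t"] t e1 e2 by simp
    show ?thesis
      by (rule monicD[OF M]) (use a1 a2 \<rho>'h[of t] \<rho>'h[of "Suc t"] hs hom_cmp[OF D Rh(2)[of t] hx] t in \<open>simp_all add: hom_def\<close>)
  qed
  have chain: "\<forall>a. a + d \<le> m \<longrightarrow> hat fs a = hat fs (a + d) \<longrightarrow> \<rho>' a = \<rho>' (a + d)" for d
  proof (induction d)
    case (Suc d)
    show ?case
    proof (intro allI impI)
      fix a assume a: "a + Suc d \<le> m" "hat fs a = hat fs (a + Suc d)"
      have m1: "hat fs a \<le> hat fs (a + d)" by (rule hat_mono) (use fD in auto)
      have m2: "hat fs (a + d) \<le> hat fs (a + Suc d)" by (rule hat_mono) (use fD in auto)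
      have h1: "hat fs a = hat fs (a + d)" and h2: "hat fs (Suc (a + d)) = hat fs (a + d)" using m1 m2 a by simp_all
      have "a + d \<notin> set fs" by (rule hat_image_ne[OF fD(5) df h2])
      then have "\<rho>' (a + d) = \<rho>' (Suc (a + d))" using step[of "a + d"] a by simp
      then show "\<rho>' a = \<rho>' (a + Suc d)" using Suc.IH a h1 by simp
    qed
  qed simp
  define \<rho> where "\<rho> = (\<lambda>k. \<rho>' (SOME i. i \<le> m \<and> hat fs i = k))"
  have \<rho>sec: "(SOME i. i \<le> m \<and> hat fs i = k) \<le> m \<and> hat fs (SOME i. i \<le> m \<and> hat fs i = k) = k" if "k \<le> n" for k
    by (rule someI_ex) (use hat_sec[OF fD(5) df, of m k] fD(3,4) that m_def n_def in auto)
  have Rall: "\<rho>' i = \<rho> (hat fs i)" if i: "i \<le> m" for i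
  proof -
    have hn: "hat fs i \<le> n" using hat_le_len[of fs i] fD(3) n_def by simp
    define i0 where "i0 = (SOME i'. i' \<le> m \<and> hat fs i' = hat fs i)"
    have i0: "i0 \<le> m" "hat fs i0 = hat fs i" using \<rho>sec[OF hn] i0_def by auto
    have "\<rho>' i = \<rho>' i0"
    proof (cases "i \<le> i0")
      case True then show ?thesis using chain[of "i0 - i"] i0 by simp
    next
      case False then show ?thesis using chain[of "i - i0"] i0 i by simp
    qed
    then show ?thesis unfolding \<rho>_def i0_def by simp
  qed
  have \<rho>h: "hom D (\<rho> k) (zR X ! k) (zR Y ! k)" "isoC D (\<rho> k)" if "k \<le> n" for k
    using \<rho>'h[of "SOME i. i \<le> m \<and> hat fs i = k"] \<rho>'[of "SOME i. i \<le> m \<and> hat fs i = k"] \<rho>sec[OF that]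
    unfolding \<rho>_def by auto
  have Req: "R!i = Cmp D (R'!i) (\<rho> (hat fs i))" if "i \<le> m" for i
    using \<rho>'[OF that] Rall[OF that] by simp
  define \<phi> where "\<phi> = Zmap X Y [0..<n] (map \<rho> [0..<Suc n]) (map \<sigma> [0..<n])"
  have \<rho>n: "map \<rho> [0..<Suc n] ! k = \<rho> k" if "k \<le> n" for k using that by (subst nth_map_upt) auto
  have ok\<phi>: "zmap_ok D \<phi>" unfolding \<phi>_def
  proof (rule zmap_okI)
    show "zmt D X Y [0..<n] (map \<rho> [0..<Suc n]) (map \<sigma> [0..<n])"
    proof (rule zmtI)
      fix i assume i: "i \<le> zlen Y"
      then show "map \<rho> [0..<Suc n] ! i \<in> Ar D \<and> Dom D (map \<rho> [0..<Suc n] ! i) = zR X ! hat [0..<n] i \<and>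
         Cod D (map \<rho> [0..<Suc n] ! i) = zR Y ! i"
        using \<rho>h(1)[of i] \<rho>n[of i] nY hat_upt[of i n] unfolding hom_def by simp
    next
      fix j assume j: "j < zlen X"
      then show "map \<sigma> [0..<n] ! j \<in> Ar D \<and> Dom D (map \<sigma> [0..<n] ! j) = zS X ! j \<and> Cod D (map \<sigma> [0..<n] ! j) = zS Y ! ([0..<n] ! j)"
        using \<sigma>h[of j] n_def unfolding hom_def by simp
    qed (use fD gD nY n_def in auto)
  next
    fix i assume i: "i < zlen Y"
    then have iN: "i < n" using nY by simp
    define t where "t = fs ! i"
    have tm: "t < m" "t < zlen T" using fD(4)[of i] iN n_def m_def t_def by auto
    have ht: "hat fs t = i" "hat fs (Suc t) = Suc i"
      using hat_at[OF fD(5) df, of i] hat_at_Suc[OF fD(5) df, of i] iN fD(3) n_def t_def by auto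
    obtain cf where cf: "zc D X T fs R S t cf" using zmap_ok_ZmapD(2)[OF okf tm(2)] by blast
    obtain cg where cg: "zc D Y T gs R' S' t cg" using zmap_ok_ZmapD(2)[OF okg tm(2)] by blast
    have f1: "Cmp D (S!i) (zX X ! i) = Cmp D (zX T ! t) (R!t)"
      "Cmp D (S!i) (zY X ! i) = Cmp D (zY T ! t) (R!Suc t)"
      using cf unfolding zc_def ht by auto
    have g1: "Cmp D (S'!i) (zX Y ! i) = Cmp D (zX T ! t) (R'!t)"
      "Cmp D (S'!i) (zY Y ! i) = Cmp D (zY T ! t) (R'!Suc t)"
      using cg unfolding zc_def fsgs[symmetric] ht by auto
    have M: "monic D (S'!i)" using degdataD(3)[OF P SP(2)[OF iN]] .
    have S'h: "hom D (S'!i) (zS Y ! i) (zS T ! t)" using Sh(2)[OF iN] t_def by simp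
    have Sih: "hom D (S!i) (zS X ! i) (zS T ! t)" using Sh(1)[OF iN] t_def by simp
    have hxX: "hom D (zX X ! i) (zR X ! i) (zS X ! i)" using zig_hom(1)[OF fD(1)] iN n_def by simp
    have hyX: "hom D (zY X ! i) (zR X ! Suc i) (zS X ! i)" using zig_hom(2)[OF fD(1)] iN n_def by simp
    have hxY: "hom D (zX Y ! i) (zR Y ! i) (zS Y ! i)" using zig_hom(1)[OF gD(1)] i by simp
    have hyY: "hom D (zY Y ! i) (zR Y ! Suc i) (zS Y ! i)" using zig_hom(2)[OF gD(1)] i by simp
    have hxT: "hom D (zX T ! t) (zR T ! t) (zS T ! t)" using zig_hom(1)[OF fD(2) tm(2)] .
    have hyT: "hom D (zY T ! t) (zR T ! Suc t) (zS T ! t)" using zig_hom(2)[OF fD(2) tm(2)] .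
    have R't: "hom D (R'!t) (zR Y ! i) (zR T ! t)" using Rh(2)[of t] tm ht by simp
    have R'St: "hom D (R'!Suc t) (zR Y ! Suc i) (zR T ! Suc t)" using Rh(2)[of "Suc t"] tm ht by simp
    have \<rho>i: "hom D (\<rho> i) (zR X ! i) (zR Y ! i)" using \<rho>h(1)[of i] iN by simp
    have \<rho>Si: "hom D (\<rho> (Suc i)) (zR X ! Suc i) (zR Y ! Suc i)" using \<rho>h(1)[of "Suc i"] iN by simp
    have Si: "S!i = Cmp D (S'!i) (\<sigma> i)" using \<sigma>[OF iN] by simp
    have \<sigma>i: "hom D (\<sigma> i) (zS X ! i) (zS Y ! i)" using \<sigma>h[OF iN] .
    have sq1: "Cmp D (\<sigma> i) (zX X ! i) = Cmp D (zX Y ! i) (\<rho> i)"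
    proof (rule monicD[OF M])
      have "Cmp D (S'!i) (Cmp D (\<sigma> i) (zX X ! i)) = Cmp D (S!i) (zX X ! i)"
        using hom_assoc[OF D hxX \<sigma>i S'h] Si by simp
      also have "\<dots> = Cmp D (zX T ! t) (R!t)" by (rule f1(1))
      also have "\<dots> = Cmp D (zX T ! t) (Cmp D (R'!t) (\<rho> i))" using Req[of t] tm ht by simp
      also have "\<dots> = Cmp D (Cmp D (zX T ! t) (R'!t)) (\<rho> i)" using hom_assoc[OF D \<rho>i R't hxT] by simp
      also have "\<dots> = Cmp D (Cmp D (S'!i) (zX Y ! i)) (\<rho> i)" using g1(1) by simp
      also have "\<dots> = Cmp D (S'!i) (Cmp D (zX Y ! i) (\<rho> i))" using hom_assoc[OF D \<rho>i hxY S'h] by simp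
      finally show "Cmp D (S'!i) (Cmp D (\<sigma> i) (zX X ! i)) = Cmp D (S'!i) (Cmp D (zX Y ! i) (\<rho> i))" .
    qed (use hom_cmp[OF D hxX \<sigma>i] hom_cmp[OF D \<rho>i hxY] S'h in \<open>simp_all add: hom_def\<close>)
    have sq2: "Cmp D (\<sigma> i) (zY X ! i) = Cmp D (zY Y ! i) (\<rho> (Suc i))"
    proof (rule monicD[OF M])
      have "Cmp D (S'!i) (Cmp D (\<sigma> i) (zY X ! i)) = Cmp D (S!i) (zY X ! i)"
        using hom_assoc[OF D hyX \<sigma>i S'h] Si by simp
      also have "\<dots> = Cmp D (zY T ! t) (R!Suc t)" by (rule f1(2))
      also have "\<dots> = Cmp D (zY T ! t) (Cmp D (R'!Suc t) (\<rho> (Suc i)))" using Req[of "Suc t"] tm ht by simp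
      also have "\<dots> = Cmp D (Cmp D (zY T ! t) (R'!Suc t)) (\<rho> (Suc i))" using hom_assoc[OF D \<rho>Si R'St hyT] by simp
      also have "\<dots> = Cmp D (Cmp D (S'!i) (zY Y ! i)) (\<rho> (Suc i))" using g1(2) by simp
      also have "\<dots> = Cmp D (S'!i) (Cmp D (zY Y ! i) (\<rho> (Suc i)))" using hom_assoc[OF D \<rho>Si hyY S'h] by simp
      finally show "Cmp D (S'!i) (Cmp D (\<sigma> i) (zY X ! i)) = Cmp D (S'!i) (Cmp D (zY Y ! i) (\<rho> (Suc i)))" .
    qed (use hom_cmp[OF D hyX \<sigma>i] hom_cmp[OF D \<rho>Si hyY] S'h in \<open>simp_all add: hom_def\<close>)
    define c where "c = (\<lambda>k. if k = i then Cmp D (zX Y ! i) (\<rho> i) else Cmp D (zY Y ! i) (\<rho> (Suc i)))"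
    have "zc D X Y [0..<n] (map \<rho> [0..<Suc n]) (map \<sigma> [0..<n]) i c"
      unfolding zc_def hat_upt[of i n, OF less_imp_le[OF iN]] hat_upt[of "Suc i" n, OF Suc_leI[OF iN]]
    proof (intro conjI allI impI)
      fix j assume "i \<le> j \<and> j < Suc i"
      then have ji: "j = i" by simp
      show "Cmp D (map \<sigma> [0..<n] ! j) (zX X ! j) = c j" "Cmp D (map \<sigma> [0..<n] ! j) (zY X ! j) = c (Suc j)"
        using sq1 sq2 ji iN c_def by simp_all
    qed (use \<rho>n[of i] \<rho>n[of "Suc i"] iN c_def in simp_all)
    then show "\<exists>c. zc D X Y [0..<n] (map \<rho> [0..<Suc n]) (map \<sigma> [0..<n]) i c" by blast
  qed
  have iso\<phi>: "isoC (Zcat D) \<phi>"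
    unfolding \<phi>_def n_def
  proof (rule vert_iso[OF D])
    show "zmap_ok D (Zmap X Y [0..<zlen X] (map \<rho> [0..<Suc (zlen X)]) (map \<sigma> [0..<zlen X]))"
      using ok\<phi> unfolding \<phi>_def n_def .
    show "zlen Y = zlen X" using nY n_def by simp
    fix i assume "i \<le> zlen X"
    then show "isoC D (map \<rho> [0..<Suc (zlen X)] ! i)" using \<rho>h(2)[of i] \<rho>n[of i] n_def by simp
  next
    fix j assume "j < zlen X"
    then show "isoC D (map \<sigma> [0..<zlen X] ! j)" using \<sigma>[of j] n_def by simp
  qed
  have eq: "Zmap X T fs R S = Cmp (Zcat D) (Zmap Y T gs R' S') \<phi>"
  proof -
    have c: "Cmp (Zcat D) (Zmap Y T gs R' S') \<phi> = Zmap X T (map (\<lambda>j. gs!j) [0..<n])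
        (map (\<lambda>i. Cmp D (R'!i) ((map \<rho> [0..<Suc n]) ! hat gs i)) [0..<Suc (zlen T)])
        (map (\<lambda>j. Cmp D (S' ! ([0..<n]!j)) ((map \<sigma> [0..<n])!j)) [0..<zlen X])"
      using Zcat_cmp_eq[OF ok\<phi>[unfolded \<phi>_def] okg[unfolded nY[symmetric]]] unfolding \<phi>_def by simp
    have e1: "map (\<lambda>j. gs!j) [0..<n] = fs" using fsgs gD(3) nY map_nth[of gs] by simp
    have e2: "map (\<lambda>i. Cmp D (R'!i) ((map \<rho> [0..<Suc n]) ! hat gs i)) [0..<Suc (zlen T)] = R"
    proof (rule nth_equalityI)
      show "length (map (\<lambda>i. Cmp D (R'!i) ((map \<rho> [0..<Suc n]) ! hat gs i)) [0..<Suc (zlen T)]) = length R"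
        using fD by simp
      fix i assume "i < length (map (\<lambda>i. Cmp D (R'!i) ((map \<rho> [0..<Suc n]) ! hat gs i)) [0..<Suc (zlen T)])"
      then have i: "i \<le> m" using m_def by simp
      have hn: "hat gs i \<le> n" using hat_le_len[of gs i] gD(3) nY by simp
      show "map (\<lambda>i. Cmp D (R'!i) ((map \<rho> [0..<Suc n]) ! hat gs i)) [0..<Suc (zlen T)] ! i = R ! i"
        using Req[OF i] \<rho>n[OF hn] i fsgs m_def by (simp add: nth_map_upt less_Suc_eq_le del: upt_Suc)
    qed
    have e3: "map (\<lambda>j. Cmp D (S' ! ([0..<n]!j)) ((map \<sigma> [0..<n])!j)) [0..<zlen X] = S"
    proof (rule nth_equalityI)
      fix j assume "j < length (map (\<lambda>j. Cmp D (S' ! ([0..<n]!j)) ((map \<sigma> [0..<n])!j)) [0..<zlen X])"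
      then have j: "j < n" using n_def by simp
      show "map (\<lambda>j. Cmp D (S' ! ([0..<n]!j)) ((map \<sigma> [0..<n])!j)) [0..<zlen X] ! j = S ! j"
        using \<sigma>[OF j] j n_def by simp
    qed (use fD in simp)
    show ?thesis unfolding c e1 e2 e3 ..
  qed
  show ?thesis using iso\<phi> eq \<phi>_def by auto
qed

lemma isoI_hom: "hom D f a b \<Longrightarrow> hom D g b a \<Longrightarrow> Cmp D g f = Idn D a \<Longrightarrow> Cmp D f g = Idn D b \<Longrightarrow> isoC D f"
  unfolding hom_def by (rule isoI[where g=g]) auto

lemma simple_Dg:
  assumes P: "degdata D P" and sd: "f \<in> simple_deg D"
  shows "Dg D P f"
proof -
  note D = degdataD(1)[OF P]
  note ZD = Zcat_is_cat[OF D]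
  note [simp del] = Zcat_simps(6)
  have cc: "cocartesian D f" and du: "distinct (mS f)" using sd unfolding simple_deg_def by auto
  have "zmap_ok D f" using cc unfolding cocartesian_def by simp
  then obtain X T u R S where ef: "f = Zmap X T u R S" and okf: "zmap_ok D (Zmap X T u R S)"
    by (rule zmap_ok_split)
  note tf = zmap_ok_ZmapD(1)[OF okf]
  note fD = zmtD[OF tf]
  have du: "distinct u" using du ef by simp
  note su = fD(5)
  define n where "n = zlen X"
  define m where "m = zlen T"
  have lu: "length u = n" using fD(3) n_def by simp
  have ub: "\<And>j. j < n \<Longrightarrow> u!j < m" using fD(4) n_def m_def by simp
  have hat_n: "hat u i \<le> n" for i using hat_le_len[of u i] lu by simp
  have himg: "hat u (u!j) = j" "hat u (Suc (u!j)) = Suc j" if "j < n" for j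
    using hat_at[OF su du, of j] hat_at_Suc[OF su du, of j] that lu by auto
  have hnon: "hat u (Suc i) = hat u i" if "i \<notin> set u" for i using hat_nonimage[OF su that] .
  have img: "\<exists>j<n. u!j = i" if "i \<in> set u" for i using that lu by (auto simp: in_set_conv_nth)
  note xX = zig_hom(1)[OF fD(1)] and yX = zig_hom(2)[OF fD(1)]
  note xT = zig_hom(1)[OF fD(2)] and yT = zig_hom(2)[OF fD(2)]
  have Rh: "hom D (R!i) (zR X ! hat u i) (zR T ! i)" if "i \<le> m" for i using zmt_hom(1)[OF tf] that m_def by simp
  have Sh: "hom D (S!j) (zS X ! j) (zS T ! (u!j))" if "j < n" for j using zmt_hom(2)[OF tf] that n_def by simp
  have obr: "zR X ! k \<in> Ob D" if "k \<le> n" for k using zig_ob_r[OF fD(1)] that n_def by simp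
  have obs: "zS X ! k \<in> Ob D" if "k < n" for k using zig_ob_s[OF fD(1)] that n_def by simp
  (* the canonical lift L *)
  define rsL where "rsL = map (\<lambda>i. zR X ! hat u i) [0..<Suc m]"
  define ssL where "ssL = map (\<lambda>i. if i \<in> set u then zS X ! hat u i else zR X ! hat u i) [0..<m]"
  define xsL where "xsL = map (\<lambda>i. if i \<in> set u then zX X ! hat u i else Idn D (zR X ! hat u i)) [0..<m]"
  define ysL where "ysL = map (\<lambda>i. if i \<in> set u then zY X ! hat u i else Idn D (zR X ! hat u i)) [0..<m]"
  define L where "L = Zig rsL ssL xsL ysL"
  have rsLn: "rsL ! i = zR X ! hat u i" if "i \<le> m" for i unfolding rsL_def using that by (subst nth_map_upt) auto
  have ssLn: "ssL ! i = (if i \<in> set u then zS X ! hat u i else zR X ! hat u i)" if "i < m" for i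
    unfolding ssL_def using that by simp
  have xsLn: "xsL ! i = (if i \<in> set u then zX X ! hat u i else Idn D (zR X ! hat u i))" if "i < m" for i
    unfolding xsL_def using that by simp
  have ysLn: "ysL ! i = (if i \<in> set u then zY X ! hat u i else Idn D (zR X ! hat u i))" if "i < m" for i
    unfolding ysL_def using that by simp
  have zlenL: "zlen L = m" unfolding L_def zlen_def ssL_def by simp
  have LzR: "zR L = rsL" "zS L = ssL" "zX L = xsL" "zY L = ysL" unfolding L_def by simp_all
  have xLh: "hom D (xsL ! i) (rsL ! i) (ssL ! i)" and yLh: "hom D (ysL ! i) (rsL ! Suc i) (ssL ! i)" if i: "i < m" for i
  proof -
    have "hom D (xsL ! i) (rsL ! i) (ssL ! i) \<and> hom D (ysL ! i) (rsL ! Suc i) (ssL ! i)"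
    proof (cases "i \<in> set u")
      case True
      then obtain j where j: "j < n" "u!j = i" using img by blast
      then show ?thesis using xX[of j] yX[of j] himg[OF j(1)] xsLn[OF i] ysLn[OF i] ssLn[OF i] rsLn[of i] rsLn[of "Suc i"] i True n_def
        by simp
    next
      case False
      then show ?thesis using hom_idn[OF D obr[OF hat_n]] xsLn[OF i] ysLn[OF i] ssLn[OF i] rsLn[of i] rsLn[of "Suc i"] i hnon[OF False]
        by simp
    qed
    then show "hom D (xsL ! i) (rsL ! i) (ssL ! i)" "hom D (ysL ! i) (rsL ! Suc i) (ssL ! i)" by simp_all
  qed
  have okL: "zig_ok D L" unfolding L_def
  proof (rule zig_okI)
    show "set rsL \<subseteq> Ob D" using obr hat_n by (auto simp: rsL_def simp del: upt_Suc)
    have ssob: "ssL ! i \<in> Ob D" if i: "i < m" for i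
    proof (cases "i \<in> set u")
      case True
      then obtain j where j: "j < n" "u!j = i" using img by blast
      then show ?thesis using True obs himg ssLn[OF i] by auto
    qed (use obr hat_n ssLn[OF i] in simp)
    have len: "length ssL = m" by (simp add: ssL_def)
    show "set ssL \<subseteq> Ob D"
    proof
      fix x assume "x \<in> set ssL"
      then obtain i where "i < length ssL" "x = ssL!i" by (auto simp: in_set_conv_nth)
      then show "x \<in> Ob D" using ssob len by simp
    qed
  qed (use xLh yLh in \<open>auto simp: rsL_def ssL_def xsL_def ysL_def hom_def simp del: upt_Suc\<close>)
  define Rh' where "Rh' = map (\<lambda>i. Idn D (zR X ! hat u i)) [0..<Suc m]"
  define Sh' where "Sh' = map (\<lambda>j. Idn D (zS X ! j)) [0..<n]"
  have Rh'n: "Rh' ! i = Idn D (zR X ! hat u i)" if "i \<le> m" for i unfolding Rh'_def using that by (subst nth_map_upt) auto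
  have Sh'n: "Sh' ! j = Idn D (zS X ! j)" if "j < n" for j unfolding Sh'_def using that by simp
  have okh: "zmap_ok D (Zmap X L u Rh' Sh')"
  proof (rule zmap_okI)
    show "zmt D X L u Rh' Sh'"
    proof (rule zmtI)
      fix i assume i: "i \<le> zlen L"
      show "Rh' ! i \<in> Ar D \<and> Dom D (Rh' ! i) = zR X ! hat u i \<and> Cod D (Rh' ! i) = zR L ! i"
        using hom_idn[OF D obr[OF hat_n]] Rh'n[of i] rsLn[of i] i zlenL LzR unfolding hom_def by simp
    next
      fix j assume j: "j < zlen X"
      show "Sh' ! j \<in> Ar D \<and> Dom D (Sh' ! j) = zS X ! j \<and> Cod D (Sh' ! j) = zS L ! (u ! j)"
        using hom_idn[OF D obs[of j]] Sh'n[of j] ssLn[of "u!j"] himg[of j] j n_def ub[of j] LzR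
        unfolding hom_def by (simp add: nth_mem lu)
    qed (use fD okL zlenL n_def m_def in \<open>auto simp: Rh'_def Sh'_def\<close>)
  next
    fix i assume i0: "i < zlen L"
    then have i: "i < m" using zlenL by simp
    show "\<exists>c. zc D X L u Rh' Sh' i c"
    proof (cases "i \<in> set u")
      case True
      then obtain j where j: "j < n" "u!j = i" using img by blast
      define c where "c = (\<lambda>k. if k = j then zX X ! j else zY X ! j)"
      have "zc D X L u Rh' Sh' i c" unfolding zc_def
      proof (intro conjI allI impI)
        show "c (hat u i) = Cmp D (zX L ! i) (Rh' ! i)"
          using hom_idr[OF D xX[of j]] j himg[OF j(1)] xsLn[OF i] Rh'n[of i] i True LzR n_def c_def by simp
        show "c (hat u (Suc i)) = Cmp D (zY L ! i) (Rh' ! Suc i)"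
          using hom_idr[OF D yX[of j]] j himg[OF j(1)] ysLn[OF i] Rh'n[of "Suc i"] i True LzR n_def c_def by simp
        fix k assume k: "hat u i \<le> k \<and> k < hat u (Suc i)"
        then have kj: "k = j" using himg[OF j(1)] j by simp
        show "Cmp D (Sh' ! k) (zX X ! k) = c k" "Cmp D (Sh' ! k) (zY X ! k) = c (Suc k)"
          using hom_idl[OF D xX[of j]] hom_idl[OF D yX[of j]] kj j Sh'n c_def n_def by simp_all
      qed
      then show ?thesis by blast
    next
      case False
      define c where "c = (\<lambda>k::nat. Idn D (zR X ! hat u i))"
      have "zc D X L u Rh' Sh' i c" unfolding zc_def
        using hnon[OF False] xsLn[OF i] ysLn[OF i] Rh'n[of i] Rh'n[of "Suc i"] i False LzR c_def
          hom_idl[OF D hom_idn[OF D obr[OF hat_n]]] by auto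
      then show ?thesis by blast
    qed
  qed
  define wS where "wS = map (\<lambda>i. if i \<in> set u then S ! hat u i else Cmp D (zX T ! i) (R ! i)) [0..<m]"
  have wSn: "wS ! i = (if i \<in> set u then S ! hat u i else Cmp D (zX T ! i) (R ! i))" if "i < m" for i
    unfolding wS_def using that by simp
  have cfex: "\<exists>c. zc D X T u R S i c" if "i < m" for i using zmap_ok_ZmapD(2)[OF okf] that m_def by simp
  have fimg: "Cmp D (S!j) (zX X ! j) = Cmp D (zX T ! (u!j)) (R ! (u!j)) \<and>
              Cmp D (S!j) (zY X ! j) = Cmp D (zY T ! (u!j)) (R ! Suc (u!j))" if j: "j < n" for j
  proof -
    obtain c where c: "zc D X T u R S (u!j) c" using cfex[OF ub[OF j]] by blast
    then show ?thesis unfolding zc_def himg[OF j] by auto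
  qed
  have fnon: "Cmp D (zX T ! i) (R ! i) = Cmp D (zY T ! i) (R ! Suc i)" if i: "i < m" "i \<notin> set u" for i
  proof -
    obtain c where c: "zc D X T u R S i c" using cfex[OF i(1)] by blast
    then show ?thesis unfolding zc_def hnon[OF i(2)] by metis
  qed
  have wSh: "hom D (wS ! i) (ssL ! i) (zS T ! i)" if i: "i < m" for i
  proof (cases "i \<in> set u")
    case True
    then obtain j where j: "j < n" "u!j = i" using img by blast
    then show ?thesis using Sh[OF j(1)] wSn[OF i] ssLn[OF i] True himg[OF j(1)] by simp
  next
    case False
    then show ?thesis using hom_cmp[OF D Rh[of i] xT[of i]] wSn[OF i] ssLn[OF i] i m_def by simp
  qed
  have okw: "zmap_ok D (Zmap L T [0..<m] R wS)"
  proof (rule zmap_okI)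
    show "zmt D L T [0..<m] R wS"
    proof (rule zmtI)
      fix i assume i: "i \<le> zlen T"
      show "R ! i \<in> Ar D \<and> Dom D (R ! i) = zR L ! hat [0..<m] i \<and> Cod D (R ! i) = zR T ! i"
        using Rh[of i] i m_def hat_upt[of i m] rsLn[of i] LzR unfolding hom_def by simp
    next
      fix j assume j: "j < zlen L"
      show "wS ! j \<in> Ar D \<and> Dom D (wS ! j) = zS L ! j \<and> Cod D (wS ! j) = zS T ! ([0..<m] ! j)"
        using wSh[of j] j zlenL LzR unfolding hom_def by simp
    qed (use fD okL zlenL m_def in \<open>auto simp: wS_def\<close>)
  next
    fix i assume i0: "i < zlen T"
    then have i: "i < m" using m_def by simp
    define c where "c = (\<lambda>k. if k = i then Cmp D (zX T ! i) (R ! i) else Cmp D (zY T ! i) (R ! Suc i))"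
    have sq: "Cmp D (wS ! i) (xsL ! i) = Cmp D (zX T ! i) (R ! i) \<and> Cmp D (wS ! i) (ysL ! i) = Cmp D (zY T ! i) (R ! Suc i)"
    proof (cases "i \<in> set u")
      case True
      then obtain j where j: "j < n" "u!j = i" using img by blast
      then show ?thesis using fimg[OF j(1)] wSn[OF i] xsLn[OF i] ysLn[OF i] True himg[OF j(1)] by simp
    next
      case False
      have "Cmp D (Cmp D (zX T ! i) (R ! i)) (Idn D (zR X ! hat u i)) = Cmp D (zX T ! i) (R ! i)"
        using hom_idr[OF D hom_cmp[OF D Rh[of i] xT[of i]]] i m_def by simp
      then show ?thesis using fnon[OF i False] wSn[OF i] xsLn[OF i] ysLn[OF i] False by simp
    qed
    have "zc D L T [0..<m] R wS i c"
      unfolding zc_def hat_upt[of i m, OF less_imp_le[OF i]] hat_upt[of "Suc i" m, OF Suc_leI[OF i]]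
    proof (intro conjI allI impI)
      fix j assume "i \<le> j \<and> j < Suc i"
      then have ji: "j = i" by simp
      show "Cmp D (wS ! j) (zX L ! j) = c j" "Cmp D (wS ! j) (zY L ! j) = c (Suc j)"
        using sq ji LzR c_def by simp_all
    qed (simp_all add: c_def)
    then show "\<exists>c. zc D L T [0..<m] R wS i c" by blast
  qed
  have wh: "Cmp (Zcat D) (Zmap L T [0..<m] R wS) (Zmap X L u Rh' Sh') = Zmap X T u R S"
  proof -
    have e1: "map (\<lambda>j. [0..<m] ! j) u = u" using ub lu by (auto intro!: nth_equalityI)
    have e2: "map (\<lambda>i. Cmp D (R ! i) (Rh' ! hat [0..<m] i)) [0..<Suc (zlen T)] = R"
    proof (rule nth_equalityI)
      fix i assume "i < length (map (\<lambda>i. Cmp D (R ! i) (Rh' ! hat [0..<m] i)) [0..<Suc (zlen T)])"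
      then have i: "i \<le> m" using m_def by simp
      show "map (\<lambda>i. Cmp D (R ! i) (Rh' ! hat [0..<m] i)) [0..<Suc (zlen T)] ! i = R ! i"
        using hom_idr[OF D Rh[OF i]] Rh'n[OF i] hat_upt[OF i] i m_def
        by (simp add: nth_map_upt less_Suc_eq_le del: upt_Suc)
    qed (use fD in simp)
    have e3: "map (\<lambda>j. Cmp D (wS ! (u ! j)) (Sh' ! j)) [0..<zlen X] = S"
    proof (rule nth_equalityI)
      fix j assume "j < length (map (\<lambda>j. Cmp D (wS ! (u ! j)) (Sh' ! j)) [0..<zlen X])"
      then have j: "j < n" using n_def by simp
      show "map (\<lambda>j. Cmp D (wS ! (u ! j)) (Sh' ! j)) [0..<zlen X] ! j = S ! j"
        using hom_idr[OF D Sh[OF j]] Sh'n[OF j] wSn[OF ub[OF j]] himg[OF j] j n_def lu by (simp add: nth_mem)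
    qed (use fD in simp)
    show ?thesis using Zcat_cmp_eq[OF okh okw[unfolded zlenL[symmetric]]] zlenL e1 e2 e3 m_def by simp
  qed
  have ccD: "\<And>h u'. h \<in> Ar (Zcat D) \<Longrightarrow> mdom h = mdom f \<Longrightarrow> length u' = zlen (mcod f) \<Longrightarrow>
      (\<forall>j<length u'. u'!j < zlen (mcod h)) \<Longrightarrow> sorted u' \<Longrightarrow> map (\<lambda>j. u'!j) (mS f) = mS h \<Longrightarrow>
       (\<exists>!v. v \<in> Ar (Zcat D) \<and> mdom v = mcod f \<and> mcod v = mcod h \<and> Cmp (Zcat D) v f = h \<and> mS v = u')"
    using cc unfolding cocartesian_def by blast
  have e1: "map (\<lambda>j. [0..<m] ! j) u = u" using ub lu by (auto intro!: nth_equalityI)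
  have "\<exists>!v. v \<in> Ar (Zcat D) \<and> mdom v = T \<and> mcod v = L \<and> Cmp (Zcat D) v f = Zmap X L u Rh' Sh' \<and> mS v = [0..<m]"
    using ccD[of "Zmap X L u Rh' Sh'" "[0..<m]"] okh ef zlenL e1 m_def by simp
  then obtain v where va: "v \<in> Ar (Zcat D)" and vd: "mdom v = T" and vc: "mcod v = L"
    and vf: "Cmp (Zcat D) v f = Zmap X L u Rh' Sh'" and vs: "mS v = [0..<m]" by blast
  have "zmap_ok D v" using va by simp
  then obtain T1 L1 vs1 Rv Sv where ev: "v = Zmap T1 L1 vs1 Rv Sv" and okv0: "zmap_ok D (Zmap T1 L1 vs1 Rv Sv)"
    by (rule zmap_ok_split)
  have TL: "T1 = T" "L1 = L" "vs1 = [0..<m]" using vd vc vs ev by simp_all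
  note okv = okv0[unfolded TL]
  note tv = zmap_ok_ZmapD(1)[OF okv]
  note vD = zmtD[OF tv]
  have Rvh: "hom D (Rv ! i) (zR T ! i) (zR X ! hat u i)" if "i \<le> m" for i
    using zmt_hom(1)[OF tv, of i] that hat_upt[OF that] rsLn[OF that] LzR zlenL by simp
  have Svh: "hom D (Sv ! i) (zS T ! i) (ssL ! i)" if "i < m" for i
    using zmt_hom(2)[OF tv, of i] that LzR m_def by simp
  have vf': "Zmap X L u (map (\<lambda>i. Cmp D (Rv!i) (R ! hat [0..<m] i)) [0..<Suc m])
            (map (\<lambda>j. Cmp D (Sv ! (u!j)) (S!j)) [0..<n]) = Zmap X L u Rh' Sh'"
    using vf Zcat_cmp_eq[OF okf okv] ef ev TL zlenL e1 m_def n_def by (simp add: map_nth)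
  have vR: "Cmp D (Rv!i) (R!i) = Idn D (zR X ! hat u i)" if i: "i \<le> m" for i
    using arg_cong[where f="\<lambda>t. mR t ! i", OF vf'] Rh'n[OF i] hat_upt[OF i] i
    by (simp add: nth_map_upt less_Suc_eq_le del: upt_Suc)
  have vS: "Cmp D (Sv ! (u!j)) (S!j) = Idn D (zS X ! j)" if j: "j < n" for j
    using arg_cong[where f="\<lambda>t. mSl t ! j", OF vf'] Sh'n[OF j] j by simp
  (* uniqueness: w o v = id *)
  have fA: "f \<in> Ar (Zcat D)" using okf ef by simp
  have wA: "Zmap L T [0..<m] R wS \<in> Ar (Zcat D)" using okw by simp
  have cf: "Cod (Zcat D) f = Dom (Zcat D) v" using ef vd by simp
  have cv: "Cod (Zcat D) v = Dom (Zcat D) (Zmap L T [0..<m] R wS)" using vc by simp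
  have wvA: "Cmp (Zcat D) (Zmap L T [0..<m] R wS) v \<in> Ar (Zcat D)" by (rule cat_cmp_ar[OF ZD va wA cv])
  have U: "\<exists>!v'. v' \<in> Ar (Zcat D) \<and> mdom v' = T \<and> mcod v' = T \<and> Cmp (Zcat D) v' f = f \<and> mS v' = [0..<m]"
    using ccD[of f "[0..<m]"] okf ef e1 m_def by (simp del: Zcat_simps(6))
  have c1: "Cmp (Zcat D) (Cmp (Zcat D) (Zmap L T [0..<m] R wS) v) f = f"
  proof -
    have "Cmp (Zcat D) (Cmp (Zcat D) (Zmap L T [0..<m] R wS) v) f = Cmp (Zcat D) (Zmap L T [0..<m] R wS) (Cmp (Zcat D) v f)"
      using cat_assoc[OF ZD fA va wA cf cv] by (rule sym)
    then show ?thesis using vf wh ef by (simp only:)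
  qed
  have idT: "Idn (Zcat D) T \<in> Ar (Zcat D)" by (rule cat_idn_ar[OF ZD]) (use fD(2) in simp)
  have c2: "Cmp (Zcat D) (Idn (Zcat D) T) f = f" using cat_idl[OF ZD fA] ef by simp
  have P1: "Cmp (Zcat D) (Zmap L T [0..<m] R wS) v \<in> Ar (Zcat D) \<and> mdom (Cmp (Zcat D) (Zmap L T [0..<m] R wS) v) = T \<and>
      mcod (Cmp (Zcat D) (Zmap L T [0..<m] R wS) v) = T \<and> Cmp (Zcat D) (Cmp (Zcat D) (Zmap L T [0..<m] R wS) v) f = f \<and>
      mS (Cmp (Zcat D) (Zmap L T [0..<m] R wS) v) = [0..<m]"
    using wvA c1 vd vs by (simp add: Zcat_simps(6))
  have P2: "Idn (Zcat D) T \<in> Ar (Zcat D) \<and> mdom (Idn (Zcat D) T) = T \<and> mcod (Idn (Zcat D) T) = T \<and>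
      Cmp (Zcat D) (Idn (Zcat D) T) f = f \<and> mS (Idn (Zcat D) T) = [0..<m]"
    using idT c2 m_def by (simp del: Zcat_simps(6))
  have wv: "Cmp (Zcat D) (Zmap L T [0..<m] R wS) v = Idn (Zcat D) T"
    using U P1 P2 by (elim ex1E) metis
  have wv': "Zmap T T (map (\<lambda>j. [0..<m] ! j) [0..<m]) (map (\<lambda>i. Cmp D (R!i) (Rv ! hat [0..<m] i)) [0..<Suc (zlen T)])
     (map (\<lambda>j. Cmp D (wS ! ([0..<m]!j)) (Sv!j)) [0..<zlen T]) = Zmap T T [0..<zlen T] (map (Idn D) (zR T)) (map (Idn D) (zS T))"
    using wv Zcat_cmp_eq[OF okv[unfolded m_def] okw[unfolded m_def]] ev TL m_def by (simp add: Zcat_simps(5))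
  have wR: "Cmp D (R!i) (Rv!i) = Idn D (zR T ! i)" if i: "i \<le> m" for i
    using arg_cong[where f="\<lambda>t. mR t ! i", OF wv'] hat_upt[OF i] i m_def zig_okD(2)[OF fD(2)]
    by (simp add: nth_map_upt less_Suc_eq_le del: upt_Suc)
  have wS': "Cmp D (wS!i) (Sv!i) = Idn D (zS T ! i)" if i: "i < m" for i
    using arg_cong[where f="\<lambda>t. mSl t ! i", OF wv'] i m_def by (simp add: zlen_def)
  have Riso: "isoC D (R!i)" if i: "i \<le> m" for i
    by (rule isoI_hom[OF Rh[OF i] Rvh[OF i] vR[OF i] wR[OF i]])
  have wSiso: "isoC D (wS!i)" if i: "i < m" for i
  proof (rule isoI_hom[OF wSh[OF i] Svh[OF i] _ wS'[OF i]])
    show "Cmp D (Sv ! i) (wS ! i) = Idn D (ssL ! i)"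
    proof (cases "i \<in> set u")
      case True
      then obtain j where j: "j < n" "u!j = i" using img by blast
      then show ?thesis using vS[OF j(1)] wSn[OF i] ssLn[OF i] True himg[OF j(1)] by simp
    next
      case False
      obtain cv where cv: "zc D T L [0..<m] Rv Sv i cv" using zmap_ok_ZmapD(2)[OF okv] i zlenL by blast
      have h0: "hat [0..<m] i = i" "hat [0..<m] (Suc i) = Suc i" using i by (simp_all add: hat_upt)
      have e: "Cmp D (Sv!i) (zX T ! i) = Cmp D (zX L ! i) (Rv!i)" using cv unfolding zc_def h0 by auto
      have e': "Cmp D (zX L ! i) (Rv!i) = Rv!i"
        using hom_idl[OF D Rvh[of i]] xsLn[OF i] False LzR i by simp
      have "Cmp D (Sv ! i) (Cmp D (zX T ! i) (R ! i)) = Cmp D (Cmp D (Sv ! i) (zX T ! i)) (R ! i)"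
        using hom_assoc[OF D Rh[of i] xT[of i] Svh[OF i]] i m_def by simp
      then show ?thesis using e e' vR[of i] wSn[OF i] ssLn[OF i] False i by simp
    qed
  qed
  have RP: "set R \<subseteq> P"
  proof
    fix r assume "r \<in> set R"
    then obtain i where "i < length R" "r = R ! i" by (auto simp: in_set_conv_nth)
    then show "r \<in> P" using Riso[of i] degdataD(4)[OF P] fD(6) m_def by simp
  qed
  have SP: "set S \<subseteq> P"
  proof
    fix r assume "r \<in> set S"
    then obtain j where j: "j < length S" "r = S ! j" by (auto simp: in_set_conv_nth)
    then have jn: "j < n" using fD(7) n_def by simp
    have "wS ! (u!j) = S ! j" using wSn[OF ub[OF jn]] himg[OF jn] jn lu by (simp add: nth_mem)
    then show "r \<in> P" using wSiso[OF ub[OF jn]] degdataD(4)[OF P] j by simp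
  qed
  have NP: "Cmp D (zX T ! i) (R ! i) \<in> P" if "i < zlen T" "i \<notin> set u" for i
    using wSiso[of i] wSn[of i] that degdataD(4)[OF P] m_def by simp
  show ?thesis unfolding ef Dg_Zmap using okf du RP SP NP by blast
qed

lemma compgen_Dg:
  assumes P: "degdata D P" and x: "x \<in> compgen (Zcat D) (simple_deg D \<union> parallel_deg D P)"
  shows "Dg D P x"
  using x
proof (induction rule: compgen.induct)
  case (base f)
  then show ?case using simple_Dg[OF P] parallel_Dg by blast
next
  case (comp f g)
  have "zmap_ok D f" "zmap_ok D g" using comp.IH unfolding Dg_def by simp_all
  obtain X Y fs R S where ef: "f = Zmap X Y fs R S" and okf: "zmap_ok D (Zmap X Y fs R S)"
    by (rule zmap_ok_split[OF \<open>zmap_ok D f\<close>])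
  obtain Y' Z gs R' S' where eg: "g = Zmap Y' Z gs R' S'" and okg: "zmap_ok D (Zmap Y' Z gs R' S')"
    by (rule zmap_ok_split[OF \<open>zmap_ok D g\<close>])
  have "Y' = Y" using comp.hyps(3) ef eg by simp
  then show ?case using Dg_cmp[OF P, of X Y fs R S Z gs R' S'] comp.IH ef eg by simp
qed

lemma degdata_step:
  assumes P: "degdata D P"
  shows "degdata (Zcat D) (compgen (Zcat D) (simple_deg D \<union> parallel_deg D P))"
proof -
  note D = degdataD(1)[OF P]
  note ZD = Zcat_is_cat[OF D]
  define P' where "P' = compgen (Zcat D) (simple_deg D \<union> parallel_deg D P)"
  have Dg': "Dg D P x" if "x \<in> P'" for x using compgen_Dg[OF P] that P'_def by simp
  have split: "\<exists>X Y fs R S. x = Zmap X Y fs R S \<and> Dg D P (Zmap X Y fs R S)" if "x \<in> P'" for x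
  proof -
    have "zmap_ok D x" using Dg'[OF that] unfolding Dg_def by simp
    then obtain X Y fs R S where "x = Zmap X Y fs R S" by (rule zmap_ok_split)
    then show ?thesis using Dg'[OF that] by blast
  qed
  have "degdata (Zcat D) P'" unfolding degdata_def
  proof (intro conjI ballI allI impI)
    show "is_cat (Zcat D)" by (rule ZD)
    show "P' \<subseteq> Ar (Zcat D)" using Dg' unfolding Dg_def by auto
  next
    fix f assume "f \<in> P'"
    then obtain X Y fs R S where "f = Zmap X Y fs R S" "Dg D P (Zmap X Y fs R S)" using split by blast
    then show "monic (Zcat D) f" using Dg_monic[OF P] by simp
  next
    fix f assume "isoC (Zcat D) f"
    then show "f \<in> P'" unfolding P'_def using iso_parallel[OF P] by (blast intro: compgen.base)
  next
    fix f g assume "f \<in> P'" "g \<in> P'" "Cod (Zcat D) f = Dom (Zcat D) g"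
    then show "Cmp (Zcat D) g f \<in> P'" unfolding P'_def by (rule compgen.comp)
  next
    fix f g assume f: "f \<in> P'" and g: "g \<in> P'" and c: "Cod (Zcat D) f = Cod (Zcat D) g"
      and tt: "to_terminal f = to_terminal g"
    obtain X T fs R S where ef: "f = Zmap X T fs R S" and df: "Dg D P (Zmap X T fs R S)" using split[OF f] by blast
    obtain Y T' gs R' S' where eg: "g = Zmap Y T' gs R' S'" and dg: "Dg D P (Zmap Y T' gs R' S')" using split[OF g] by blast
    have TT: "T' = T" using c ef eg by simp
    obtain \<phi> where p1: "isoC (Zcat D) \<phi>" and p2: "mdom \<phi> = X" and p3: "mcod \<phi> = Y"
      and p4: "Zmap X T fs R S = Cmp (Zcat D) (Zmap Y T gs R' S') \<phi>"
      using Dg_unique[OF P df dg[unfolded TT]] tt ef eg TT by blast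
    have d1: "Dom (Zcat D) f = X" "Dom (Zcat D) g = Y" using ef eg by simp_all
    show "\<exists>\<phi>. isoC (Zcat D) \<phi> \<and> Dom (Zcat D) \<phi> = Dom (Zcat D) f \<and> Cod (Zcat D) \<phi> = Dom (Zcat D) g \<and> f = Cmp (Zcat D) g \<phi>"
    proof (intro exI[of _ \<phi>] conjI)
      show "isoC (Zcat D) \<phi>" by (rule p1)
      show "Dom (Zcat D) \<phi> = Dom (Zcat D) f" using d1 p2 by (simp only: Zcat_simps(3))
      show "Cod (Zcat D) \<phi> = Dom (Zcat D) g" using d1 p3 by (simp only: Zcat_simps(3,4))
      show "f = Cmp (Zcat D) g \<phi>" using p4 ef eg TT by (simp only:)
    qed
  qed
  then show ?thesis unfolding P'_def .
qed

lemma liftC_is_cat: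
  assumes C: "is_cat C" shows "is_cat (liftC C)"
proof (rule is_catI)
  fix f assume "f \<in> Ar (liftC C)"
  then obtain a where a: "f = At a" "a \<in> Ar C" unfolding liftC_def by auto
  show "Dom (liftC C) f \<in> Ob (liftC C)" "Cod (liftC C) f \<in> Ob (liftC C)"
    using a cat_dom_ob[OF C] cat_cod_ob[OF C] unfolding liftC_def by auto
  show "Cmp (liftC C) (Idn (liftC C) (Cod (liftC C) f)) f = f" "Cmp (liftC C) f (Idn (liftC C) (Dom (liftC C) f)) = f"
    using a cat_idl[OF C] cat_idr[OF C] unfolding liftC_def by auto
next
  fix x assume "x \<in> Ob (liftC C)"
  then obtain a where a: "x = At a" "a \<in> Ob C" unfolding liftC_def by auto
  show "Idn (liftC C) x \<in> Ar (liftC C)" "Dom (liftC C) (Idn (liftC C) x) = x" "Cod (liftC C) (Idn (liftC C) x) = x"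
    using a cat_idn_ar[OF C] cat_idn_dom[OF C] cat_idn_cod[OF C] unfolding liftC_def by auto
next
  fix f g assume "f \<in> Ar (liftC C)" "g \<in> Ar (liftC C)" and c: "Cod (liftC C) f = Dom (liftC C) g"
  then obtain a b where ab: "f = At a" "a \<in> Ar C" "g = At b" "b \<in> Ar C" unfolding liftC_def by auto
  have c': "Cod C a = Dom C b" using c ab unfolding liftC_def by simp
  show "Cmp (liftC C) g f \<in> Ar (liftC C)" "Dom (liftC C) (Cmp (liftC C) g f) = Dom (liftC C) f"
    "Cod (liftC C) (Cmp (liftC C) g f) = Cod (liftC C) g"
    using ab c' cat_cmp_ar[OF C] cat_cmp_dom[OF C] cat_cmp_cod[OF C] unfolding liftC_def by auto
next
  fix f g h assume "f \<in> Ar (liftC C)" "g \<in> Ar (liftC C)" "h \<in> Ar (liftC C)"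
    and c: "Cod (liftC C) f = Dom (liftC C) g" "Cod (liftC C) g = Dom (liftC C) h"
  then obtain a b d where ab: "f = At a" "a \<in> Ar C" "g = At b" "b \<in> Ar C" "h = At d" "d \<in> Ar C"
    unfolding liftC_def by auto
  have c': "Cod C a = Dom C b" "Cod C b = Dom C d" using c ab unfolding liftC_def by simp_all
  show "Cmp (liftC C) h (Cmp (liftC C) g f) = Cmp (liftC C) (Cmp (liftC C) h g) f"
    using ab c' cat_assoc[OF C] unfolding liftC_def by auto
qed

lemma degdata_iso:
  assumes D: "is_cat D" shows "degdata D {f. isoC D f}"
  unfolding degdata_def
proof (intro conjI ballI allI impI)
  show "is_cat D" by (rule D)
  show "{f. isoC D f} \<subseteq> Ar D" unfolding isoC_def by auto
next
  fix f assume "f \<in> {f. isoC D f}" then show "monic D f" using iso_monic[OF D] by simp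
next
  fix f assume "isoC D f" then show "f \<in> {f. isoC D f}" by simp
next
  fix f g assume "f \<in> {f. isoC D f}" "g \<in> {f. isoC D f}" "Cod D f = Dom D g"
  then show "Cmp D g f \<in> {f. isoC D f}" using iso_cmp[OF D] by simp
next
  fix f g assume f: "f \<in> {f. isoC D f}" and g: "g \<in> {f. isoC D f}" and c: "Cod D f = Cod D g"
  have fh: "hom D f (Dom D f) (Cod D f)" and gh: "hom D g (Dom D g) (Cod D g)"
    using f g unfolding isoC_def hom_def by auto
  note gi = inv_props[OF _ gh] and fi = f[simplified]
  have gi0: "isoC D g" using g by simp
  have h1: "hom D (cinv D g) (Cod D f) (Dom D g)" using inv_props(1)[OF gi0 gh] c by simp
  have \<phi>h: "hom D (Cmp D (cinv D g) f) (Dom D f) (Dom D g)" using hom_cmp[OF D fh h1] .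
  have iso: "isoC D (Cmp D (cinv D g) f)"
    using iso_cmp[OF D fi inv_props(4)[OF gi0 gh]] h1 fh unfolding hom_def by simp
  have "Cmp D g (Cmp D (cinv D g) f) = Cmp D (Cmp D g (cinv D g)) f"
    using hom_assoc[OF D fh h1, of g "Cod D g"] gh c by simp
  also have "\<dots> = f" using inv_props(3)[OF gi0 gh] hom_idl[OF D fh] c by simp
  finally show "\<exists>\<phi>. isoC D \<phi> \<and> Dom D \<phi> = Dom D f \<and> Cod D \<phi> = Dom D g \<and> f = Cmp D g \<phi>"
    using iso \<phi>h unfolding hom_def by (intro exI[of _ "Cmp D (cinv D g) f"]) auto
qed

lemma Zn_Suc: "Zn C (Suc n) = Zcat (Zn C n)"
  unfolding Zn_def by simp

lemma Zn_0: "Zn C 0 = liftC C"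
  unfolding Zn_def by simp

lemma degdata_deg:
  assumes C: "is_cat C" shows "degdata (Zn C n) (deg C n)"
proof (induction n)
  case 0
  then show ?case using degdata_iso[OF liftC_is_cat[OF C]] by (simp add: Zn_0)
next
  case (Suc n)
  then show ?case using degdata_step[OF Suc.IH] by (simp add: Zn_Suc)
qed

fun tdom :: "unit U \<Rightarrow> unit U" where
  "tdom (Zmap a b fs r s) = a"
| "tdom _ = At ()"

definition finlev :: "'a U cat \<Rightarrow> 'a U set \<Rightarrow> bool" where
  "finlev D P \<longleftrightarrow> (\<forall>T\<in>Ob D. finite (to_terminal ` {f \<in> P. Cod D f = T})) \<and>
     (\<forall>A B. finite A \<longrightarrow> finite B \<longrightarrow>
        finite (to_terminal ` {x \<in> Ar D. to_terminal (Dom D x) \<in> A \<and> to_terminal (Cod D x) \<in> B})) \<and>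
     (\<forall>x\<in>Ar D. to_terminal (Dom D x) = tdom (to_terminal x))"

lemma tt_Zig[simp]: "to_terminal (Zig rs ss xs ys) = Zig (map to_terminal rs) (map to_terminal ss) (map to_terminal xs) (map to_terminal ys)"
  by (simp add: to_terminal_def)
lemma tt_Zmap[simp]: "to_terminal (Zmap X Y fs R S) = Zmap (to_terminal X) (to_terminal Y) fs (map to_terminal R) (map to_terminal S)"
  by (simp add: to_terminal_def)
lemma tt_At[simp]: "to_terminal (At a) = At ()"
  by (simp add: to_terminal_def)

lemma finite_lists': "finite A \<Longrightarrow> finite {xs. length xs \<le> n \<and> set xs \<subseteq> A}"
  using finite_lists_length_le[of A n] by (simp add: conj_commute)

lemma lists_mem: "length xs \<le> n \<Longrightarrow> (\<And>i. i < length xs \<Longrightarrow> xs ! i \<in> A) \<Longrightarrow> xs \<in> {xs. length xs \<le> n \<and> set xs \<subseteq> A}"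
  by (auto simp: in_set_conv_nth)

lemma finlev_0:
  assumes C: "is_cat C" shows "finlev (liftC C) {f. isoC (liftC C) f}"
  unfolding finlev_def
proof (intro conjI ballI allI impI)
  fix T assume "T \<in> Ob (liftC C)"
  have "to_terminal ` {f \<in> {f. isoC (liftC C) f}. Cod (liftC C) f = T} \<subseteq> {At ()}"
    unfolding isoC_def liftC_def by auto
  then show "finite (to_terminal ` {f \<in> {f. isoC (liftC C) f}. Cod (liftC C) f = T})" by (rule finite_subset) simp
next
  fix A B :: "unit U set"
  have "to_terminal ` {x \<in> Ar (liftC C). to_terminal (Dom (liftC C) x) \<in> A \<and> to_terminal (Cod (liftC C) x) \<in> B} \<subseteq> {At ()}"
    unfolding liftC_def by auto
  then show "finite (to_terminal ` {x \<in> Ar (liftC C). to_terminal (Dom (liftC C) x) \<in> A \<and> to_terminal (Cod (liftC C) x) \<in> B})"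
    by (rule finite_subset) simp
next
  fix x assume "x \<in> Ar (liftC C)"
  then show "to_terminal (Dom (liftC C) x) = tdom (to_terminal x)" unfolding liftC_def by auto
qed

lemma zig_tt: "zig_ok D X \<Longrightarrow> to_terminal X = Zig (map to_terminal (zR X)) (map to_terminal (zS X)) (map to_terminal (zX X)) (map to_terminal (zY X))"
  using zig_okD(1)[of D X] by (metis tt_Zig)

lemma zlen_tt: "zig_ok D X \<Longrightarrow> zlen X = length (zS (to_terminal X))"
  using zig_tt[of D X] unfolding zlen_def by (metis length_map zS.simps(1))

lemma zR_tt: "zig_ok D X \<Longrightarrow> k \<le> zlen X \<Longrightarrow> to_terminal (zR X ! k) \<in> set (zR (to_terminal X))"
  using zig_tt[of D X] zig_okD(2)[of D X] by (metis le_imp_less_Suc length_map nth_map nth_mem zR.simps(1))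

lemma zS_tt: "zig_ok D X \<Longrightarrow> k < zlen X \<Longrightarrow> to_terminal (zS X ! k) \<in> set (zS (to_terminal X))"
  using zig_tt[of D X] unfolding zlen_def by (metis length_map nth_map nth_mem zS.simps(1))

lemma finlev_ar_step:
  assumes F: "finlev D P" and A: "finite A" and B: "finite B"
  shows "finite (to_terminal ` {x \<in> Ar (Zcat D). to_terminal (Dom (Zcat D) x) \<in> A \<and> to_terminal (Cod (Zcat D) x) \<in> B})"
proof -
  have F2: "\<And>A B. finite A \<Longrightarrow> finite B \<Longrightarrow> finite (to_terminal ` {x \<in> Ar D. to_terminal (Dom D x) \<in> A \<and> to_terminal (Cod D x) \<in> B})"
    using F unfolding finlev_def by blast
  define M where "M = Max (insert 0 ((\<lambda>a. length (zS a)) ` (A \<union> B)))"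
  have M: "length (zS a) \<le> M" if "a \<in> A \<union> B" for a unfolding M_def using A B that by (intro Max_ge) auto
  define AR where "AR = (\<Union>a\<in>A. set (zR a))"
  define BR where "BR = (\<Union>a\<in>B. set (zR a))"
  define AS where "AS = (\<Union>a\<in>A. set (zS a))"
  define BS where "BS = (\<Union>a\<in>B. set (zS a))"
  have fin: "finite AR" "finite BR" "finite AS" "finite BS" using A B unfolding AR_def BR_def AS_def BS_def by auto
  define FR where "FR = to_terminal ` {x \<in> Ar D. to_terminal (Dom D x) \<in> AR \<and> to_terminal (Cod D x) \<in> BR}"
  define FS where "FS = to_terminal ` {x \<in> Ar D. to_terminal (Dom D x) \<in> AS \<and> to_terminal (Cod D x) \<in> BS}"
  have finF: "finite FR" "finite FS" unfolding FR_def FS_def using F2 fin by auto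
  define LF where "LF = {xs. length xs \<le> M \<and> set xs \<subseteq> {0..<M}}"
  define LR where "LR = {xs. length xs \<le> Suc M \<and> set xs \<subseteq> FR}"
  define LS where "LS = {xs. length xs \<le> M \<and> set xs \<subseteq> FS}"
  have finL: "finite LF" "finite LR" "finite LS" unfolding LF_def LR_def LS_def using finite_lists' finF by auto
  have "to_terminal ` {x \<in> Ar (Zcat D). to_terminal (Dom (Zcat D) x) \<in> A \<and> to_terminal (Cod (Zcat D) x) \<in> B}
     \<subseteq> (\<lambda>(a, b, fs, r, s). Zmap a b fs r s) ` (A \<times> B \<times> LF \<times> LR \<times> LS)"
  proof
    fix t assume "t \<in> to_terminal ` {x \<in> Ar (Zcat D). to_terminal (Dom (Zcat D) x) \<in> A \<and> to_terminal (Cod (Zcat D) x) \<in> B}"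
    then obtain x where x: "zmap_ok D x" "to_terminal (mdom x) \<in> A" "to_terminal (mcod x) \<in> B" and t: "t = to_terminal x"
      by auto
    obtain X Y fs R S where ex: "x = Zmap X Y fs R S" and ok: "zmap_ok D (Zmap X Y fs R S)"
      by (rule zmap_ok_split[OF x(1)])
    note tx = zmap_ok_ZmapD(1)[OF ok]
    note xD = zmtD[OF tx]
    have XA: "to_terminal X \<in> A" and YB: "to_terminal Y \<in> B" using x ex by simp_all
    have nX: "zlen X \<le> M" using M[of "to_terminal X"] XA zlen_tt[OF xD(1)] by simp
    have nY: "zlen Y \<le> M" using M[of "to_terminal Y"] YB zlen_tt[OF xD(2)] by simp
    have "fs \<in> LF" unfolding LF_def
    proof (intro lists_mem)
      show "length fs \<le> M" using xD(3) nX by simp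
      fix i assume "i < length fs"
      then show "fs ! i \<in> {0..<M}" using xD(3) xD(4)[of i] nY by simp
    qed
    moreover have "map to_terminal R \<in> LR" unfolding LR_def
    proof (intro lists_mem)
      show "length (map to_terminal R) \<le> Suc M" using xD(6) nY by simp
      fix i assume "i < length (map to_terminal R)"
      then have i: "i \<le> zlen Y" using xD(6) by simp
      have hi: "hat fs i \<le> zlen X" using hat_le_len[of fs i] xD(3) by simp
      have "to_terminal (Dom D (R!i)) \<in> AR" "to_terminal (Cod D (R!i)) \<in> BR"
        using zmt_hom(1)[OF tx i] zR_tt[OF xD(1) hi] zR_tt[OF xD(2) i] XA YB unfolding hom_def AR_def BR_def by auto
      then show "map to_terminal R ! i \<in> FR" using zmt_hom(1)[OF tx i] i xD(6) unfolding FR_def hom_def by auto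
    qed
    moreover have "map to_terminal S \<in> LS" unfolding LS_def
    proof (intro lists_mem)
      show "length (map to_terminal S) \<le> M" using xD(7) nX by simp
      fix j assume "j < length (map to_terminal S)"
      then have j: "j < zlen X" using xD(7) by simp
      have "to_terminal (Dom D (S!j)) \<in> AS" "to_terminal (Cod D (S!j)) \<in> BS"
        using zmt_hom(2)[OF tx j] zS_tt[OF xD(1) j] zS_tt[OF xD(2) xD(4)[OF j]] XA YB unfolding hom_def AS_def BS_def by auto
      then show "map to_terminal S ! j \<in> FS" using zmt_hom(2)[OF tx j] j xD(7) unfolding FS_def hom_def by auto
    qed
    ultimately show "t \<in> (\<lambda>(a, b, fs, r, s). Zmap a b fs r s) ` (A \<times> B \<times> LF \<times> LR \<times> LS)"
      using t ex XA YB by (auto intro!: image_eqI[of _ _ "(to_terminal X, to_terminal Y, fs, map to_terminal R, map to_terminal S)"])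
  qed
  then show ?thesis by (rule finite_subset) (use A B finL in simp)
qed

lemma distinct_len_le: "distinct fs \<Longrightarrow> \<forall>j<length fs. fs ! j < m \<Longrightarrow> length fs \<le> m"
proof -
  assume d: "distinct fs" and b: "\<forall>j<length fs. fs ! j < m"
  have "set fs \<subseteq> {0..<m}" using b by (auto simp: in_set_conv_nth)
  then have "card (set fs) \<le> m" using card_mono[of "{0..<m}" "set fs"] by simp
  then show ?thesis using distinct_card[OF d] by simp
qed

lemma finlev_deg_step:
  assumes P: "degdata D P" and F: "finlev D P" and T: "zig_ok D T"
  shows "finite (to_terminal ` {f \<in> compgen (Zcat D) (simple_deg D \<union> parallel_deg D P). Cod (Zcat D) f = T})"
proof -
  have F1: "\<And>T. T \<in> Ob D \<Longrightarrow> finite (to_terminal ` {f \<in> P. Cod D f = T})"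
    and F2: "\<And>A B. finite A \<Longrightarrow> finite B \<Longrightarrow> finite (to_terminal ` {x \<in> Ar D. to_terminal (Dom D x) \<in> A \<and> to_terminal (Cod D x) \<in> B})"
    and F3: "\<And>x. x \<in> Ar D \<Longrightarrow> to_terminal (Dom D x) = tdom (to_terminal x)"
    using F unfolding finlev_def by blast+
  define m where "m = zlen T"
  define AR where "AR = (\<Union>i\<in>{..m}. to_terminal ` {d \<in> P. Cod D d = zR T ! i})"
  define AS where "AS = (\<Union>i\<in>{..<m}. to_terminal ` {d \<in> P. Cod D d = zS T ! i})"
  have finA: "finite AR" "finite AS" unfolding AR_def AS_def m_def
    using F1 zig_ob_r[OF T] zig_ob_s[OF T] by auto
  define RR where "RR = tdom ` AR"
  define SS where "SS = tdom ` AS"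
  define XR where "XR = to_terminal ` {x \<in> Ar D. to_terminal (Dom D x) \<in> RR \<and> to_terminal (Cod D x) \<in> SS}"
  have finX: "finite RR" "finite SS" "finite XR" unfolding RR_def SS_def XR_def using finA F2 by auto
  define ZA where "ZA = (\<lambda>(a, b, c, d). Zig a b c d) ` ({xs. length xs \<le> Suc m \<and> set xs \<subseteq> RR} \<times>
      {xs. length xs \<le> m \<and> set xs \<subseteq> SS} \<times> {xs. length xs \<le> m \<and> set xs \<subseteq> XR} \<times> {xs. length xs \<le> m \<and> set xs \<subseteq> XR})"
  define LF where "LF = {xs. length xs \<le> m \<and> set xs \<subseteq> {0..<m}}"
  define LR where "LR = {xs. length xs \<le> Suc m \<and> set xs \<subseteq> AR}"
  define LS where "LS = {xs. length xs \<le> m \<and> set xs \<subseteq> AS}"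
  have finZ: "finite ZA" "finite LF" "finite LR" "finite LS"
  proof -
    show "finite ZA" unfolding ZA_def
      by (intro finite_imageI finite_cartesian_product finite_lists' finX)
  qed (unfold LF_def LR_def LS_def, (intro finite_lists' finA finite_atLeastLessThan)+)
  have "to_terminal ` {f \<in> compgen (Zcat D) (simple_deg D \<union> parallel_deg D P). Cod (Zcat D) f = T}
     \<subseteq> (\<lambda>(a, fs, r, s). Zmap a (to_terminal T) fs r s) ` (ZA \<times> LF \<times> LR \<times> LS)"
  proof
    fix t assume "t \<in> to_terminal ` {f \<in> compgen (Zcat D) (simple_deg D \<union> parallel_deg D P). Cod (Zcat D) f = T}"
    then obtain f where f: "f \<in> compgen (Zcat D) (simple_deg D \<union> parallel_deg D P)" "Cod (Zcat D) f = T"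
      and t: "t = to_terminal f" by auto
    have dg: "Dg D P f" by (rule compgen_Dg[OF P f(1)])
    then have "zmap_ok D f" unfolding Dg_def by simp
    then obtain X T' fs R S where ef: "f = Zmap X T' fs R S" and ok: "zmap_ok D (Zmap X T' fs R S)"
      by (rule zmap_ok_split)
    have TT: "T' = T" using f(2) ef by simp
    note okT = ok[unfolded TT]
    note tf = zmap_ok_ZmapD(1)[OF okT]
    note fD = zmtD[OF tf]
    have dgf: "Dg D P (Zmap X T fs R S)" using dg ef TT by simp
    have df: "distinct fs" and RP: "set R \<subseteq> P" and SP: "set S \<subseteq> P" using dgf unfolding Dg_Zmap by auto
    have nm: "zlen X \<le> m" using distinct_len_le[OF df, of m] fD(3,4) m_def by simp
    have Rin: "to_terminal (R!i) \<in> AR" "R!i \<in> P" if i: "i \<le> m" for i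
    proof -
      show "R!i \<in> P" using RP fD(6) i m_def by (auto simp: subset_iff)
      then show "to_terminal (R!i) \<in> AR" unfolding AR_def using zmt_hom(1)[OF tf, of i] i m_def
        unfolding hom_def by auto
    qed
    have Sin: "to_terminal (S!j) \<in> AS" "S!j \<in> P" if j: "j < zlen X" for j
    proof -
      show "S!j \<in> P" using SP fD(7) j by (auto simp: subset_iff)
      then show "to_terminal (S!j) \<in> AS" unfolding AS_def using zmt_hom(2)[OF tf, of j] j fD(4)[OF j] m_def
        unfolding hom_def by auto
    qed
    have rR: "to_terminal (zR X ! k) \<in> RR" if k: "k \<le> zlen X" for k
    proof -
      obtain i where i: "i \<le> m" "hat fs i = k" using hat_sec[OF fD(5) df, of m k] fD(3,4) k m_def by auto
      have "to_terminal (zR X ! k) = tdom (to_terminal (R!i))"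
        using F3[of "R!i"] zmt_hom(1)[OF tf, of i] i m_def unfolding hom_def by simp
      then show ?thesis using Rin[OF i(1)] unfolding RR_def by simp
    qed
    have sS: "to_terminal (zS X ! j) \<in> SS" if j: "j < zlen X" for j
    proof -
      have "to_terminal (zS X ! j) = tdom (to_terminal (S!j))"
        using F3[of "S!j"] zmt_hom(2)[OF tf, of j] j unfolding hom_def by simp
      then show ?thesis using Sin[OF j] unfolding SS_def by simp
    qed
    note xD = zig_okD[OF fD(1)]
    have "to_terminal X \<in> ZA"
    proof -
      have "map to_terminal (zR X) \<in> {xs. length xs \<le> Suc m \<and> set xs \<subseteq> RR}"
      proof (intro lists_mem)
        show "length (map to_terminal (zR X)) \<le> Suc m" using xD(2) nm by simp
        fix k assume "k < length (map to_terminal (zR X))"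
        then show "map to_terminal (zR X) ! k \<in> RR" using rR[of k] xD(2) by simp
      qed
      moreover have "map to_terminal (zS X) \<in> {xs. length xs \<le> m \<and> set xs \<subseteq> SS}"
      proof (intro lists_mem)
        show "length (map to_terminal (zS X)) \<le> m" using nm by (simp add: zlen_def)
        fix k assume "k < length (map to_terminal (zS X))"
        then show "map to_terminal (zS X) ! k \<in> SS" using sS[of k] by (simp add: zlen_def)
      qed
      moreover have "map to_terminal (zX X) \<in> {xs. length xs \<le> m \<and> set xs \<subseteq> XR}"
      proof (intro lists_mem)
        show "length (map to_terminal (zX X)) \<le> m" using nm xD(3) by simp
        fix k assume "k < length (map to_terminal (zX X))"
        then have k: "k < zlen X" using xD(3) by simp
        then show "map to_terminal (zX X) ! k \<in> XR" unfolding XR_def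
          using xD(7)[OF k] rR[of k] sS[OF k] xD(3) by auto
      qed
      moreover have "map to_terminal (zY X) \<in> {xs. length xs \<le> m \<and> set xs \<subseteq> XR}"
      proof (intro lists_mem)
        show "length (map to_terminal (zY X)) \<le> m" using nm xD(4) by simp
        fix k assume "k < length (map to_terminal (zY X))"
        then have k: "k < zlen X" using xD(4) by simp
        then show "map to_terminal (zY X) ! k \<in> XR" unfolding XR_def
          using xD(8)[OF k] rR[of "Suc k"] sS[OF k] xD(4) by auto
      qed
      ultimately show ?thesis unfolding ZA_def using zig_tt[OF fD(1)]
        by (auto intro!: image_eqI[of _ _ "(map to_terminal (zR X), map to_terminal (zS X), map to_terminal (zX X), map to_terminal (zY X))"])
    qed
    moreover have "fs \<in> LF" unfolding LF_def
    proof (intro lists_mem)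
      show "length fs \<le> m" using fD(3) nm by simp
      fix i assume "i < length fs"
      then show "fs ! i \<in> {0..<m}" using fD(3) fD(4)[of i] m_def by simp
    qed
    moreover have "map to_terminal R \<in> LR" unfolding LR_def
    proof (intro lists_mem)
      show "length (map to_terminal R) \<le> Suc m" using fD(6) m_def by simp
      fix i assume "i < length (map to_terminal R)"
      then show "map to_terminal R ! i \<in> AR" using Rin(1)[of i] fD(6) m_def by simp
    qed
    moreover have "map to_terminal S \<in> LS" unfolding LS_def
    proof (intro lists_mem)
      show "length (map to_terminal S) \<le> m" using fD(7) nm by simp
      fix j assume "j < length (map to_terminal S)"
      then show "map to_terminal S ! j \<in> AS" using Sin(1)[of j] fD(7) by simp
    qed
    ultimately show "t \<in> (\<lambda>(a, fs, r, s). Zmap a (to_terminal T) fs r s) ` (ZA \<times> LF \<times> LR \<times> LS)"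
      using t ef TT by (auto intro!: image_eqI[of _ _ "(to_terminal X, fs, map to_terminal R, map to_terminal S)"])
  qed
  then show ?thesis by (rule finite_subset) (use finZ in simp)
qed

lemma finlev_step:
  assumes P: "degdata D P" and F: "finlev D P"
  shows "finlev (Zcat D) (compgen (Zcat D) (simple_deg D \<union> parallel_deg D P))"
  unfolding finlev_def
proof (intro conjI ballI allI impI)
  fix T assume "T \<in> Ob (Zcat D)"
  then show "finite (to_terminal ` {f \<in> compgen (Zcat D) (simple_deg D \<union> parallel_deg D P). Cod (Zcat D) f = T})"
    using finlev_deg_step[OF P F] by simp
next
  fix A B :: "unit U set" assume "finite A" "finite B"
  then show "finite (to_terminal ` {x \<in> Ar (Zcat D). to_terminal (Dom (Zcat D) x) \<in> A \<and> to_terminal (Cod (Zcat D) x) \<in> B})"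
    by (rule finlev_ar_step[OF F])
next
  fix x assume "x \<in> Ar (Zcat D)"
  then have "zmap_ok D x" by simp
  then obtain X Y fs R S where "x = Zmap X Y fs R S" by (rule zmap_ok_split)
  then show "to_terminal (Dom (Zcat D) x) = tdom (to_terminal x)" by simp
qed

lemma finlev_deg:
  assumes C: "is_cat C" shows "finlev (Zn C n) (deg C n)"
proof (induction n)
  case 0
  then show ?case using finlev_0[OF C] by (simp add: Zn_0)
next
  case (Suc n)
  then show ?case using finlev_step[OF degdata_deg[OF C] Suc.IH] by (simp add: Zn_Suc)
qed

lemma subobj_sub:
  assumes D: "is_cat D" and f: "f \<in> Ar D" and g: "g \<in> Ar D" and \<phi>: "isoC D \<phi>" "Dom D \<phi> = Dom D f" "Cod D \<phi> = Dom D g"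
    and e: "f = Cmp D g \<phi>"
  shows "subobj_class D f \<subseteq> subobj_class D g"
proof
  fix h assume "h \<in> subobj_class D f"
  then obtain \<psi> where h: "monic D h" "Cod D h = Cod D f" and \<psi>: "isoC D \<psi>" "Dom D \<psi> = Dom D h" "Cod D \<psi> = Dom D f"
    "h = Cmp D f \<psi>" unfolding subobj_class_def by blast
  have \<phi>a: "\<phi> \<in> Ar D" and \<psi>a: "\<psi> \<in> Ar D" using \<phi>(1) \<psi>(1) unfolding isoC_def by auto
  have cf: "Cod D f = Cod D g" using e cat_cmp_cod[OF D \<phi>a g \<phi>(3)] by simp
  have iso: "isoC D (Cmp D \<phi> \<psi>)" using iso_cmp[OF D \<psi>(1) \<phi>(1)] \<psi>(3) \<phi>(2) by simp
  have eq: "h = Cmp D g (Cmp D \<phi> \<psi>)" using \<psi>(4) e cat_assoc[OF D \<psi>a \<phi>a g] \<psi>(3) \<phi>(2,3) by simp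
  show "h \<in> subobj_class D g" unfolding subobj_class_def
    using h cf iso eq cat_cmp_dom[OF D \<psi>a \<phi>a] cat_cmp_cod[OF D \<psi>a \<phi>a] \<psi>(2,3) \<phi>(2,3) by auto
qed

lemma finite_image_tt:
  assumes "finite (t ` A)" "\<And>a b. a \<in> A \<Longrightarrow> b \<in> A \<Longrightarrow> t a = t b \<Longrightarrow> F a = F b"
  shows "finite (F ` A)"
proof -
  have "F ` A \<subseteq> (\<lambda>x. F (SOME a. a \<in> A \<and> t a = x)) ` (t ` A)"
  proof
    fix y assume "y \<in> F ` A"
    then obtain a where a: "a \<in> A" "y = F a" by auto
    have "(SOME b. b \<in> A \<and> t b = t a) \<in> A \<and> t (SOME b. b \<in> A \<and> t b = t a) = t a"
      by (rule someI_ex) (use a in blast)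
    then have "F (SOME b. b \<in> A \<and> t b = t a) = F a" using assms(2) a by blast
    then show "y \<in> (\<lambda>x. F (SOME a. a \<in> A \<and> t a = x)) ` (t ` A)" using a by force
  qed
  then show ?thesis using assms(1) finite_subset by blast
qed

theorem lemma4p3:
  fixes C :: "'a cat" and n :: nat and T :: "'a U"
  assumes "is_cat C" and "T \<in> Ob (Zn C n)"
  shows "(\<forall>f g. f \<in> deg C n \<longrightarrow> g \<in> deg C n \<longrightarrow>
            Cod (Zn C n) f = T \<longrightarrow> Cod (Zn C n) g = T \<longrightarrow>
            to_terminal f = to_terminal g \<longrightarrow>
            (\<exists>\<phi>. isoC (Zn C n) \<phi> \<and> Dom (Zn C n) \<phi> = Dom (Zn C n) f \<and>
                  Cod (Zn C n) \<phi> = Dom (Zn C n) g \<and> f = Cmp (Zn C n) g \<phi>))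
         \<and> finite (DegSub C n T)"
proof -
  note P = degdata_deg[OF assms(1), of n]
  note D = degdataD(1)[OF P]
  have U: "\<And>f g. f \<in> deg C n \<Longrightarrow> g \<in> deg C n \<Longrightarrow> Cod (Zn C n) f = Cod (Zn C n) g \<Longrightarrow> to_terminal f = to_terminal g \<Longrightarrow>
            (\<exists>\<phi>. isoC (Zn C n) \<phi> \<and> Dom (Zn C n) \<phi> = Dom (Zn C n) f \<and>
                  Cod (Zn C n) \<phi> = Dom (Zn C n) g \<and> f = Cmp (Zn C n) g \<phi>)"
    using degdataD(6)[OF P] by blast
  have part1: "\<forall>f g. f \<in> deg C n \<longrightarrow> g \<in> deg C n \<longrightarrow>
            Cod (Zn C n) f = T \<longrightarrow> Cod (Zn C n) g = T \<longrightarrow>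
            to_terminal f = to_terminal g \<longrightarrow>
            (\<exists>\<phi>. isoC (Zn C n) \<phi> \<and> Dom (Zn C n) \<phi> = Dom (Zn C n) f \<and>
                  Cod (Zn C n) \<phi> = Dom (Zn C n) g \<and> f = Cmp (Zn C n) g \<phi>)"
    using U by simp
  define A where "A = {f \<in> deg C n. Cod (Zn C n) f = T}"
  have finA: "finite (to_terminal ` A)"
    using finlev_deg[OF assms(1), of n] assms(2) unfolding finlev_def A_def by blast
  have eqc: "subobj_class (Zn C n) f = subobj_class (Zn C n) g" if f: "f \<in> A" and g: "g \<in> A" and t: "to_terminal f = to_terminal g" for f g
  proof
    have fa: "f \<in> Ar (Zn C n)" "g \<in> Ar (Zn C n)" using f g degdataD(2)[OF P] unfolding A_def by auto
    obtain \<phi> where \<phi>: "isoC (Zn C n) \<phi>" "Dom (Zn C n) \<phi> = Dom (Zn C n) f" "Cod (Zn C n) \<phi> = Dom (Zn C n) g" "f = Cmp (Zn C n) g \<phi>"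
      using U[of f g] f g t unfolding A_def by auto
    show "subobj_class (Zn C n) f \<subseteq> subobj_class (Zn C n) g" by (rule subobj_sub[OF D fa \<phi>])
    obtain \<psi> where \<psi>: "isoC (Zn C n) \<psi>" "Dom (Zn C n) \<psi> = Dom (Zn C n) g" "Cod (Zn C n) \<psi> = Dom (Zn C n) f" "g = Cmp (Zn C n) f \<psi>"
      using U[of g f] f g t unfolding A_def by auto
    show "subobj_class (Zn C n) g \<subseteq> subobj_class (Zn C n) f" by (rule subobj_sub[OF D fa(2) fa(1) \<psi>])
  qed
  have "finite (subobj_class (Zn C n) ` A)" by (rule finite_image_tt[OF finA eqc])
  then have part2: "finite (DegSub C n T)" unfolding DegSub_def A_def .
  show ?thesis using part1 part2 by blast
qed

end
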